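(* Let $n\ge 2$ and $q=e^{2\pi i/6}$. The subalgebra $\mathcal{A}_n\subset Q_n$ generated by $s_1,\dots,s_{n-1}$ is isomorphic to $\mathcal{H}_n(3,6)$; more precisely, the homomorphism $\varphi:\mathcal{H}_n(q)\to Q_n$, $g_i\mapsto s_i$, has kernel exactly $\mathrm{Ann}(\mathrm{tr})$ and induces an isomorphism $\mathcal{H}_n(3,6)=\mathcal{H}_n(q)/\mathrm{Ann}(\mathrm{tr})\cong \mathcal{A}_n$.
   Context: $Q_n$ is the $\mathbb{C}$-algebra with generators $u_1,v_1,\dots,u_{n-1},v_{n-1}$ and relations (G1) $u_i^2=v_i^2=-1$; (G2) $[u_i,v_j]=-1$ if $|i-j|\le1$; (G3) $[u_i,v_j]=1$ if $|i-j|\ge2$; (G4) $[u_i,u_j]=[v_i,v_j]=1$, with $[a,b]=aba^{-1}b^{-1}$. $s_i=\frac{-1}{2q}(1+u_i+v_i+u_iv_i)$ for $1\le i\le n-1$. The Hecke algebra $\mathcal{H}_n(q)$ has generators $g_1,\dots,g_{n-1}$ with relations $g_ig_{i+1}g_i=g_{i+1}g_ig_{i+1}$, $g_ig_j=g_jg_i$ ($|i-j|>1$), $(g_i+1)(g_i-q)=0$; $e_i=(q-g_i)/(1+q)$. $\mathrm{tr}$ is Ocneanu's Markov trace with parameter $\eta=1/2$: the unique linear functional on $\bigcup_n\mathcal{H}_n(q)$ with $\mathrm{tr}(1)=1$, $\mathrm{tr}(ab)=\mathrm{tr}(ba)$, $\mathrm{tr}(xe_n)=\eta\,\mathrm{tr}(x)$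 for $x\in\mathcal{H}_n(q)$. $\mathrm{Ann}(\mathrm{tr})=\{a\in\mathcal{H}_n(q):\mathrm{tr}(ab)=0\ \forall b\in\mathcal{H}_n(q)\}$ and $\mathcal{H}_n(3,6)=\mathcal{H}_n(q)/\mathrm{Ann}(\mathrm{tr})$ is the $(3,6)$-quotient. *)

theory Defs
  imports Complex_Main
begin

type_synonym ncpoly = "nat list \<Rightarrow> complex"

definition ncmul :: "ncpoly \<Rightarrow> ncpoly \<Rightarrow> ncpoly" (infixl "\<star>" 70) where
  "f \<star> g = (\<lambda>w. \<Sum>i\<le>length w. f (take i w) * g (drop i w))"

definition ncadd :: "ncpoly \<Rightarrow> ncpoly \<Rightarrow> ncpoly" (infixl "\<oplus>" 65) where
  "f \<oplus> g = (\<lambda>w. f w + g w)"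

definition ncsmul :: "complex \<Rightarrow> ncpoly \<Rightarrow> ncpoly" (infixr "\<cdot>" 75) where
  "c \<cdot> f = (\<lambda>w. c * f w)"

definition ncsub :: "ncpoly \<Rightarrow> ncpoly \<Rightarrow> ncpoly" (infixl "\<ominus>" 65) where
  "f \<ominus> g = (\<lambda>w. f w - g w)"

definition nczero :: ncpoly where "nczero = (\<lambda>w. 0)"

definition ncone :: ncpoly where "ncone = (\<lambda>w. if w = [] then 1 else 0)"

definition ncvar :: "nat \<Rightarrow> ncpoly" where "ncvar i = (\<lambda>w. if w = [i] then 1 else 0)"

definition ncpolys_on :: "nat set \<Rightarrow> ncpoly set" where
  "ncpolys_on L = {f. finite {w. f w \<noteq> 0} \<and> (\<forall>w. f w \<noteq> 0 \<longrightarrow> set w \<subseteq> L)}"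

inductive_set ideal_gen :: "nat set \<Rightarrow> ncpoly set \<Rightarrow> ncpoly set" for L R where
  gen: "r \<in> R \<Longrightarrow> r \<in> ideal_gen L R"
| zero: "nczero \<in> ideal_gen L R"
| add: "a \<in> ideal_gen L R \<Longrightarrow> b \<in> ideal_gen L R \<Longrightarrow> a \<oplus> b \<in> ideal_gen L R"
| mul: "a \<in> ideal_gen L R \<Longrightarrow> p \<in> ncpolys_on L \<Longrightarrow> r \<in> ncpolys_on L
          \<Longrightarrow> p \<star> a \<star> r \<in> ideal_gen L R"

inductive_set subalg_gen :: "ncpoly set \<Rightarrow> ncpoly set" for S where
  gen: "s \<in> S \<Longrightarrow> s \<in> subalg_gen S"
| one: "ncone \<in> subalg_gen S"
| add: "a \<in> subalg_gen S \<Longrightarrow> b \<in> subalg_gen S \<Longrightarrow> a \<oplus> b \<in> subalg_gen S"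
| smul: "a \<in> subalg_gen S \<Longrightarrow> c \<cdot> a \<in> subalg_gen S"
| mul: "a \<in> subalg_gen S \<Longrightarrow> b \<in> subalg_gen S \<Longrightarrow> a \<star> b \<in> subalg_gen S"

definition ncprod :: "ncpoly list \<Rightarrow> ncpoly" where
  "ncprod xs = foldr ncmul xs ncone"

definition ncsubst :: "(nat \<Rightarrow> ncpoly) \<Rightarrow> ncpoly \<Rightarrow> ncpoly" where
  "ncsubst \<sigma> f = (\<lambda>v. \<Sum>w\<in>{w. f w \<noteq> 0}. f w * ncprod (map \<sigma> w) v)"

text \<open>Generators: u_i is letter 2i, v_i is letter 2i+1, for 1 <= i <= n-1.
  Since u_i^2 = v_i^2 = -1 all generators are invertible, and a commutator
  relation [a,b] = c is equivalent to a b = c b a; we use the latter form.\<close>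

definition Uq :: "nat \<Rightarrow> ncpoly" where "Uq i = ncvar (2 * i)"
definition Vq :: "nat \<Rightarrow> ncpoly" where "Vq i = ncvar (2 * i + 1)"

definition Q_letters :: "nat \<Rightarrow> nat set" where
  "Q_letters n = (\<Union>i\<in>{1..<n}. {2 * i, 2 * i + 1})"

definition Q_rels :: "nat \<Rightarrow> ncpoly set" where
  "Q_rels n =
     {Uq i \<star> Uq i \<oplus> ncone | i. i \<in> {1..<n}}
   \<union> {Vq i \<star> Vq i \<oplus> ncone | i. i \<in> {1..<n}}
   \<union> {Uq i \<star> Vq j \<oplus> Vq j \<star> Uq i | i j. i \<in> {1..<n} \<and> j \<in> {1..<n} \<and> dist (real i) (real j) \<le> 1}
   \<union> {Uq i \<star> Vq j \<ominus> Vq j \<star> Uq i | i j. i \<in> {1..<n} \<and> j \<in> {1..<n} \<and> dist (real i) (real j) \<ge> 2}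
   \<union> {Uq i \<star> Uq j \<ominus> Uq j \<star> Uq i | i j. i \<in> {1..<n} \<and> j \<in> {1..<n}}
   \<union> {Vq i \<star> Vq j \<ominus> Vq j \<star> Vq i | i j. i \<in> {1..<n} \<and> j \<in> {1..<n}}"

definition Q_ideal :: "nat \<Rightarrow> ncpoly set" where
  "Q_ideal n = ideal_gen (Q_letters n) (Q_rels n)"

definition qq :: complex where "qq = exp (2 * of_real pi * \<i> / 6)"

definition s_el :: "nat \<Rightarrow> ncpoly" where
  "s_el i = (- 1 / (2 * qq)) \<cdot> (ncone \<oplus> Uq i \<oplus> Vq i \<oplus> Uq i \<star> Vq i)"

text \<open>Relations of the Hecke algebra on generators indexed by S.
  H_n(q) uses S = {1..<n}; the union of all H_n(q) uses S = {1..}.\<close>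
definition hecke_rels :: "nat set \<Rightarrow> ncpoly set" where
  "hecke_rels S =
     {ncvar i \<star> ncvar (i+1) \<star> ncvar i \<ominus> ncvar (i+1) \<star> ncvar i \<star> ncvar (i+1) | i. i \<in> S \<and> i + 1 \<in> S}
   \<union> {ncvar i \<star> ncvar j \<ominus> ncvar j \<star> ncvar i | i j. i \<in> S \<and> j \<in> S \<and> dist (real i) (real j) > 1}
   \<union> {(ncvar i \<oplus> ncone) \<star> (ncvar i \<ominus> qq \<cdot> ncone) | i. i \<in> S}"

definition hecke_ideal :: "nat set \<Rightarrow> ncpoly set" where
  "hecke_ideal S = ideal_gen S (hecke_rels S)"

definition e_el :: "nat \<Rightarrow> ncpoly" where
  "e_el i = (1 / (1 + qq)) \<cdot> (qq \<cdot> ncone \<ominus> ncvar i)"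

definition eta :: complex where "eta = 1 / 2"

text \<open>Ocneanu's Markov trace on the union of all H_n(q), realised as a linear
  functional on noncommutative polynomials in g_1, g_2, ... vanishing on the Hecke
  ideal (i.e. a functional on the union of the H_n(q)); normalised to 0 outside
  the polynomials so that it is a well-defined function.\<close>
definition is_markov_trace :: "(ncpoly \<Rightarrow> complex) \<Rightarrow> bool" where
  "is_markov_trace T \<longleftrightarrow>
     (\<forall>f. f \<notin> ncpolys_on {1..} \<longrightarrow> T f = 0) \<and>
     (\<forall>f\<in>ncpolys_on {1..}. \<forall>g\<in>ncpolys_on {1..}. T (f \<oplus> g) = T f + T g) \<and>
     (\<forall>f\<in>ncpolys_on {1..}. \<forall>c. T (c \<cdot> f) = c * T f) \<and>
     (\<forall>f\<in>hecke_ideal {1..}. T f = 0) \<and>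
     T ncone = 1 \<and>
     (\<forall>a\<in>ncpolys_on {1..}. \<forall>b\<in>ncpolys_on {1..}. T (a \<star> b) = T (b \<star> a)) \<and>
     (\<forall>m\<ge>1. \<forall>x\<in>ncpolys_on {1..<m}. T (x \<star> e_el m) = eta * T x)"

definition tr :: "ncpoly \<Rightarrow> complex" where
  "tr = (THE T. is_markov_trace T)"

text \<open>(Preimage in the free algebra of) Ann(tr) inside H_n(q).\<close>
definition Ann_tr :: "nat \<Rightarrow> ncpoly set" where
  "Ann_tr n = {a \<in> ncpolys_on {1..<n}. \<forall>b\<in>ncpolys_on {1..<n}. tr (a \<star> b) = 0}"

definition phi :: "ncpoly \<Rightarrow> ncpoly" where
  "phi = ncsubst s_el"

end

theory Submission
  imports Defs
begin


definition supp :: "ncpoly \<Rightarrow> nat list set" where "supp f = {w. f w \<noteq> 0}"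

lemma ncmul_apply: "(f \<star> g) u = (\<Sum>i\<le>length u. f (take i u) * g (drop i u))"
  by (simp add: ncmul_def)

lemma splits_sum:
  "(\<Sum>i\<le>length u. F (take i u) (drop i u)) = (\<Sum>p\<in>{p. fst p @ snd p = u}. F (fst p) (snd p))"
proof -
  have inj: "inj_on (\<lambda>i. (take i u, drop i u)) {..length u}"
  proof (rule inj_onI)
    fix x y assume "x \<in> {..length u}" "y \<in> {..length u}" "(take x u, drop x u) = (take y u, drop y u)"
    then have "length (take x u) = length (take y u)" by simp
    with \<open>x \<in> {..length u}\<close> \<open>y \<in> {..length u}\<close> show "x = y" by simp
  qed
  have img: "(\<lambda>i. (take i u, drop i u)) ` {..length u} = {p. fst p @ snd p = u}"
  proof
    show "(\<lambda>i. (take i u, drop i u)) ` {..length u} \<subseteq> {p. fst p @ snd p = u}" by auto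
    show "{p. fst p @ snd p = u} \<subseteq> (\<lambda>i. (take i u, drop i u)) ` {..length u}"
    proof
      fix p assume "p \<in> {p. fst p @ snd p = u}"
      then have "fst p @ snd p = u" by simp
      then show "p \<in> (\<lambda>i. (take i u, drop i u)) ` {..length u}"
        by (intro image_eqI[where x="length (fst p)"]) (auto simp: prod_eq_iff)
    qed
  qed
  show ?thesis
    using sum.reindex[OF inj, of "\<lambda>p. F (fst p) (snd p)"] img by simp
qed

lemma finite_splits: "finite {p::'a list \<times> 'a list. fst p @ snd p = u}"
proof -
  have "{p. fst p @ snd p = u} \<subseteq> (\<lambda>i. (take i u, drop i u)) ` {..length u}"
  proof
    fix p assume "p \<in> {p::'a list \<times> 'a list. fst p @ snd p = u}"
    then have "fst p @ snd p = u" by simp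
    then show "p \<in> (\<lambda>i. (take i u, drop i u)) ` {..length u}"
      by (intro image_eqI[where x="length (fst p)"]) (auto simp: prod_eq_iff)
  qed
  then show ?thesis by (rule finite_subset) simp
qed

lemma conv_pairs:
  assumes "finite (supp f)" "finite (supp g)"
  shows "(f \<star> g) u = (\<Sum>p\<in>{p\<in>supp f \<times> supp g. fst p @ snd p = u}. f (fst p) * g (snd p))"
proof -
  have "(f \<star> g) u = (\<Sum>p\<in>{p. fst p @ snd p = u}. f (fst p) * g (snd p))"
    using splits_sum[of "\<lambda>a b. f a * g b" u] by (simp add: ncmul_apply)
  also have "\<dots> = (\<Sum>p\<in>{p\<in>supp f \<times> supp g. fst p @ snd p = u}. f (fst p) * g (snd p))"
    by (rule sum.mono_neutral_right) (auto simp: finite_splits supp_def)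
  finally show ?thesis .
qed

lemma supp_conv: "supp (f \<star> g) \<subseteq> (\<lambda>p. fst p @ snd p) ` (supp f \<times> supp g)"
proof
  fix u assume "u \<in> supp (f \<star> g)"
  then have "(\<Sum>i\<le>length u. f (take i u) * g (drop i u)) \<noteq> 0" by (simp add: supp_def ncmul_apply)
  then obtain i where "f (take i u) * g (drop i u) \<noteq> 0" by (meson sum.neutral)
  then show "u \<in> (\<lambda>p. fst p @ snd p) ` (supp f \<times> supp g)"
    by (intro image_eqI[where x="(take i u, drop i u)"]) (auto simp: supp_def)
qed

lemma finite_supp_conv: "finite (supp f) \<Longrightarrow> finite (supp g) \<Longrightarrow> finite (supp (f \<star> g))"
  by (rule finite_subset[OF supp_conv]) auto

definition Lam :: "(nat list \<Rightarrow> complex) \<Rightarrow> ncpoly \<Rightarrow> complex" where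
  "Lam h f = (\<Sum>w\<in>supp f. f w * h w)"

lemma Lam_superset: "finite A \<Longrightarrow> supp f \<subseteq> A \<Longrightarrow> Lam h f = (\<Sum>w\<in>A. f w * h w)"
  unfolding Lam_def by (rule sum.mono_neutral_left) (auto simp: supp_def)

lemma Lam_conv:
  assumes "finite (supp f)" "finite (supp g)"
  shows "Lam h (f \<star> g) = (\<Sum>a\<in>supp f. \<Sum>b\<in>supp g. f a * g b * h (a @ b))"
proof -
  let ?P = "supp f \<times> supp g"
  let ?c = "\<lambda>p::nat list \<times> nat list. fst p @ snd p"
  have fP: "finite ?P" using assms by simp
  have "Lam h (f \<star> g) = (\<Sum>u\<in>?c ` ?P. (f \<star> g) u * h u)"
    by (rule Lam_superset) (use fP supp_conv in auto)
  also have "\<dots> = (\<Sum>u\<in>?c ` ?P. \<Sum>p\<in>{p\<in>?P. ?c p = u}. f (fst p) * g (snd p) * h (?c p))"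
    by (rule sum.cong[OF refl]) (simp add: conv_pairs[OF assms] sum_distrib_right)
  also have "\<dots> = (\<Sum>p\<in>?P. f (fst p) * g (snd p) * h (?c p))"
    by (rule sum.group) (use fP in auto)
  also have "\<dots> = (\<Sum>a\<in>supp f. \<Sum>b\<in>supp g. f a * g b * h (a @ b))"
    by (simp add: sum.cartesian_product case_prod_beta)
  finally show ?thesis .
qed

lemma point_Lam: "finite (supp f) \<Longrightarrow> f u = Lam (\<lambda>w. if w = u then 1 else 0) f"
  unfolding Lam_def
  by (cases "u \<in> supp f") (auto simp: supp_def if_distrib cong: if_cong)

lemma ncmul_assoc:
  assumes f: "finite (supp f)" and g: "finite (supp g)" and h: "finite (supp h)"
  shows "(f \<star> g) \<star> h = f \<star> (g \<star> h)"
proof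
  fix u
  define d where "d = (\<lambda>w::nat list. if w = u then (1::complex) else 0)"
  have fg: "finite (supp (f \<star> g))" and gh: "finite (supp (g \<star> h))"
    using f g h finite_supp_conv by auto
  have "((f \<star> g) \<star> h) u = Lam d ((f \<star> g) \<star> h)"
    unfolding d_def by (rule point_Lam) (use fg h finite_supp_conv in auto)
  also have "\<dots> = (\<Sum>a\<in>supp (f \<star> g). \<Sum>c\<in>supp h. (f \<star> g) a * h c * d (a @ c))"
    by (rule Lam_conv[OF fg h])
  also have "\<dots> = Lam (\<lambda>a. \<Sum>c\<in>supp h. h c * d (a @ c)) (f \<star> g)"
    unfolding Lam_def by (simp add: sum_distrib_left mult.assoc)
  also have "\<dots> = (\<Sum>a\<in>supp f. \<Sum>b\<in>supp g. f a * g b * (\<Sum>c\<in>supp h. h c * d ((a @ b) @ c)))"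
    by (rule Lam_conv[OF f g])
  also have "\<dots> = (\<Sum>a\<in>supp f. f a * (\<Sum>b\<in>supp g. \<Sum>c\<in>supp h. g b * h c * d (a @ b @ c)))"
    by (simp add: sum_distrib_left mult.assoc)
  also have "\<dots> = (\<Sum>a\<in>supp f. f a * Lam (\<lambda>bc. d (a @ bc)) (g \<star> h))"
    by (simp add: Lam_conv[OF g h])
  also have "\<dots> = (\<Sum>a\<in>supp f. \<Sum>b\<in>supp (g \<star> h). f a * (g \<star> h) b * d (a @ b))"
    by (simp add: Lam_def sum_distrib_left mult.assoc)
  also have "\<dots> = Lam d (f \<star> (g \<star> h))"
    by (simp add: Lam_conv[OF f gh])
  also have "\<dots> = (f \<star> (g \<star> h)) u"
    unfolding d_def by (rule point_Lam[symmetric]) (use f gh finite_supp_conv in auto)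
  finally show "((f \<star> g) \<star> h) u = (f \<star> (g \<star> h)) u" .
qed

lemma ncmul_distR: "(f \<oplus> g) \<star> h = (f \<star> h) \<oplus> (g \<star> h)"
  by (simp add: ncmul_def ncadd_def fun_eq_iff sum.distrib distrib_right)

lemma ncmul_distL: "h \<star> (f \<oplus> g) = (h \<star> f) \<oplus> (h \<star> g)"
  by (simp add: ncmul_def ncadd_def fun_eq_iff sum.distrib distrib_left)

lemma ncone_mul: "ncone \<star> f = f"
proof
  fix w
  have "(ncone \<star> f) w = (\<Sum>i\<le>length w. if i = 0 then f w else 0)"
    unfolding ncmul_apply ncone_def by (rule sum.cong) auto
  then show "(ncone \<star> f) w = f w" by simp
qed

lemma mul_ncone: "f \<star> ncone = f"
proof
  fix w
  have "(f \<star> ncone) w = (\<Sum>i\<le>length w. if i = length w then f w else 0)"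
    unfolding ncmul_apply ncone_def by (rule sum.cong) auto
  then show "(f \<star> ncone) w = f w" by simp
qed



lemma fs_add: "finite (supp f) \<Longrightarrow> finite (supp g) \<Longrightarrow> finite (supp (f \<oplus> g))"
  by (rule finite_subset[of _ "supp f \<union> supp g"]) (auto simp: supp_def ncadd_def)
lemma fs_sub: "finite (supp f) \<Longrightarrow> finite (supp g) \<Longrightarrow> finite (supp (f \<ominus> g))"
  by (rule finite_subset[of _ "supp f \<union> supp g"]) (auto simp: supp_def ncsub_def)
lemma fs_neg: "finite (supp f) \<Longrightarrow> finite (supp (\<lambda>w. - f w))"
  by (simp add: supp_def)
lemma fs_smul: "finite (supp f) \<Longrightarrow> finite (supp (c \<cdot> f))"
  by (rule finite_subset[of _ "supp f"]) (auto simp: supp_def ncsmul_def)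
lemma fs_zero: "finite (supp nczero)" by (simp add: supp_def nczero_def)
lemma fs_one: "finite (supp ncone)"
  by (rule finite_subset[of _ "{[]}"]) (auto simp: supp_def ncone_def)
lemma fs_delta: "finite (supp (\<lambda>v. if v = w then c else 0))"
  by (rule finite_subset[of _ "{w}"]) (auto simp: supp_def)

typedef fp = "{f::ncpoly. finite (supp f)}" morphisms Rp Ap
  by (rule exI[of _ nczero]) (simp add: fs_zero)

lemma fsR: "finite (supp (Rp x))" using Rp by simp

instantiation fp :: ring_1
begin
definition "zero_fp = Ap nczero"
definition "one_fp = Ap ncone"
definition "plus_fp x y = Ap (Rp x \<oplus> Rp y)"
definition "minus_fp x y = Ap (Rp x \<ominus> Rp y)"
definition "uminus_fp x = Ap (\<lambda>w. - Rp x w)"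
definition "times_fp x y = Ap (Rp x \<star> Rp y)"

lemma Rp_zero: "Rp 0 = nczero" unfolding zero_fp_def by (simp add: Ap_inverse fs_zero)
lemma Rp_one: "Rp 1 = ncone" unfolding one_fp_def by (simp add: Ap_inverse fs_one)
lemma Rp_plus: "Rp (x + y) = Rp x \<oplus> Rp y" unfolding plus_fp_def by (simp add: Ap_inverse fs_add fsR)
lemma Rp_minus: "Rp (x - y) = Rp x \<ominus> Rp y" unfolding minus_fp_def by (simp add: Ap_inverse fs_sub fsR)
lemma Rp_uminus: "Rp (- x) = (\<lambda>w. - Rp x w)" unfolding uminus_fp_def by (simp add: Ap_inverse fs_neg fsR)
lemma Rp_times: "Rp (x * y) = Rp x \<star> Rp y" unfolding times_fp_def by (simp add: Ap_inverse finite_supp_conv fsR)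

instance
proof
  fix a b c :: fp
  show "a * b * c = a * (b * c)"
    by (simp add: Rp_inject[symmetric] Rp_times ncmul_assoc fsR)
  show "a + b + c = a + (b + c)"
    by (simp add: Rp_inject[symmetric] Rp_plus ncadd_def add.assoc)
  show "a + b = b + a"
    by (simp add: Rp_inject[symmetric] Rp_plus ncadd_def add.commute)
  show "0 + a = a"
    by (simp add: Rp_inject[symmetric] Rp_plus Rp_zero ncadd_def nczero_def)
  show "- a + a = 0"
    by (simp add: Rp_inject[symmetric] Rp_plus Rp_zero Rp_uminus ncadd_def nczero_def)
  show "a - b = a + - b"
    by (simp add: Rp_inject[symmetric] Rp_plus Rp_minus Rp_uminus ncadd_def ncsub_def)
  show "(a + b) * c = a * c + b * c"
    by (simp add: Rp_inject[symmetric] Rp_plus Rp_times ncmul_distR)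
  show "a * (b + c) = a * b + a * c"
    by (simp add: Rp_inject[symmetric] Rp_plus Rp_times ncmul_distL)
  show "1 * a = a"
    by (simp add: Rp_inject[symmetric] Rp_one Rp_times ncone_mul)
  show "a * 1 = a"
    by (simp add: Rp_inject[symmetric] Rp_one Rp_times mul_ncone)
  show "(0::fp) \<noteq> 1"
  proof
    assume "(0::fp) = 1"
    then have "Rp 0 [] = Rp 1 []" by simp
    then show False by (simp add: Rp_zero Rp_one nczero_def ncone_def)
  qed
qed
end

definition sc :: "complex \<Rightarrow> fp" where "sc c = Ap (c \<cdot> ncone)"

lemma Rp_sc: "Rp (sc c) = c \<cdot> ncone" unfolding sc_def by (simp add: Ap_inverse fs_smul fs_one)

lemma smul_ncone_mul: "(c \<cdot> ncone) \<star> f = c \<cdot> f"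
proof
  fix w
  have "((c \<cdot> ncone) \<star> f) w = (\<Sum>i\<le>length w. if i = 0 then c * f w else 0)"
    unfolding ncmul_apply ncone_def ncsmul_def by (rule sum.cong) auto
  then show "((c \<cdot> ncone) \<star> f) w = (c \<cdot> f) w" by (simp add: ncsmul_def)
qed

lemma mul_smul_ncone: "f \<star> (c \<cdot> ncone) = c \<cdot> f"
proof
  fix w
  have "(f \<star> (c \<cdot> ncone)) w = (\<Sum>i\<le>length w. if i = length w then c * f w else 0)"
    unfolding ncmul_apply ncone_def ncsmul_def by (rule sum.cong) auto
  then show "(f \<star> (c \<cdot> ncone)) w = (c \<cdot> f) w" by (simp add: ncsmul_def)
qed

lemma Rp_sc_mul: "Rp (sc c * x) = c \<cdot> Rp x"
  by (simp add: Rp_times Rp_sc smul_ncone_mul)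

lemma sc_comm: "sc c * x = x * sc c"
  by (simp add: Rp_inject[symmetric] Rp_times Rp_sc smul_ncone_mul mul_smul_ncone)

lemma sc_add: "sc (a + b) = sc a + sc b"
  by (simp add: Rp_inject[symmetric] Rp_sc Rp_plus ncsmul_def ncadd_def fun_eq_iff distrib_right)
lemma sc_mult: "sc (a * b) = sc a * sc b"
  by (simp add: Rp_inject[symmetric] Rp_sc Rp_times smul_ncone_mul) (simp add: ncsmul_def fun_eq_iff)
lemma sc_one: "sc 1 = 1"
  by (simp add: Rp_inject[symmetric] Rp_sc Rp_one ncsmul_def)
lemma sc_zero: "sc 0 = 0"
  by (simp add: Rp_inject[symmetric] Rp_sc Rp_zero ncsmul_def nczero_def)
lemma sc_uminus: "sc (- a) = - sc a"
  by (simp add: Rp_inject[symmetric] Rp_sc Rp_uminus ncsmul_def fun_eq_iff)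
lemma sc_minus: "sc (a - b) = sc a - sc b"
  by (simp add: Rp_inject[symmetric] Rp_sc Rp_minus ncsmul_def ncsub_def fun_eq_iff algebra_simps)
lemma sc_numeral: "sc (numeral k) = numeral k"
proof (induction k)
  case One then show ?case by (simp add: sc_one)
next
  case (Bit0 k) then show ?case by (metis numeral_Bit0 sc_add)
next
  case (Bit1 k) then show ?case by (metis numeral_Bit1 sc_add sc_one)
qed
lemma sc_of_nat: "sc (of_nat k) = of_nat k"
  by (induction k) (simp_all add: sc_zero sc_add sc_one)

lemma sc_comm': "x * sc c * y = sc c * x * y"
  by (simp add: sc_comm)

definition mon :: "nat list \<Rightarrow> fp" where "mon w = Ap (\<lambda>v. if v = w then 1 else 0)"

lemma Rp_mon: "Rp (mon w) = (\<lambda>v. if v = w then 1 else 0)"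
  unfolding mon_def by (simp add: Ap_inverse fs_delta)

lemma mon_nil: "mon [] = 1"
  by (simp add: Rp_inject[symmetric] Rp_mon Rp_one ncone_def)

lemma mon_append: "mon (a @ b) = mon a * mon b"
proof -
  have "Rp (mon a * mon b) u = (if u = a @ b then 1 else 0)" for u
  proof -
    have "Rp (mon a * mon b) u = (\<Sum>i\<le>length u. if i = length a \<and> u = a @ b then 1 else 0)"
      unfolding Rp_times ncmul_apply Rp_mon
      by (rule sum.cong) (auto simp: append_eq_conv_conj)
    then show ?thesis by auto
  qed
  then show ?thesis by (simp add: Rp_inject[symmetric] Rp_mon fun_eq_iff)
qed

lemma mon_Cons: "mon (a # w) = mon [a] * mon w"
  using mon_append[of "[a]" w] by simp

lemma Rp_mon_var: "Rp (mon [i]) = ncvar i"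
  by (simp add: Rp_mon ncvar_def)

lemma fp_expand: "x = (\<Sum>w\<in>supp (Rp x). sc (Rp x w) * mon w)"
proof -
  have R: "Rp (\<Sum>w\<in>A. sc (Rp x w) * mon w) = (\<lambda>v. if v \<in> A then Rp x v else 0)" if "finite A" for A
    using that
  proof (induction A rule: finite_induct)
    case empty then show ?case by (simp add: Rp_zero nczero_def)
  next
    case (insert a A)
    then show ?case
      by (auto simp: Rp_plus Rp_sc_mul Rp_mon ncadd_def ncsmul_def fun_eq_iff)
  qed
  have "Rp (\<Sum>w\<in>supp (Rp x). sc (Rp x w) * mon w) = Rp x"
    using R[OF fsR] by (auto simp: fun_eq_iff supp_def)
  then show ?thesis by (metis Rp_inverse)
qed

definition PL :: "nat set \<Rightarrow> fp set" where "PL L = {x. \<forall>w\<in>supp (Rp x). set w \<subseteq> L}"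

lemma ncpolys_on_Rp: "f \<in> ncpolys_on L \<longleftrightarrow> (\<exists>x\<in>PL L. f = Rp x)"
proof
  assume "f \<in> ncpolys_on L"
  then have "finite (supp f)" "\<forall>w\<in>supp f. set w \<subseteq> L" by (auto simp: ncpolys_on_def supp_def)
  then show "\<exists>x\<in>PL L. f = Rp x"
    by (intro bexI[where x="Ap f"]) (auto simp: PL_def Ap_inverse)
next
  assume "\<exists>x\<in>PL L. f = Rp x"
  then show "f \<in> ncpolys_on L" using fsR by (auto simp: ncpolys_on_def PL_def supp_def)
qed

lemma Rp_in_ncpolys: "x \<in> PL L \<Longrightarrow> Rp x \<in> ncpolys_on L"
  using ncpolys_on_Rp by blast

lemma PL_zero: "0 \<in> PL L" by (simp add: PL_def Rp_zero supp_def nczero_def)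
lemma PL_one: "1 \<in> PL L" by (simp add: PL_def Rp_one supp_def ncone_def)
lemma PL_add: assumes "x \<in> PL L" "y \<in> PL L" shows "x + y \<in> PL L"
proof (unfold PL_def mem_Collect_eq, intro ballI)
  fix w assume "w \<in> supp (Rp (x + y))"
  then have "Rp x w \<noteq> 0 \<or> Rp y w \<noteq> 0" by (auto simp: supp_def Rp_plus ncadd_def)
  then show "set w \<subseteq> L" using \<open>x \<in> PL L\<close> \<open>y \<in> PL L\<close> by (auto simp: PL_def supp_def)
qed
lemma PL_uminus: "x \<in> PL L \<Longrightarrow> - x \<in> PL L"
  by (auto simp: PL_def Rp_uminus supp_def)
lemma PL_diff: "x \<in> PL L \<Longrightarrow> y \<in> PL L \<Longrightarrow> x - y \<in> PL L"
  unfolding diff_conv_add_uminus by (intro PL_add PL_uminus)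
lemma PL_sc: "sc c \<in> PL L" by (simp add: PL_def Rp_sc supp_def ncone_def ncsmul_def)
lemma PL_mult: assumes x: "x \<in> PL L" and y: "y \<in> PL L" shows "x * y \<in> PL L"
proof -
  show ?thesis unfolding PL_def mem_Collect_eq Rp_times
  proof
    fix w assume "w \<in> supp (Rp x \<star> Rp y)"
    then obtain p where p: "p \<in> supp (Rp x) \<times> supp (Rp y)" "w = fst p @ snd p"
      using supp_conv[of "Rp x" "Rp y"] by blast
    then show "set w \<subseteq> L" using x y by (auto simp: PL_def)
  qed
qed
lemma PL_mon: "set w \<subseteq> L \<Longrightarrow> mon w \<in> PL L"
  by (simp add: PL_def Rp_mon supp_def)
lemma PL_mono: "x \<in> PL L \<Longrightarrow> L \<subseteq> L' \<Longrightarrow> x \<in> PL L'"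
  by (auto simp: PL_def)
lemma PL_sum: "(\<And>i. i \<in> A \<Longrightarrow> f i \<in> PL L) \<Longrightarrow> sum f A \<in> PL L"
  by (induction A rule: infinite_finite_induct) (auto intro: PL_add PL_zero)
lemma PL_numeral: "numeral k \<in> PL L" by (metis PL_sc sc_numeral)

lemma PL_induct[consumes 1, case_names zero add mon]:
  assumes x: "x \<in> PL L"
    and z: "P 0"
    and a: "\<And>a b. a \<in> PL L \<Longrightarrow> b \<in> PL L \<Longrightarrow> P a \<Longrightarrow> P b \<Longrightarrow> P (a + b)"
    and m: "\<And>c w. set w \<subseteq> L \<Longrightarrow> P (sc c * mon w)"
  shows "P x"
proof -
  have "\<forall>w\<in>supp (Rp x). set w \<subseteq> L" using x by (simp add: PL_def)
  have "B \<subseteq> supp (Rp x) \<Longrightarrow> P (\<Sum>w\<in>B. sc (Rp x w) * mon w) \<and> (\<Sum>w\<in>B. sc (Rp x w) * mon w) \<in> PL L" for B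
  proof (induction B rule: infinite_finite_induct)
    case (infinite A) then show ?case using z PL_zero by simp
  next
    case empty then show ?case using z PL_zero by simp
  next
    case (insert w B)
    have "set w \<subseteq> L" using insert x by (auto simp: PL_def)
    then have "P (sc (Rp x w) * mon w)" "sc (Rp x w) * mon w \<in> PL L"
      using m PL_mult PL_sc PL_mon by auto
    then show ?case using insert a PL_add by simp
  qed
  then show ?thesis using fp_expand[of x] by (metis order_refl)
qed

definition Lf :: "(nat list \<Rightarrow> complex) \<Rightarrow> fp \<Rightarrow> complex" where "Lf h x = Lam h (Rp x)"

lemma Lf_add: "Lf h (x + y) = Lf h x + Lf h y"
proof -
  have A: "finite (supp (Rp x) \<union> supp (Rp y))" using fsR by simp
  have "Lf h (x + y) = (\<Sum>w\<in>supp (Rp x) \<union> supp (Rp y). Rp (x + y) w * h w)"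
    unfolding Lf_def by (rule Lam_superset[OF A]) (auto simp: supp_def Rp_plus ncadd_def)
  also have "\<dots> = (\<Sum>w\<in>supp (Rp x) \<union> supp (Rp y). Rp x w * h w) + (\<Sum>w\<in>supp (Rp x) \<union> supp (Rp y). Rp y w * h w)"
    by (simp add: Rp_plus ncadd_def distrib_right sum.distrib)
  also have "\<dots> = Lf h x + Lf h y"
    unfolding Lf_def by (simp add: Lam_superset[OF A])
  finally show ?thesis .
qed

lemma Lf_zero: "Lf h 0 = 0" by (simp add: Lf_def Lam_def Rp_zero nczero_def)

lemma Lf_sc: "Lf h (sc c * x) = c * Lf h x"
proof -
  have "Lf h (sc c * x) = (\<Sum>w\<in>supp (Rp x). Rp (sc c * x) w * h w)"
    unfolding Lf_def by (rule Lam_superset) (auto simp: fsR[unfolded supp_def] supp_def Rp_sc_mul ncsmul_def)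
  then show ?thesis by (simp add: Rp_sc_mul ncsmul_def Lf_def Lam_def sum_distrib_left mult.assoc)
qed

lemma Lf_uminus: "Lf h (- x) = - Lf h x"
proof -
  have "Lf h (- x) + Lf h x = 0" using Lf_add[of h "- x" x] by (simp add: Lf_zero)
  then show ?thesis by (simp add: eq_neg_iff_add_eq_0)
qed
lemma Lf_diff: "Lf h (x - y) = Lf h x - Lf h y"
  unfolding diff_conv_add_uminus by (simp only: Lf_add Lf_uminus)
lemma Lf_sum: "Lf h (sum f A) = (\<Sum>i\<in>A. Lf h (f i))"
  by (induction A rule: infinite_finite_induct) (auto simp: Lf_zero Lf_add)

lemma Lf_mon: "Lf h (mon w) = h w"
  by (simp add: Lf_def Lam_def Rp_mon supp_def)

lemma Lf_mult: "Lf h (x * y) = (\<Sum>a\<in>supp (Rp x). \<Sum>b\<in>supp (Rp y). Rp x a * Rp y b * h (a @ b))"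
  unfolding Lf_def Rp_times by (rule Lam_conv[OF fsR fsR])

lemma Lf_ext: "(\<And>h. Lf h x = Lf h y) \<Longrightarrow> x = y"
proof -
  assume H: "\<And>h. Lf h x = Lf h y"
  have "Rp x u = Rp y u" for u
    using H[of "\<lambda>w. if w = u then 1 else 0"] by (simp add: Lf_def point_Lam[OF fsR, symmetric])
  then show ?thesis by (simp add: Rp_inject[symmetric] fun_eq_iff)
qed



lemma Rp_sum: "Rp (sum f A) v = (\<Sum>i\<in>A. Rp (f i) v)"
  by (induction A rule: infinite_finite_induct) (auto simp: Rp_zero Rp_plus nczero_def ncadd_def)

definition Sub :: "(nat \<Rightarrow> fp) \<Rightarrow> fp \<Rightarrow> fp" where
  "Sub \<sigma> x = (\<Sum>w\<in>supp (Rp x). sc (Rp x w) * prod_list (map \<sigma> w))"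

lemma Sub_superset:
  assumes "finite A" "supp (Rp x) \<subseteq> A"
  shows "Sub \<sigma> x = (\<Sum>w\<in>A. sc (Rp x w) * prod_list (map \<sigma> w))"
  unfolding Sub_def by (rule sum.mono_neutral_left) (use assms in \<open>auto simp: supp_def sc_zero\<close>)

lemma Sub_add: "Sub \<sigma> (x + y) = Sub \<sigma> x + Sub \<sigma> y"
proof -
  let ?A = "supp (Rp x) \<union> supp (Rp y)"
  have A: "finite ?A" using fsR by simp
  have "Sub \<sigma> (x + y) = (\<Sum>w\<in>?A. sc (Rp (x+y) w) * prod_list (map \<sigma> w))"
    by (rule Sub_superset[OF A]) (auto simp: supp_def Rp_plus ncadd_def)
  also have "\<dots> = (\<Sum>w\<in>?A. sc (Rp x w) * prod_list (map \<sigma> w)) + (\<Sum>w\<in>?A. sc (Rp y w) * prod_list (map \<sigma> w))"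
    by (simp add: Rp_plus ncadd_def sc_add distrib_right sum.distrib)
  also have "\<dots> = Sub \<sigma> x + Sub \<sigma> y"
    by (simp add: Sub_superset[OF A])
  finally show ?thesis .
qed

lemma Sub_zero: "Sub \<sigma> 0 = 0" by (simp add: Sub_def Rp_zero supp_def nczero_def)

lemma Sub_sc: "Sub \<sigma> (sc c * x) = sc c * Sub \<sigma> x"
proof -
  have "Sub \<sigma> (sc c * x) = (\<Sum>w\<in>supp (Rp x). sc (Rp (sc c * x) w) * prod_list (map \<sigma> w))"
    by (rule Sub_superset) (auto simp: fsR[unfolded supp_def] supp_def Rp_sc_mul ncsmul_def)
  then show ?thesis
    by (simp add: Sub_def Rp_sc_mul ncsmul_def sc_mult sum_distrib_left mult.assoc)
qed

lemma Sub_mon: "Sub \<sigma> (mon w) = prod_list (map \<sigma> w)"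
  by (simp add: Sub_def Rp_mon supp_def sc_one)

lemma Sub_one: "Sub \<sigma> 1 = 1" using Sub_mon[of \<sigma> "[]"] by (simp add: mon_nil)

lemma Sub_uminus: "Sub \<sigma> (- x) = - Sub \<sigma> x"
proof -
  have "Sub \<sigma> (- x) + Sub \<sigma> x = 0" using Sub_add[of \<sigma> "- x" x] by (simp add: Sub_zero)
  then show ?thesis by (rule eq_neg_iff_add_eq_0[THEN iffD2])
qed

lemma Sub_diff: "Sub \<sigma> (x - y) = Sub \<sigma> x - Sub \<sigma> y"
  unfolding diff_conv_add_uminus by (simp only: Sub_add Sub_uminus)

lemma mon_sc_mult: "sc c * mon w * (sc d * mon v) = sc (c * d) * mon (w @ v)"
proof -
  have c: "mon w * sc d = sc d * mon w" by (rule sc_comm[symmetric])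
  have "sc c * mon w * (sc d * mon v) = sc c * (mon w * sc d) * mon v" by (simp only: mult.assoc)
  also have "\<dots> = sc c * (sc d * mon w) * mon v" by (simp only: c)
  also have "\<dots> = sc (c * d) * mon (w @ v)" by (simp only: mon_append sc_mult mult.assoc)
  finally show ?thesis .
qed

lemma Sub_mult: "Sub \<sigma> (x * y) = Sub \<sigma> x * Sub \<sigma> y"
proof -
  have x: "x \<in> PL UNIV" and y: "y \<in> PL UNIV" by (auto simp: PL_def)
  show ?thesis using x
  proof (induction x rule: PL_induct)
    case zero then show ?case by (simp add: Sub_zero)
  next
    case (add a b) then show ?case by (simp add: distrib_right Sub_add)
  next
    case (mon c w)
    show ?case using y
    proof (induction y rule: PL_induct)
      case zero then show ?case by (simp add: Sub_zero)
    next
      case (add a b) then show ?case by (simp add: distrib_left Sub_add)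
    next
      case (mon d v)
      have c: "prod_list (map \<sigma> w) * sc d = sc d * prod_list (map \<sigma> w)" by (rule sc_comm[symmetric])
      have "Sub \<sigma> (sc c * mon w * (sc d * mon v)) = Sub \<sigma> (sc (c * d) * mon (w @ v))"
        by (simp only: mon_sc_mult)
      also have "\<dots> = sc (c * d) * (prod_list (map \<sigma> w) * prod_list (map \<sigma> v))"
        by (simp only: Sub_sc Sub_mon map_append prod_list.append)
      also have "\<dots> = sc c * (sc d * prod_list (map \<sigma> w)) * prod_list (map \<sigma> v)"
        by (simp only: sc_mult mult.assoc)
      also have "\<dots> = sc c * prod_list (map \<sigma> w) * (sc d * prod_list (map \<sigma> v))"
        by (simp only: c[symmetric] mult.assoc)
      finally show ?case by (simp only: Sub_sc Sub_mon)
    qed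
  qed
qed

lemma Sub_PL:
  assumes x: "x \<in> PL L" and s: "\<And>i. i \<in> L \<Longrightarrow> \<sigma> i \<in> PL L'"
  shows "Sub \<sigma> x \<in> PL L'"
  using x
proof (induction x rule: PL_induct)
  case zero then show ?case by (simp add: Sub_zero PL_zero)
next
  case (add a b) then show ?case by (simp add: Sub_add PL_add)
next
  case (mon c w)
  have "prod_list (map \<sigma> w) \<in> PL L'" using mon
    by (induction w) (auto intro: PL_mult PL_one s)
  then show ?case by (simp add: Sub_sc Sub_mon PL_mult PL_sc)
qed

lemma Sub_cong:
  assumes x: "x \<in> PL L" and s: "\<And>i. i \<in> L \<Longrightarrow> \<sigma> i = \<tau> i"
  shows "Sub \<sigma> x = Sub \<tau> x"
  using x
proof (induction x rule: PL_induct)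
  case zero then show ?case by (simp add: Sub_zero)
next
  case (add a b) then show ?case by (simp add: Sub_add)
next
  case (mon c w)
  have m: "map \<sigma> w = map \<tau> w" using s mon by auto
  show ?case by (simp only: Sub_sc Sub_mon m)
qed

lemma Rp_Sub:
  assumes "\<And>i. Rp (\<sigma> i) = \<sigma>' i"
  shows "ncsubst \<sigma>' (Rp x) = Rp (Sub \<sigma> x)"
proof -
  have P: "ncprod (map \<sigma>' w) = Rp (prod_list (map \<sigma> w))" for w
    by (induction w) (simp_all add: ncprod_def Rp_one Rp_times assms)
  show ?thesis
    by (simp add: ncsubst_def Sub_def Rp_sum Rp_sc_mul ncsmul_def P fun_eq_iff supp_def)
qed

definition U :: "nat \<Rightarrow> fp" where "U i = mon [2 * i]"
definition V :: "nat \<Rightarrow> fp" where "V i = mon [2 * i + 1]"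
definition G :: "nat \<Rightarrow> fp" where "G i = mon [i]"

definition qc :: complex where "qc = qq"

definition S :: "nat \<Rightarrow> fp" where
  "S i = sc (- 1 / (2 * qq)) * (1 + U i + V i + U i * V i)"

lemma Rp_U: "Rp (U i) = Uq i" by (simp add: U_def Uq_def Rp_mon_var)
lemma Rp_V: "Rp (V i) = Vq i" by (simp add: V_def Vq_def Rp_mon_var)
lemma Rp_G: "Rp (G i) = ncvar i" by (simp add: G_def Rp_mon_var)

lemma Rp_S: "Rp (S i) = s_el i"
  unfolding S_def s_el_def Rp_sc_mul by (simp add: Rp_plus Rp_one Rp_times Rp_U Rp_V)

lemma phi_Rp: "phi (Rp x) = Rp (Sub S x)"
  unfolding phi_def by (rule Rp_Sub) (simp add: Rp_S)

lemma U_PL: "i \<in> {1..<n} \<Longrightarrow> U i \<in> PL (Q_letters n)"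
  unfolding U_def by (rule PL_mon) (auto simp: Q_letters_def)
lemma V_PL: "i \<in> {1..<n} \<Longrightarrow> V i \<in> PL (Q_letters n)"
  unfolding V_def by (rule PL_mon) (auto simp: Q_letters_def)
lemma S_PL: "i \<in> {1..<n} \<Longrightarrow> S i \<in> PL (Q_letters n)"
  unfolding S_def by (intro PL_mult PL_add PL_sc PL_one U_PL V_PL)

lemma SubS_PL: "a \<in> PL {1..<n} \<Longrightarrow> Sub S a \<in> PL (Q_letters n)"
  by (rule Sub_PL) (auto intro: S_PL)

lemma nczero_subalg: "nczero \<in> subalg_gen X"
proof -
  have "0 \<cdot> ncone \<in> subalg_gen X" by (intro subalg_gen.smul subalg_gen.one)
  moreover have "0 \<cdot> ncone = nczero" by (simp add: ncsmul_def nczero_def fun_eq_iff)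
  ultimately show ?thesis by simp
qed

lemma Sub_in_subalg:
  assumes "a \<in> PL {1..<n}"
  shows "Rp (Sub S a) \<in> subalg_gen (s_el ` {1..<n})"
  using assms
proof (induction a rule: PL_induct)
  case zero then show ?case by (simp add: Sub_zero Rp_zero nczero_subalg)
next
  case (add a b) then show ?case by (simp add: Sub_add Rp_plus subalg_gen.add)
next
  case (mon c w)
  have "Rp (prod_list (map S w)) \<in> subalg_gen (s_el ` {1..<n})" using mon
  proof (induction w)
    case Nil then show ?case by (simp add: Rp_one subalg_gen.one)
  next
    case (Cons a w)
    then have "Rp (S a) \<in> subalg_gen (s_el ` {1..<n})"
      by (simp add: Rp_S subalg_gen.gen)
    with Cons show ?case by (simp add: Rp_times subalg_gen.mul)
  qed
  then show ?case by (simp add: Sub_sc Sub_mon Rp_sc_mul subalg_gen.smul)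
qed

lemma subalg_in_Sub:
  assumes "y \<in> subalg_gen (s_el ` {1..<n})"
  shows "\<exists>a\<in>PL {1..<n}. y = Rp (Sub S a)"
  using assms
proof (induction y rule: subalg_gen.induct)
  case (gen s)
  then obtain i where i: "i \<in> {1..<n}" "s = s_el i" by auto
  show ?case
    by (rule bexI[where x="G i"]) (use i in \<open>auto simp: G_def Sub_mon Rp_S intro!: PL_mon\<close>)
next
  case one
  show ?case by (rule bexI[where x=1]) (auto simp: Sub_one Rp_one PL_one)
next
  case (add a b)
  then obtain x y where "x \<in> PL {1..<n}" "a = Rp (Sub S x)" "y \<in> PL {1..<n}" "b = Rp (Sub S y)" by blast
  then show ?case by (intro bexI[where x="x + y"]) (auto simp: Sub_add Rp_plus PL_add)
next
  case (smul a c)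
  then obtain x where "x \<in> PL {1..<n}" "a = Rp (Sub S x)" by blast
  then show ?case by (intro bexI[where x="sc c * x"]) (auto simp: Sub_sc Rp_sc_mul PL_mult PL_sc)
next
  case (mul a b)
  then obtain x y where "x \<in> PL {1..<n}" "a = Rp (Sub S x)" "y \<in> PL {1..<n}" "b = Rp (Sub S y)" by blast
  then show ?case by (intro bexI[where x="x * y"]) (auto simp: Sub_mult Rp_times PL_mult)
qed

lemma conj2:
  "(\<exists>a\<in>ncpolys_on {1..<n}. x \<ominus> phi a \<in> I) \<longleftrightarrow> (\<exists>y\<in>subalg_gen (s_el ` {1..<n}). x \<ominus> y \<in> I)"
proof
  assume "\<exists>a\<in>ncpolys_on {1..<n}. x \<ominus> phi a \<in> I"
  then obtain a' where a': "a' \<in> ncpolys_on {1..<n}" "x \<ominus> phi a' \<in> I" by blast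
  then obtain a where "a \<in> PL {1..<n}" "a' = Rp a" using ncpolys_on_Rp by blast
  with a' have "a \<in> PL {1..<n}" "x \<ominus> phi (Rp a) \<in> I" by auto
  then show "\<exists>y\<in>subalg_gen (s_el ` {1..<n}). x \<ominus> y \<in> I"
    using Sub_in_subalg phi_Rp by metis
next
  assume "\<exists>y\<in>subalg_gen (s_el ` {1..<n}). x \<ominus> y \<in> I"
  then obtain y where y: "y \<in> subalg_gen (s_el ` {1..<n})" "x \<ominus> y \<in> I" by blast
  then obtain a where "a \<in> PL {1..<n}" "y = Rp (Sub S a)" using subalg_in_Sub by blast
  then show "\<exists>a\<in>ncpolys_on {1..<n}. x \<ominus> phi a \<in> I"
    using y Rp_in_ncpolys phi_Rp by metis
qed



section \<open>Twisted group normal forms for the letters of Q\<close>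

definition ac :: "nat \<Rightarrow> nat \<Rightarrow> bool" where
  "ac x y \<longleftrightarrow> x mod 2 \<noteq> y mod 2 \<and> x div 2 \<le> y div 2 + 1 \<and> y div 2 \<le> x div 2 + 1"

definition ks :: "nat \<Rightarrow> nat \<Rightarrow> complex" where "ks x y = (if ac x y then -1 else 1)"

lemma ac_sym: "ac x y = ac y x" unfolding ac_def by auto
lemma ks_sym: "ks x y = ks y x" unfolding ks_def using ac_sym by simp
lemma ac_refl: "\<not> ac x x" unfolding ac_def by simp
lemma ks_refl: "ks x x = 1" unfolding ks_def using ac_refl by simp
lemma ks_sq: "ks x y * ks x y = 1" unfolding ks_def by simp
lemma ks_cases: "ks x y = 1 \<or> ks x y = -1" unfolding ks_def by simp

definition pp :: "nat \<Rightarrow> nat list \<Rightarrow> complex" where "pp x zs = prod_list (map (\<lambda>z. ks z x) zs)"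

fun ins :: "nat \<Rightarrow> nat list \<Rightarrow> complex \<times> nat list" where
  "ins x [] = (1, [x])"
| "ins x (y # ys) = (if y < x then (fst (ins x ys), y # snd (ins x ys))
     else if y = x then (- pp x ys, ys) else (pp x (y # ys), x # y # ys))"

definition step :: "complex \<times> nat list \<Rightarrow> nat \<Rightarrow> complex \<times> nat list" where
  "step st x = (fst st * fst (ins x (snd st)), snd (ins x (snd st)))"

definition run :: "complex \<times> nat list \<Rightarrow> nat list \<Rightarrow> complex \<times> nat list" where
  "run st w = foldl step st w"

definition nf :: "nat list \<Rightarrow> complex \<times> nat list" where "nf w = run (1, []) w"

lemma run_Nil[simp]: "run st [] = st" by (simp add: run_def)
lemma run_Cons: "run st (x # w) = run (step st x) w" by (simp add: run_def)
lemma run_append: "run st (u @ v) = run (run st u) v" by (simp add: run_def)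
lemma run_snoc: "run st (u @ [x]) = step (run st u) x" by (simp add: run_def)

definition symd :: "'a set \<Rightarrow> 'a \<Rightarrow> 'a set" where
  "symd A x = (if x \<in> A then A - {x} else insert x A)"

definition sg :: "nat \<Rightarrow> nat set \<Rightarrow> complex" where
  "sg x A = (\<Prod>y\<in>{y\<in>A. x < y}. ks y x) * (if x \<in> A then -1 else 1)"

abbreviation srt :: "nat list \<Rightarrow> bool" where "srt L \<equiv> sorted_wrt (<) L"

lemma pp_set: "srt zs \<Longrightarrow> pp x zs = (\<Prod>z\<in>set zs. ks z x)"
  unfolding pp_def by (simp add: prod.distinct_set_conv_list[symmetric] strict_sorted_iff)

lemma ins_props:
  "srt L \<Longrightarrow> srt (snd (ins x L)) \<and> set (snd (ins x L)) = symd (set L) x \<and> fst (ins x L) = sg x (set L)"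
proof (induction L)
  case Nil then show ?case by (simp add: symd_def sg_def)
next
  case (Cons y ys)
  have sys: "srt ys" and gy: "\<forall>z\<in>set ys. y < z" using Cons.prems by auto
  show ?case
  proof (cases "y < x")
    case True
    with Cons.IH[OF sys] have IH: "srt (snd (ins x ys))" "set (snd (ins x ys)) = symd (set ys) x"
        "fst (ins x ys) = sg x (set ys)" by auto
    have "\<forall>z\<in>set (snd (ins x ys)). y < z" using IH(2) gy True by (auto simp: symd_def split: if_splits)
    moreover have "{z \<in> insert y (set ys). x < z} = {z\<in>set ys. x < z}" using True by auto
    ultimately show ?thesis using True IH by (auto simp: symd_def sg_def)
  next
    case False
    show ?thesis
    proof (cases "y = x")
      case True
      have "x \<notin> set ys" using gy True by auto
      moreover have "{z \<in> insert x (set ys). x < z} = set ys" using gy True by auto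
      ultimately show ?thesis using True sys Cons.prems
        by (auto simp: symd_def sg_def pp_set)
    next
      case False2: False
      with False have xy: "x < y" by simp
      have "x \<notin> set (y # ys)" using gy xy by auto
      moreover have "{z \<in> set (y # ys). x < z} = set (y # ys)" using gy xy by auto
      moreover have "srt (x # y # ys)" using Cons.prems gy xy by auto
      ultimately show ?thesis using xy False2 Cons.prems
        by (auto simp: symd_def sg_def pp_set)
    qed
  qed
qed

lemma step_srt: "srt (snd st) \<Longrightarrow> srt (snd (step st x))"
  using ins_props by (simp add: step_def)
lemma step_set: "srt (snd st) \<Longrightarrow> set (snd (step st x)) = symd (set (snd st)) x"
  using ins_props by (simp add: step_def)
lemma step_fst: "srt (snd st) \<Longrightarrow> fst (step st x) = fst st * sg x (set (snd st))"
  using ins_props by (simp add: step_def)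
lemma step_snd_indep: "snd (step (c, L) x) = snd (step (d, L) x)"
  by (simp add: step_def)

lemma run_srt: "srt (snd st) \<Longrightarrow> srt (snd (run st w))"
  by (induction w arbitrary: st) (auto simp: run_Cons step_srt)

lemma run_scale: "run (c * s, L) w = (c * fst (run (s, L) w), snd (run (s, L) w))"
proof (induction w arbitrary: s L)
  case Nil then show ?case by simp
next
  case (Cons x w)
  have "step (c * s, L) x = (c * fst (step (s, L) x), snd (step (s, L) x))"
    by (simp add: step_def)
  then show ?case using Cons.IH[of "s * fst (ins x L)" "snd (ins x L)"]
    by (simp add: run_Cons step_def mult.assoc)
qed

lemma run_scale': "run (c, L) w = (c * fst (run (1, L) w), snd (run (1, L) w))"
  using run_scale[of c 1 L w] by simp

lemma finite_symd: "finite A \<Longrightarrow> finite (symd A x)" by (simp add: symd_def)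

lemma sg_symd:
  assumes "finite A" "a \<noteq> b"
  shows "sg b (symd A a) = sg b A * (if b < a then ks a b else 1)"
proof -
  have mem: "(b \<in> symd A a) = (b \<in> A)" using assms by (auto simp: symd_def)
  have F: "finite {y\<in>A. b < y}" using assms by simp
  have P: "(\<Prod>y\<in>{y\<in>symd A a. b < y}. ks y b) = (\<Prod>y\<in>{y\<in>A. b < y}. ks y b) * (if b < a then ks a b else 1)"
  proof (cases "b < a")
    case True
    show ?thesis
    proof (cases "a \<in> A")
      case True2: True
      have "{y\<in>symd A a. b < y} = {y\<in>A. b < y} - {a}" using True2 by (auto simp: symd_def)
      moreover have "(\<Prod>y\<in>{y\<in>A. b < y}. ks y b) = ks a b * (\<Prod>y\<in>{y\<in>A. b < y} - {a}. ks y b)"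
        using True True2 F by (simp add: prod.remove)
      ultimately show ?thesis using True ks_sq[of a b] by (simp add: mult.assoc mult.commute mult.left_commute)
    next
      case False2: False
      have "{y\<in>symd A a. b < y} = insert a {y\<in>A. b < y}" using False2 True by (auto simp: symd_def)
      then show ?thesis using False2 F True by (simp add: mult.commute)
    qed
  next
    case False
    then have "{y\<in>symd A a. b < y} = {y\<in>A. b < y}" by (auto simp: symd_def)
    then show ?thesis using False by simp
  qed
  show ?thesis unfolding sg_def using P mem by simp
qed

lemma symd_comm: "symd (symd A a) b = symd (symd A b) a"
  by (auto simp: symd_def)

lemma symd_self: "symd (symd A a) a = A"
  by (auto simp: symd_def)

lemma step_comm:
  assumes "srt (snd st)" "a \<noteq> b"
  shows "step (step st a) b = (ks a b * fst (step (step st b) a), snd (step (step st b) a))"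
proof -
  let ?A = "set (snd st)"
  have s1: "srt (snd (step st a))" "srt (snd (step st b))" using assms step_srt by auto
  have sets: "snd (step (step st a) b) = snd (step (step st b) a)"
  proof -
    have "srt (snd (step (step st a) b))" "srt (snd (step (step st b) a))" using s1 step_srt by auto
    moreover have "set (snd (step (step st a) b)) = set (snd (step (step st b) a))"
      using s1 assms by (simp add: step_set symd_comm)
    ultimately show ?thesis by (simp add: strict_sorted_equal)
  qed
  have f: "finite ?A" by simp
  have "fst (step (step st a) b) = fst st * sg a ?A * sg b (symd ?A a)"
    using assms s1 by (simp add: step_fst step_set)
  also have "\<dots> = fst st * sg a ?A * sg b ?A * (if b < a then ks a b else 1)"
    using sg_symd[OF f assms(2)] by simp
  finally have e1: "fst (step (step st a) b) = fst st * sg a ?A * sg b ?A * (if b < a then ks a b else 1)" .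
  have "fst (step (step st b) a) = fst st * sg b ?A * sg a (symd ?A b)"
    using assms s1 by (simp add: step_fst step_set)
  also have "\<dots> = fst st * sg b ?A * sg a ?A * (if a < b then ks b a else 1)"
    using sg_symd[OF f, of b a] assms(2) by simp
  finally have e2: "fst (step (step st b) a) = fst st * sg b ?A * sg a ?A * (if a < b then ks b a else 1)" .
  have "fst (step (step st a) b) = ks a b * fst (step (step st b) a)"
    unfolding e1 e2 using assms(2) ks_sq[of a b] ks_sym[of a b]
    by (cases "a < b") (auto simp: algebra_simps)
  with sets show ?thesis by (metis prod.collapse)
qed

lemma step_sq:
  assumes "srt (snd st)"
  shows "step (step st a) a = (- fst st, snd st)"
proof -
  let ?A = "set (snd st)"
  have s1: "srt (snd (step st a))" using assms step_srt by auto
  have "srt (snd (step (step st a) a))" using s1 step_srt by auto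
  moreover have "set (snd (step (step st a) a)) = set (snd st)"
    using s1 assms by (simp add: step_set symd_self)
  ultimately have sets: "snd (step (step st a) a) = snd st" using assms by (simp add: strict_sorted_equal)
  have "{y\<in>symd ?A a. a < y} = {y\<in>?A. a < y}" by (auto simp: symd_def)
  moreover have "(a \<in> symd ?A a) = (a \<notin> ?A)" by (auto simp: symd_def)
  ultimately have "sg a (symd ?A a) * sg a ?A = - ((\<Prod>y\<in>{y\<in>?A. a < y}. ks y a) * (\<Prod>y\<in>{y\<in>?A. a < y}. ks y a))"
    unfolding sg_def by auto
  also have "(\<Prod>y\<in>{y\<in>?A. a < y}. ks y a) * (\<Prod>y\<in>{y\<in>?A. a < y}. ks y a) = 1"
    by (simp add: prod.distrib[symmetric] ks_sq)
  finally have "sg a (symd ?A a) * sg a ?A = -1" by simp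
  moreover have e: "fst (step (step st a) a) = fst st * sg a ?A * sg a (symd ?A a)"
    using assms s1 by (simp add: step_fst step_set)
  moreover have "fst st * sg a ?A * sg a (symd ?A a) = fst st * (sg a (symd ?A a) * sg a ?A)"
    by (simp only: mult.assoc mult.commute[of "sg a ?A"])
  ultimately have "fst (step (step st a) a) = - fst st" by simp
  with sets show ?thesis by (metis prod.collapse)
qed

lemma run_step_scale: "run (c * fst st, snd st) w = (c * fst (run st w), snd (run st w))"
  using run_scale[of c "fst st" "snd st" w] by simp

lemma run_neg: "run (- fst st, snd st) w = (- fst (run st w), snd (run st w))"
  using run_step_scale[of "-1" st w] by simp

lemma run_rel_sq:
  assumes "srt (snd st)"
  shows "run st (p @ [a, a] @ q) = (- fst (run st (p @ q)), snd (run st (p @ q)))"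
proof -
  have "srt (snd (run st p))" using assms run_srt by auto
  then have "step (step (run st p) a) a = (- fst (run st p), snd (run st p))"
    by (rule step_sq)
  then show ?thesis
    by (simp add: run_append run_Cons run_neg)
qed

lemma run_rel_comm:
  assumes "srt (snd st)" "a \<noteq> b"
  shows "run st (p @ [a, b] @ q) = (ks a b * fst (run st (p @ [b, a] @ q)), snd (run st (p @ [b, a] @ q)))"
proof -
  have "srt (snd (run st p))" using assms run_srt by auto
  then have "step (step (run st p) a) b = (ks a b * fst (step (step (run st p) b) a), snd (step (step (run st p) b) a))"
    by (rule step_comm[OF _ assms(2)])
  then show ?thesis
    by (simp add: run_append run_Cons run_step_scale)
qed

definition oddl :: "nat list \<Rightarrow> nat set" where "oddl w = {y. odd (count_list w y)}"

lemma oddl_Nil[simp]: "oddl [] = {}" by (simp add: oddl_def)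
lemma oddl_snoc: "oddl (w @ [x]) = symd (oddl w) x"
  by (auto simp: oddl_def symd_def)
lemma oddl_Cons: "oddl (x # w) = symd (oddl w) x"
  by (auto simp: oddl_def symd_def)
lemma oddl_sub: "oddl w \<subseteq> set w"
proof
  fix x assume "x \<in> oddl w"
  then have "odd (count_list w x)" by (simp add: oddl_def)
  then have "count_list w x \<noteq> 0" by (metis even_zero)
  then show "x \<in> set w" using count_list_0_iff by metis
qed
lemma finite_oddl: "finite (oddl w)" using oddl_sub finite_subset by blast

lemma symd_symd_set: "symd A x = symd B x \<longleftrightarrow> A = B"
  by (auto simp: symd_def split: if_splits)

definition sdiff :: "'a set \<Rightarrow> 'a set \<Rightarrow> 'a set" where "sdiff A B = (A - B) \<union> (B - A)"

lemma sdiff_symd: "sdiff A (symd B x) = symd (sdiff A B) x"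
  by (auto simp: sdiff_def symd_def)

lemma run_set: "srt (snd st) \<Longrightarrow> set (snd (run st w)) = sdiff (set (snd st)) (oddl w)"
proof (induction w rule: rev_induct)
  case Nil then show ?case by (simp add: sdiff_def)
next
  case (snoc x w)
  then show ?case by (simp add: run_snoc step_set run_srt oddl_snoc sdiff_symd)
qed

lemma nf_srt: "srt (snd (nf w))" unfolding nf_def by (rule run_srt) simp
lemma nf_set: "set (snd (nf w)) = oddl w" unfolding nf_def by (simp add: run_set sdiff_def)

lemma pp_cases: "pp x zs = 1 \<or> pp x zs = -1"
  by (induction zs) (auto simp: pp_def ks_def)

lemma ins_cases: "fst (ins x L) = 1 \<or> fst (ins x L) = -1"
proof (induction L)
  case Nil then show ?case by simp
next
  case (Cons y ys)
  have "- pp x ys = 1 \<or> - pp x ys = -1" using pp_cases[of x ys] by auto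
  then show ?case using Cons pp_cases[of x "y # ys"] by auto
qed

lemma fst_run_cases: "fst (run (1, L) w) = 1 \<or> fst (run (1, L) w) = -1"
proof (induction w rule: rev_induct)
  case Nil then show ?case by simp
next
  case (snoc x w)
  have "fst (run (1, L) (w @ [x])) = fst (run (1, L) w) * fst (ins x (snd (run (1, L) w)))"
    by (simp add: run_snoc step_def)
  then show ?case using snoc ins_cases[of x "snd (run (1, L) w)"] by auto
qed

lemma fst_nf_sq: "fst (nf w) * fst (nf w) = 1"
  using fst_run_cases[of "[]" w] unfolding nf_def by auto



definition scl :: "complex \<Rightarrow> complex \<times> nat list \<Rightarrow> complex \<times> nat list" where
  "scl c st = (c * fst st, snd st)"

lemma run_scl: "run (scl c st) w = scl c (run st w)"
  unfolding scl_def by (rule run_step_scale)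

lemma step_comm': "srt (snd st) \<Longrightarrow> a \<noteq> b \<Longrightarrow> step (step st a) b = scl (ks a b) (step (step st b) a)"
  using step_comm unfolding scl_def by blast

lemma scl_scl: "scl c (scl d st) = scl (c * d) st" by (simp add: scl_def mult.assoc)

lemma run_rot: "srt (snd st) \<Longrightarrow> run st (x # w) = scl (prod_list (map (ks x) w)) (run st (w @ [x]))"
proof (induction w arbitrary: st)
  case Nil then show ?case by (simp add: scl_def run_Cons)
next
  case (Cons y w)
  have s1: "srt (snd (step st y))" using Cons.prems step_srt by blast
  have "run st (x # y # w) = run (step (step st x) y) w" by (simp add: run_Cons)
  also have "step (step st x) y = scl (ks x y) (step (step st y) x)"
  proof (cases "x = y")
    case True then show ?thesis by (simp add: ks_refl scl_def)
  next
    case False then show ?thesis using step_comm'[OF Cons.prems False] by simp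
  qed
  also have "run (scl (ks x y) (step (step st y) x)) w = scl (ks x y) (run (step st y) (x # w))"
    by (simp add: run_scl run_Cons)
  also have "\<dots> = scl (ks x y) (scl (prod_list (map (ks x) w)) (run (step st y) (w @ [x])))"
    using Cons.IH[OF s1] by simp
  finally show ?case by (simp add: scl_scl run_Cons)
qed

lemma prod_symd:
  assumes "finite A"
  shows "(\<Prod>y\<in>symd A z. ks x y) = ks x z * (\<Prod>y\<in>A. ks x y)"
proof (cases "z \<in> A")
  case True
  then have "(\<Prod>y\<in>A. ks x y) = ks x z * (\<Prod>y\<in>A - {z}. ks x y)" using assms by (simp add: prod.remove)
  then have "ks x z * (\<Prod>y\<in>A. ks x y) = (\<Prod>y\<in>A - {z}. ks x y)"
    using ks_sq[of x z] by (simp add: mult.assoc[symmetric])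
  then show ?thesis using True by (simp add: symd_def)
next
  case False then show ?thesis using assms by (simp add: symd_def)
qed

lemma prod_ks_oddl: "prod_list (map (ks x) w) = (\<Prod>y\<in>oddl w. ks x y)"
  by (induction w) (simp_all add: oddl_Cons prod_symd finite_oddl)

definition tw :: "nat list \<Rightarrow> complex" where "tw w = (if snd (nf w) = [] then fst (nf w) else 0)"

lemma tw_rot: "tw (x # w) = tw (w @ [x])"
proof -
  have e: "nf (x # w) = scl (prod_list (map (ks x) w)) (nf (w @ [x]))"
    unfolding nf_def by (rule run_rot) simp
  show ?thesis
  proof (cases "snd (nf (w @ [x])) = []")
    case True
    then have "oddl (w @ [x]) = {}" using nf_set[of "w @ [x]"] by simp
    then have "oddl w = {x}" by (auto simp: oddl_snoc symd_def split: if_splits)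
    then have "prod_list (map (ks x) w) = 1" by (simp add: prod_ks_oddl ks_refl)
    then show ?thesis using e by (simp add: tw_def scl_def)
  next
    case False then show ?thesis using e by (simp add: tw_def scl_def)
  qed
qed

lemma tw_swap: "tw (a @ b) = tw (b @ a)"
proof (induction a arbitrary: b)
  case Nil then show ?case by simp
next
  case (Cons x a)
  have "tw ((x # a) @ b) = tw (a @ b @ [x])" using tw_rot[of x "a @ b"] by simp
  also have "\<dots> = tw ((b @ [x]) @ a)" using Cons.IH[of "b @ [x]"] by simp
  finally show ?case by simp
qed

definition tau :: "fp \<Rightarrow> complex" where "tau x = Lf tw x"

lemma tau_comm: "tau (x * y) = tau (y * x)"
  unfolding tau_def Lf_mult by (subst sum.swap) (simp add: tw_swap mult.commute)

lemma Lf_expl: "Lf h x = (\<Sum>a\<in>supp (Rp x). Rp x a * h a)"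
  by (simp add: Lf_def Lam_def)

definition munull :: "fp \<Rightarrow> bool" where
  "munull x \<longleftrightarrow> (\<forall>g. Lf (\<lambda>a. fst (nf a) * g (snd (nf a))) x = 0)"

lemma munull_zero: "munull 0" by (simp add: munull_def Lf_zero)
lemma munull_add: "munull x \<Longrightarrow> munull y \<Longrightarrow> munull (x + y)" by (simp add: munull_def Lf_add)
lemma munull_sc: "munull x \<Longrightarrow> munull (sc c * x)" by (simp add: munull_def Lf_sc)
lemma munull_uminus: "munull x \<Longrightarrow> munull (- x)" by (simp add: munull_def Lf_uminus)
lemma munull_diff: "munull x \<Longrightarrow> munull y \<Longrightarrow> munull (x - y)" by (simp add: munull_def Lf_diff)

lemma nf_append: "nf (a @ b) = (fst (nf a) * fst (run (1, snd (nf a)) b), snd (run (1, snd (nf a)) b))"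
proof -
  have "nf (a @ b) = run (fst (nf a), snd (nf a)) b" by (simp add: nf_def run_append)
  then show ?thesis using run_scale'[of "fst (nf a)" "snd (nf a)" b] by simp
qed

lemma munull_mult: "munull x \<Longrightarrow> munull (x * y)"
proof -
  assume x: "munull x"
  show "munull (x * y)" unfolding munull_def
  proof
    fix g
    define F where "F b M = fst (run (1, M) b) * g (snd (run (1, M) b))" for b M
    define g' where "g' M = (\<Sum>b\<in>supp (Rp y). Rp y b * F b M)" for M
    have "Lf (\<lambda>a. fst (nf a) * g (snd (nf a))) (x * y)
       = (\<Sum>a\<in>supp (Rp x). \<Sum>b\<in>supp (Rp y). Rp x a * Rp y b * (fst (nf a) * F b (snd (nf a))))"
      unfolding Lf_mult by (simp add: nf_append F_def mult.assoc)
    also have "\<dots> = (\<Sum>a\<in>supp (Rp x). Rp x a * (fst (nf a) * g' (snd (nf a))))"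
      unfolding g'_def by (simp add: sum_distrib_left sum_distrib_right mult_ac)
    also have "\<dots> = Lf (\<lambda>a. fst (nf a) * g' (snd (nf a))) x" by (simp add: Lf_expl)
    also have "\<dots> = 0" using x by (simp add: munull_def)
    finally show "Lf (\<lambda>a. fst (nf a) * g (snd (nf a))) (x * y) = 0" .
  qed
qed

lemma tw_alt: "tw a = fst (nf a) * (if snd (nf a) = [] then 1 else 0)"
  by (simp add: tw_def)

lemma tau_munull: "munull x \<Longrightarrow> tau x = 0"
  unfolding tau_def munull_def tw_alt by (drule spec[where x="\<lambda>M. if M = [] then 1 else 0"]) simp

definition Zs :: "fp set" where "Zs = {y. \<forall>p. munull (p * y)}"

lemma Zs_zero: "0 \<in> Zs" by (simp add: Zs_def munull_zero)
lemma Zs_add: "x \<in> Zs \<Longrightarrow> y \<in> Zs \<Longrightarrow> x + y \<in> Zs"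
  by (simp add: Zs_def distrib_left munull_add)
lemma Zs_mult: "x \<in> Zs \<Longrightarrow> p * x * r \<in> Zs"
proof -
  assume "x \<in> Zs"
  then have "munull (p' * p * x * r)" for p' using munull_mult by (simp add: Zs_def mult.assoc[symmetric])
  then show "p * x * r \<in> Zs" by (simp add: Zs_def mult.assoc)
qed
lemma Zs_uminus: "x \<in> Zs \<Longrightarrow> - x \<in> Zs"
  using Zs_mult[of x "-1" 1] by simp
lemma Zs_diff: "x \<in> Zs \<Longrightarrow> y \<in> Zs \<Longrightarrow> x - y \<in> Zs"
  unfolding diff_conv_add_uminus by (intro Zs_add Zs_uminus)
lemma Zs_munull: "x \<in> Zs \<Longrightarrow> munull x" using Zs_def[of] by (metis mem_Collect_eq mult_1)
lemma Zs_tau: "x \<in> Zs \<Longrightarrow> tau (y * x) = 0"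
  by (simp add: Zs_def tau_munull)

lemma Lf_mult_mon: "Lf h (x * mon w) = Lf (\<lambda>c. h (c @ w)) x"
proof -
  have "supp (Rp (mon w)) = {w}" by (auto simp: supp_def Rp_mon)
  then show ?thesis unfolding Lf_mult by (simp add: Lf_expl Rp_mon)
qed

lemma Lf_add_fun: "Lf (\<lambda>c. h1 c + h2 c) x = Lf h1 x + Lf h2 x"
  by (simp add: Lf_expl distrib_left sum.distrib)
lemma Lf_diff_fun: "Lf (\<lambda>c. h1 c - h2 c) x = Lf h1 x - Lf h2 x"
  by (simp add: Lf_expl right_diff_distrib sum_subtractf)
lemma Lf_smul_fun: "Lf (\<lambda>c. k * h c) x = k * Lf h x"
  by (simp add: Lf_expl sum_distrib_left mult_ac)

lemma Lf_zero_fun: "(\<And>a. h a = 0) \<Longrightarrow> Lf h x = 0" by (simp add: Lf_expl)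

lemma Zs_sq: "mon [a, a] + 1 \<in> Zs"
proof -
  have "munull (p * (mon [a, a] + 1))" for p
    unfolding munull_def
  proof
    fix g
    have "Lf (\<lambda>a. fst (nf a) * g (snd (nf a))) (p * (mon [a, a] + 1))
      = Lf (\<lambda>c. fst (nf (c @ [a, a])) * g (snd (nf (c @ [a, a]))) + fst (nf c) * g (snd (nf c))) p"
      by (simp only: distrib_left mult_1_right Lf_add Lf_mult_mon Lf_add_fun)
    also have "\<dots> = 0"
    proof (rule Lf_zero_fun)
      fix c
      have "nf (c @ [a, a]) = (- fst (nf c), snd (nf c))"
        using run_rel_sq[of "(1, [])" c a "[]"] by (simp add: nf_def)
      then show "fst (nf (c @ [a, a])) * g (snd (nf (c @ [a, a]))) + fst (nf c) * g (snd (nf c)) = 0"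
        by simp
    qed
    finally show "Lf (\<lambda>a. fst (nf a) * g (snd (nf a))) (p * (mon [a, a] + 1)) = 0" .
  qed
  then show ?thesis by (simp add: Zs_def)
qed

lemma Zs_comm: "a \<noteq> b \<Longrightarrow> mon [a, b] - sc (ks a b) * mon [b, a] \<in> Zs"
proof -
  assume ab: "a \<noteq> b"
  have "munull (p * (mon [a, b] - sc (ks a b) * mon [b, a]))" for p
    unfolding munull_def
  proof
    fix g
    have "p * (mon [a, b] - sc (ks a b) * mon [b, a]) = p * mon [a, b] - sc (ks a b) * (p * mon [b, a])"
      by (simp only: right_diff_distrib mult.assoc[symmetric] sc_comm[of "ks a b" p, symmetric])
    then have "Lf (\<lambda>a. fst (nf a) * g (snd (nf a))) (p * (mon [a, b] - sc (ks a b) * mon [b, a]))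
      = Lf (\<lambda>c. fst (nf (c @ [a, b])) * g (snd (nf (c @ [a, b])))) p
        - ks a b * Lf (\<lambda>c. fst (nf (c @ [b, a])) * g (snd (nf (c @ [b, a])))) p"
      by (simp add: Lf_diff Lf_sc Lf_mult_mon)
    also have "\<dots> = Lf (\<lambda>c. fst (nf (c @ [a, b])) * g (snd (nf (c @ [a, b])))
        - ks a b * (fst (nf (c @ [b, a])) * g (snd (nf (c @ [b, a]))))) p"
      by (simp only: Lf_diff_fun Lf_smul_fun)
    also have "\<dots> = 0"
    proof (rule Lf_zero_fun)
      fix c
      have "nf (c @ [a, b]) = (ks a b * fst (nf (c @ [b, a])), snd (nf (c @ [b, a])))"
        using run_rel_comm[of "(1, [])" a b c "[]"] ab by (simp add: nf_def)
      then show "fst (nf (c @ [a, b])) * g (snd (nf (c @ [a, b])))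
        - ks a b * (fst (nf (c @ [b, a])) * g (snd (nf (c @ [b, a])))) = 0"
        by simp
    qed
    finally show "Lf (\<lambda>a. fst (nf a) * g (snd (nf a))) (p * (mon [a, b] - sc (ks a b) * mon [b, a])) = 0" .
  qed
  then show ?thesis by (simp add: Zs_def)
qed



definition QI :: "nat \<Rightarrow> fp set" where "QI n = {x. Rp x \<in> Q_ideal n}"

abbreviation QL :: "nat \<Rightarrow> fp set" where "QL n \<equiv> PL (Q_letters n)"

lemma QI_zero: "0 \<in> QI n"
  by (simp add: QI_def Q_ideal_def Rp_zero ideal_gen.zero)
lemma QI_add: "x \<in> QI n \<Longrightarrow> y \<in> QI n \<Longrightarrow> x + y \<in> QI n"
  by (simp add: QI_def Q_ideal_def Rp_plus ideal_gen.add)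
lemma QI_mult: "x \<in> QI n \<Longrightarrow> p \<in> QL n \<Longrightarrow> r \<in> QL n \<Longrightarrow> p * x * r \<in> QI n"
  by (simp add: QI_def Q_ideal_def Rp_times ideal_gen.mul Rp_in_ncpolys)
lemma QI_gen: "Rp x \<in> Q_rels n \<Longrightarrow> x \<in> QI n"
  by (simp add: QI_def Q_ideal_def ideal_gen.gen)
lemma QI_lmult: "x \<in> QI n \<Longrightarrow> p \<in> QL n \<Longrightarrow> p * x \<in> QI n"
  using QI_mult[of x n p 1] by (simp add: PL_one)
lemma QI_rmult: "x \<in> QI n \<Longrightarrow> r \<in> QL n \<Longrightarrow> x * r \<in> QI n"
  using QI_mult[of x n 1 r] by (simp add: PL_one)
lemma QI_sc: "x \<in> QI n \<Longrightarrow> sc c * x \<in> QI n"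
  by (rule QI_lmult) (simp_all add: PL_sc)
lemma QI_uminus: "x \<in> QI n \<Longrightarrow> - x \<in> QI n"
  using QI_sc[of x n "-1"] by (simp add: sc_uminus sc_one)
lemma QI_diff: "x \<in> QI n \<Longrightarrow> y \<in> QI n \<Longrightarrow> x - y \<in> QI n"
  unfolding diff_conv_add_uminus by (intro QI_add QI_uminus)

definition cq :: "nat \<Rightarrow> fp \<Rightarrow> fp \<Rightarrow> bool" where "cq n x y \<longleftrightarrow> x - y \<in> QI n"

lemma cq_refl: "cq n x x" by (simp add: cq_def QI_zero)
lemma cq_sym: "cq n x y \<Longrightarrow> cq n y x"
  unfolding cq_def using QI_uminus by fastforce
lemma cq_trans: "cq n x y \<Longrightarrow> cq n y z \<Longrightarrow> cq n x z"
  unfolding cq_def using QI_add by fastforce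
lemma cq_lmult: "cq n x y \<Longrightarrow> p \<in> QL n \<Longrightarrow> cq n (p * x) (p * y)"
  unfolding cq_def using QI_lmult by (metis right_diff_distrib)
lemma cq_rmult: "cq n x y \<Longrightarrow> r \<in> QL n \<Longrightarrow> cq n (x * r) (y * r)"
  unfolding cq_def using QI_rmult by (metis left_diff_distrib)
lemma cq_sc: "cq n x y \<Longrightarrow> cq n (sc c * x) (sc c * y)"
  using cq_lmult PL_sc by blast
lemma cq_add: "cq n x y \<Longrightarrow> cq n x' y' \<Longrightarrow> cq n (x + x') (y + y')"
  unfolding cq_def using QI_add by (metis add_diff_add)
lemma cq_sum: "(\<And>i. i \<in> A \<Longrightarrow> cq n (f i) (g i)) \<Longrightarrow> cq n (sum f A) (sum g A)"
  by (induction A rule: infinite_finite_induct) (auto intro: cq_refl cq_add)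
lemma cq_eq: "x = y \<Longrightarrow> cq n x y" by (simp add: cq_refl)

lemma Q_letters_iff: "x \<in> Q_letters n \<longleftrightarrow> 1 \<le> x div 2 \<and> x div 2 < n"
proof
  assume "x \<in> Q_letters n" then show "1 \<le> x div 2 \<and> x div 2 < n" by (auto simp: Q_letters_def)
next
  assume h: "1 \<le> x div 2 \<and> x div 2 < n"
  have "x = 2 * (x div 2) \<or> x = 2 * (x div 2) + 1" by presburger
  then show "x \<in> Q_letters n" using h unfolding Q_letters_def by (intro UN_I[of "x div 2"]) auto
qed

lemma dist2: "\<not> dist (real i) (real j) \<le> 1 \<Longrightarrow> 2 \<le> dist (real i) (real j)"
proof -
  assume h: "\<not> dist (real i) (real j) \<le> 1"
  have "dist (real i) (real j) = real (if i \<le> j then j - i else i - j)"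
    by (auto simp: dist_real_def of_nat_diff)
  with h show ?thesis by (auto split: if_splits)
qed

lemma ac_UV: "ac (2 * i) (2 * j + 1) \<longleftrightarrow> dist (real i) (real j) \<le> 1"
  by (auto simp: ac_def dist_real_def)

lemma rel_ab:
  assumes a: "a \<in> Q_letters n" and b: "b \<in> Q_letters n" and ab: "a \<noteq> b"
  shows "mon [a] * mon [b] - sc (ks a b) * (mon [b] * mon [a]) \<in> QI n"
proof -
  have key: "mon [a] * mon [b] - sc (ks a b) * (mon [b] * mon [a]) \<in> QI n"
    if a: "a \<in> Q_letters n" and b: "b \<in> Q_letters n" and ev: "even a" for a b
  proof -
    obtain i where i: "a = 2 * i" "i \<in> {1..<n}" using a ev by (auto simp: Q_letters_iff elim!: evenE)
    show ?thesis
    proof (cases "even b")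
      case True
      then obtain j where j: "b = 2 * j" "j \<in> {1..<n}" using b by (auto simp: Q_letters_iff elim!: evenE)
      have "ks a b = 1" using i j by (simp add: ks_def ac_def)
      moreover have "Rp (U i * U j - U j * U i) \<in> Q_rels n"
        using i j by (simp add: Q_rels_def Rp_minus Rp_times Rp_U) blast
      ultimately show ?thesis using i j by (simp add: U_def QI_gen sc_one)
    next
      case False
      then obtain j where j: "b = 2 * j + 1" "j \<in> {1..<n}" using b
        by (auto simp: Q_letters_iff elim!: oddE)
      show ?thesis
      proof (cases "dist (real i) (real j) \<le> 1")
        case True
        have "ks a b = -1" using i j True ac_UV by (simp add: ks_def)
        moreover have "Rp (U i * V j + V j * U i) \<in> Q_rels n"
          using i j True by (simp add: Q_rels_def Rp_plus Rp_times Rp_U Rp_V) blast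
        ultimately show ?thesis using i j by (simp add: U_def V_def QI_gen sc_uminus sc_one)
      next
        case False
        have "ks a b = 1" using i j False ac_UV by (simp add: ks_def)
        moreover have "Rp (U i * V j - V j * U i) \<in> Q_rels n"
          using i j dist2[OF False] by (simp add: Q_rels_def Rp_minus Rp_times Rp_U Rp_V) blast
        ultimately show ?thesis using i j by (simp add: U_def V_def QI_gen sc_one)
      qed
    qed
  qed
  show ?thesis
  proof (cases "even a")
    case True then show ?thesis using key a b by blast
  next
    case odda: False
    show ?thesis
    proof (cases "even b")
      case True
      have k: "mon [b] * mon [a] - sc (ks b a) * (mon [a] * mon [b]) \<in> QI n" using key b a True by blast
      have "mon [a] * mon [b] - sc (ks a b) * (mon [b] * mon [a])
          = sc (- ks a b) * (mon [b] * mon [a] - sc (ks b a) * (mon [a] * mon [b]))"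
        using ks_sq[of a b] ks_sym[of a b]
        by (simp add: right_diff_distrib mult.assoc[symmetric] sc_mult[symmetric] sc_uminus sc_one)
      then show ?thesis using QI_sc[OF k] by simp
    next
      case False
      obtain i where i: "a = 2 * i + 1" "i \<in> {1..<n}" using a odda by (auto simp: Q_letters_iff elim!: oddE)
      obtain j where j: "b = 2 * j + 1" "j \<in> {1..<n}" using b False by (auto simp: Q_letters_iff elim!: oddE)
      have "ks a b = 1" using i j by (simp add: ks_def ac_def)
      moreover have "Rp (V i * V j - V j * V i) \<in> Q_rels n"
        using i j by (simp add: Q_rels_def Rp_minus Rp_times Rp_V) blast
      ultimately show ?thesis using i j by (simp add: V_def QI_gen sc_one)
    qed
  qed
qed

lemma rel_aa:
  assumes a: "a \<in> Q_letters n"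
  shows "mon [a] * mon [a] + 1 \<in> QI n"
proof (cases "even a")
  case True
  then obtain i where i: "a = 2 * i" "i \<in> {1..<n}" using a by (auto simp: Q_letters_iff elim!: evenE)
  have "Rp (U i * U i + 1) \<in> Q_rels n" using i by (simp add: Q_rels_def Rp_plus Rp_times Rp_U Rp_one) blast
  then show ?thesis using i by (simp add: U_def QI_gen)
next
  case False
  then obtain i where i: "a = 2 * i + 1" "i \<in> {1..<n}" using a by (auto simp: Q_letters_iff elim!: oddE)
  have "Rp (V i * V i + 1) \<in> Q_rels n" using i by (simp add: Q_rels_def Rp_plus Rp_times Rp_V Rp_one) blast
  then show ?thesis using i by (simp add: V_def QI_gen)
qed

lemma mon_QL: "set w \<subseteq> Q_letters n \<Longrightarrow> mon w \<in> QL n" by (rule PL_mon)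

lemma cq_pass:
  assumes x: "x \<in> Q_letters n" and ys: "set ys \<subseteq> Q_letters n" and nx: "x \<notin> set ys"
  shows "cq n (mon ys * mon [x]) (sc (pp x ys) * (mon [x] * mon ys))"
  using ys nx
proof (induction ys)
  case Nil then show ?case by (simp add: pp_def sc_one mon_nil cq_refl)
next
  case (Cons z ys)
  have z: "z \<in> Q_letters n" "z \<noteq> x" and ys': "set ys \<subseteq> Q_letters n" "x \<notin> set ys" using Cons.prems by auto
  have mz: "mon [z] \<in> QL n" using z by (simp add: mon_QL)
  have mys: "mon ys \<in> QL n" using ys' by (simp add: mon_QL)
  have e1: "mon (z # ys) * mon [x] = mon [z] * (mon ys * mon [x])" by (simp add: mon_Cons[of z ys] mult.assoc)
  have c1: "cq n (mon [z] * (mon ys * mon [x])) (mon [z] * (sc (pp x ys) * (mon [x] * mon ys)))"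
    using Cons.IH[OF ys'] mz by (rule cq_lmult)
  have e2: "mon [z] * (sc (pp x ys) * (mon [x] * mon ys)) = sc (pp x ys) * ((mon [z] * mon [x]) * mon ys)"
    by (simp add: mult.assoc[symmetric] sc_comm[of _ "mon [z]", symmetric])
  have c2: "cq n (sc (pp x ys) * ((mon [z] * mon [x]) * mon ys)) (sc (pp x ys) * ((sc (ks z x) * (mon [x] * mon [z])) * mon ys))"
    using rel_ab[OF z(1) x z(2)] mys by (intro cq_sc cq_rmult) (simp_all add: cq_def)
  have e3: "sc (pp x ys) * ((sc (ks z x) * (mon [x] * mon [z])) * mon ys) = sc (pp x (z # ys)) * (mon [x] * mon (z # ys))"
  proof -
    have "pp x (z # ys) = ks z x * pp x ys" by (simp add: pp_def)
    then have "sc (pp x (z # ys)) = sc (pp x ys) * sc (ks z x)" by (simp add: sc_mult[symmetric] mult.commute)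
    then show ?thesis by (simp add: mon_Cons[of z ys] mult.assoc)
  qed
  from c1 e1 e2 have "cq n (mon (z # ys) * mon [x]) (sc (pp x ys) * ((mon [z] * mon [x]) * mon ys))" by simp
  from cq_trans[OF this c2] show ?case by (simp only: e3)
qed

lemma cq_ins:
  assumes L: "srt L" "set L \<subseteq> Q_letters n" and x: "x \<in> Q_letters n"
  shows "cq n (mon L * mon [x]) (sc (fst (ins x L)) * mon (snd (ins x L)))"
  using L
proof (induction L)
  case Nil then show ?case by (simp add: sc_one mon_nil cq_refl)
next
  case (Cons y ys)
  have ys: "srt ys" "set ys \<subseteq> Q_letters n" and y: "y \<in> Q_letters n" and gy: "\<forall>z\<in>set ys. y < z"
    using Cons.prems by auto
  have my: "mon [y] \<in> QL n" using y by (simp add: mon_QL)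
  show ?case
  proof (cases "y < x")
    case True
    have c0: "cq n (mon [y] * (mon ys * mon [x])) (mon [y] * (sc (fst (ins x ys)) * mon (snd (ins x ys))))"
      using Cons.IH[OF ys] my by (rule cq_lmult)
    have e0: "mon [y] * (sc (fst (ins x ys)) * mon (snd (ins x ys))) = sc (fst (ins x ys)) * mon (y # snd (ins x ys))"
      by (simp add: mon_Cons[of y "snd (ins x ys)"] mult.assoc[symmetric] sc_comm[of _ "mon [y]", symmetric])
    have e1: "mon (y # ys) * mon [x] = mon [y] * (mon ys * mon [x])"
      using mon_Cons[of y ys] by (simp add: mult.assoc)
    have "cq n (mon (y # ys) * mon [x]) (sc (fst (ins x ys)) * mon (y # snd (ins x ys)))"
      using c0 unfolding e0 e1 .
    then show ?thesis using True by simp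
  next
    case False
    show ?thesis
    proof (cases "y = x")
      case True
      have nx: "x \<notin> set ys" using gy True by auto
      have mx: "mon [x] \<in> QL n" using x by (simp add: mon_QL)
      have e1: "mon (y # ys) * mon [x] = mon [x] * (mon ys * mon [x])" using True by (simp add: mon_Cons[of x ys] mult.assoc)
      have c1: "cq n (mon [x] * (mon ys * mon [x])) (mon [x] * (sc (pp x ys) * (mon [x] * mon ys)))"
        using cq_pass[OF x ys(2) nx] mx by (rule cq_lmult)
      have e2: "mon [x] * (sc (pp x ys) * (mon [x] * mon ys)) = sc (pp x ys) * ((mon [x] * mon [x] + 1) * mon ys) - sc (pp x ys) * mon ys"
      proof -
        have "mon [x] * (sc (pp x ys) * (mon [x] * mon ys)) = sc (pp x ys) * (mon [x] * mon [x] * mon ys)"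
          by (simp add: mult.assoc[symmetric] sc_comm[of _ "mon [x]", symmetric])
        then show ?thesis by (simp add: distrib_left distrib_right)
      qed
      have c3: "cq n (sc (pp x ys) * ((mon [x] * mon [x] + 1) * mon ys) - sc (pp x ys) * mon ys) (sc (- pp x ys) * mon ys)"
      proof -
        have "sc (pp x ys) * ((mon [x] * mon [x] + 1) * mon ys) \<in> QI n"
          using rel_aa[OF x] ys by (intro QI_sc QI_rmult mon_QL) auto
        then show ?thesis unfolding cq_def by (simp add: sc_uminus)
      qed
      from c1 e1 e2 have "cq n (mon (y # ys) * mon [x]) (sc (pp x ys) * ((mon [x] * mon [x] + 1) * mon ys) - sc (pp x ys) * mon ys)"
        by simp
      from cq_trans[OF this c3] have "cq n (mon (y # ys) * mon [x]) (sc (- pp x ys) * mon ys)" .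
      then show ?thesis using True by simp
    next
      case False2: False
      have xy: "x < y" using False False2 by simp
      have nx: "x \<notin> set (y # ys)" using gy xy by auto
      have "cq n (mon (y # ys) * mon [x]) (sc (pp x (y # ys)) * (mon [x] * mon (y # ys)))"
        using cq_pass[OF x _ nx] Cons.prems by auto
      then show ?thesis using xy False2 by (simp add: mon_Cons[of x "y # ys"])
    qed
  qed
qed

lemma cq_nf:
  assumes "set w \<subseteq> Q_letters n"
  shows "cq n (mon w) (sc (fst (nf w)) * mon (snd (nf w)))"
  using assms
proof (induction w rule: rev_induct)
  case Nil then show ?case by (simp add: nf_def sc_one cq_refl)
next
  case (snoc x w)
  have w: "set w \<subseteq> Q_letters n" and x: "x \<in> Q_letters n" using snoc.prems by auto
  have sL: "set (snd (nf w)) \<subseteq> Q_letters n" using w oddl_sub[of w] by (simp add: nf_set)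
  have mx: "mon [x] \<in> QL n" using x by (simp add: mon_QL)
  have c1: "cq n (mon w * mon [x]) (sc (fst (nf w)) * mon (snd (nf w)) * mon [x])"
    using snoc.IH[OF w] mx by (rule cq_rmult)
  have c2: "cq n (sc (fst (nf w)) * (mon (snd (nf w)) * mon [x]))
      (sc (fst (nf w)) * (sc (fst (ins x (snd (nf w)))) * mon (snd (ins x (snd (nf w))))))"
    using cq_ins[OF nf_srt sL x] by (rule cq_sc)
  have nfe: "nf (w @ [x]) = (fst (nf w) * fst (ins x (snd (nf w))), snd (ins x (snd (nf w))))"
    by (simp add: nf_def run_snoc step_def)
  have e3: "sc (fst (nf w)) * (sc (fst (ins x (snd (nf w)))) * mon (snd (ins x (snd (nf w)))))
      = sc (fst (nf (w @ [x]))) * mon (snd (nf (w @ [x])))"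
    by (simp only: nfe fst_conv snd_conv sc_mult mult.assoc)
  from c1 have "cq n (mon (w @ [x])) (sc (fst (nf w)) * (mon (snd (nf w)) * mon [x]))"
    by (simp only: mon_append mult.assoc)
  from cq_trans[OF this c2] show ?case by (simp only: e3)
qed

definition mu :: "fp \<Rightarrow> nat list \<Rightarrow> complex" where
  "mu x M = Lf (\<lambda>a. fst (nf a) * (if snd (nf a) = M then 1 else 0)) x"

lemma munull_mu: "munull x \<Longrightarrow> mu x M = 0"
  unfolding munull_def mu_def by (drule spec[where x="\<lambda>N. if N = M then 1 else 0"]) simp

lemma Lf_group:
  "Lf (\<lambda>a. fst (nf a) * g (snd (nf a))) x = (\<Sum>M\<in>(\<lambda>a. snd (nf a)) ` supp (Rp x). mu x M * g M)"
proof -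
  let ?A = "supp (Rp x)"
  have fA: "finite ?A" by (rule fsR)
  have "Lf (\<lambda>a. fst (nf a) * g (snd (nf a))) x = (\<Sum>a\<in>?A. Rp x a * (fst (nf a) * g (snd (nf a))))"
    by (simp add: Lf_expl)
  also have "\<dots> = (\<Sum>M\<in>(\<lambda>a. snd (nf a)) ` ?A. \<Sum>a\<in>{a\<in>?A. snd (nf a) = M}. Rp x a * (fst (nf a) * g (snd (nf a))))"
    by (rule sum.group[symmetric]) (use fA in auto)
  also have "\<dots> = (\<Sum>M\<in>(\<lambda>a. snd (nf a)) ` ?A. mu x M * g M)"
  proof (rule sum.cong[OF refl])
    fix M
    have "mu x M = (\<Sum>a\<in>?A. Rp x a * (fst (nf a) * (if snd (nf a) = M then 1 else 0)))"
      by (simp add: mu_def Lf_expl)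
    also have "\<dots> = (\<Sum>a\<in>{a\<in>?A. snd (nf a) = M}. Rp x a * fst (nf a))"
      by (simp add: sum.inter_filter[OF fA]) (rule sum.cong, auto)
    finally show "(\<Sum>a\<in>{a\<in>?A. snd (nf a) = M}. Rp x a * (fst (nf a) * g (snd (nf a)))) = mu x M * g M"
      by (simp add: sum_distrib_right mult.assoc)
  qed
  finally show ?thesis .
qed

lemma mu_munull: "(\<And>M. mu x M = 0) \<Longrightarrow> munull x"
  unfolding munull_def by (simp add: Lf_group)

lemma sc_sum: "sc (\<Sum>a\<in>B. f a) = (\<Sum>a\<in>B. sc (f a))"
  by (induction B rule: infinite_finite_induct) (simp_all add: sc_zero sc_add)

lemma completeness:
  assumes x: "x \<in> QL n" and m: "munull x"
  shows "x \<in> QI n"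
proof -
  let ?A = "supp (Rp x)"
  have fA: "finite ?A" by (rule fsR)
  have sw: "set a \<subseteq> Q_letters n" if "a \<in> ?A" for a using x that by (auto simp: PL_def)
  have "cq n (\<Sum>a\<in>?A. sc (Rp x a) * mon a) (\<Sum>a\<in>?A. sc (Rp x a) * (sc (fst (nf a)) * mon (snd (nf a))))"
    by (intro cq_sum cq_sc cq_nf sw)
  then have c: "cq n x (\<Sum>a\<in>?A. sc (Rp x a * fst (nf a)) * mon (snd (nf a)))"
    using fp_expand[of x] by (simp add: sc_mult mult.assoc)
  have "(\<Sum>a\<in>?A. sc (Rp x a * fst (nf a)) * mon (snd (nf a)))
     = (\<Sum>M\<in>(\<lambda>a. snd (nf a)) ` ?A. \<Sum>a\<in>{a\<in>?A. snd (nf a) = M}. sc (Rp x a * fst (nf a)) * mon (snd (nf a)))"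
    by (rule sum.group[symmetric]) (use fA in auto)
  also have "\<dots> = (\<Sum>M\<in>(\<lambda>a. snd (nf a)) ` ?A. sc (mu x M) * mon M)"
  proof (rule sum.cong[OF refl])
    fix M
    have "mu x M = (\<Sum>a\<in>{a\<in>?A. snd (nf a) = M}. Rp x a * fst (nf a))"
      by (simp add: mu_def Lf_expl sum.inter_filter[OF fA]) (rule sum.cong, auto)
    then show "(\<Sum>a\<in>{a\<in>?A. snd (nf a) = M}. sc (Rp x a * fst (nf a)) * mon (snd (nf a))) = sc (mu x M) * mon M"
      by (simp add: sum_distrib_right sc_sum)
  qed
  also have "\<dots> = 0" using munull_mu[OF m] by (simp add: sc_zero)
  finally show ?thesis using c by (simp add: cq_def)
qed

lemma Ap_Rp_fin: "finite (supp f) \<Longrightarrow> Rp (Ap f) = f" by (simp add: Ap_inverse)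

lemma Qrels_Zs: "r \<in> Q_rels n \<Longrightarrow> finite (supp r) \<and> Ap r \<in> Zs"
proof -
  assume r: "r \<in> Q_rels n"
  have Ur: "Ap (Rp x) = x" for x by (rule Rp_inverse)
  have sq: "U i * U i + 1 \<in> Zs" "V i * V i + 1 \<in> Zs" for i
    using Zs_sq[of "2*i"] Zs_sq[of "2*i+1"] by (simp_all add: U_def V_def mon_append[symmetric])
  have cm: "mon [a] * mon [b] - sc (ks a b) * (mon [b] * mon [a]) \<in> Zs" for a b
  proof (cases "a = b")
    case True then show ?thesis using Zs_zero by (simp add: ks_refl sc_one)
  next
    case False then show ?thesis using Zs_comm[OF False] by (simp add: mon_append[symmetric])
  qed
  have UV1: "U i * V j + V j * U i \<in> Zs" if "dist (real i) (real j) \<le> 1" for i j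
    using cm[of "2*i" "2*j+1"] that ac_UV[of i j] by (simp add: ks_def U_def V_def sc_uminus sc_one)
  have UV2: "U i * V j - V j * U i \<in> Zs" if "\<not> dist (real i) (real j) \<le> 1" for i j
    using cm[of "2*i" "2*j+1"] that ac_UV[of i j] by (simp add: ks_def U_def V_def sc_one)
  have UU: "U i * U j - U j * U i \<in> Zs" for i j
    using cm[of "2*i" "2*j"] by (simp add: ks_def ac_def U_def sc_one)
  have VV: "V i * V j - V j * V i \<in> Zs" for i j
    using cm[of "2*i+1" "2*j+1"] by (simp add: ks_def ac_def V_def sc_one)
  have L: "r = Rp x \<Longrightarrow> x \<in> Zs \<Longrightarrow> finite (supp r) \<and> Ap r \<in> Zs" for x
    using fsR Ur by simp
  from r consider (a) i where "r = Uq i \<star> Uq i \<oplus> ncone"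
    | (b) i where "r = Vq i \<star> Vq i \<oplus> ncone"
    | (c) i j where "r = Uq i \<star> Vq j \<oplus> Vq j \<star> Uq i" "dist (real i) (real j) \<le> 1"
    | (d) i j where "r = Uq i \<star> Vq j \<ominus> Vq j \<star> Uq i" "dist (real i) (real j) \<ge> 2"
    | (e) i j where "r = Uq i \<star> Uq j \<ominus> Uq j \<star> Uq i"
    | (f) i j where "r = Vq i \<star> Vq j \<ominus> Vq j \<star> Vq i"
    unfolding Q_rels_def by blast
  then show ?thesis
  proof cases
    case a then show ?thesis using L[OF _ sq(1)] by (simp add: Rp_plus Rp_times Rp_U Rp_one)
  next
    case b then show ?thesis using L[OF _ sq(2)] by (simp add: Rp_plus Rp_times Rp_V Rp_one)
  next
    case c then show ?thesis using L[OF _ UV1[OF c(2)]] by (simp add: Rp_plus Rp_times Rp_U Rp_V)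
  next
    case d
    then have "\<not> dist (real i) (real j) \<le> 1" by simp
    then show ?thesis using d L[OF _ UV2] by (simp add: Rp_minus Rp_times Rp_U Rp_V)
  next
    case e then show ?thesis using L[OF _ UU] by (simp add: Rp_minus Rp_times Rp_U)
  next
    case f then show ?thesis using L[OF _ VV] by (simp add: Rp_minus Rp_times Rp_V)
  qed
qed

lemma Qideal_Zs: "f \<in> Q_ideal n \<Longrightarrow> finite (supp f) \<and> Ap f \<in> Zs"
  unfolding Q_ideal_def
proof (induction f rule: ideal_gen.induct)
  case (gen r) then show ?case by (rule Qrels_Zs)
next
  case zero
  have "Ap nczero = 0" by (simp add: zero_fp_def)
  then show ?case by (simp add: fs_zero Zs_zero)
next
  case (add a b)
  then have "Ap (a \<oplus> b) = Ap a + Ap b" by (simp add: plus_fp_def Ap_inverse)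
  then show ?case using add by (simp add: fs_add Zs_add)
next
  case (mul a p r)
  have fp: "finite (supp p)" "finite (supp r)" using mul by (auto simp: ncpolys_on_def supp_def)
  then have "Ap (p \<star> a \<star> r) = Ap p * Ap a * Ap r" using mul by (simp add: times_fp_def Ap_inverse finite_supp_conv)
  then show ?case using mul fp by (simp add: finite_supp_conv Zs_mult)
qed

lemma QI_Zs: "x \<in> QI n \<Longrightarrow> x \<in> Zs"
  using Qideal_Zs[of "Rp x" n] by (simp add: QI_def Rp_inverse)



lemma qq_eq: "qq = Complex (1/2) (sqrt 3 / 2)"
proof -
  have "Re (2 * of_real pi * \<i> / 6) = 0" "Im (2 * of_real pi * \<i> / 6) = pi / 3" by simp_all
  then have "qq = cis (pi / 3)" unfolding qq_def by (simp add: exp_eq_polar)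
  then show ?thesis by (simp add: cis.code cos_60 sin_60)
qed

lemma qq_sq: "qq * qq = qq - 1"
  unfolding qq_eq by (simp add: complex_eq_iff field_simps)

lemma qq_nz: "qq \<noteq> 0" unfolding qq_eq by (simp add: complex_eq_iff)

lemma qq_cnj: "cnj qq = 1 - qq"
  unfolding qq_eq by (simp add: complex_eq_iff)

lemma qq_cnj_mult: "qq * cnj qq = 1"
  unfolding qq_cnj using qq_sq by (simp add: algebra_simps)

lemma qq_one: "1 + qq \<noteq> 0" unfolding qq_eq by (simp add: complex_eq_iff)

definition dagf :: "ncpoly \<Rightarrow> ncpoly" where
  "dagf f = (\<lambda>w. cnj (f (rev w)) * (-1) ^ length w)"

lemma supp_dagf: "supp (dagf f) = rev ` supp f"
proof -
  have "supp (dagf f) = {w. f (rev w) \<noteq> 0}" by (auto simp: supp_def dagf_def)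
  also have "\<dots> = rev ` supp f" by (auto simp: supp_def image_iff) (metis rev_rev_ident)
  finally show ?thesis .
qed

definition dag :: "fp \<Rightarrow> fp" where "dag x = Ap (dagf (Rp x))"

lemma Rp_dag: "Rp (dag x) = dagf (Rp x)"
  unfolding dag_def by (rule Ap_inverse) (simp add: supp_dagf fsR)

lemma dag_add: "dag (x + y) = dag x + dag y"
  by (simp add: Rp_inject[symmetric] Rp_dag Rp_plus dagf_def ncadd_def fun_eq_iff distrib_right)

lemma dag_zero: "dag 0 = 0"
  by (simp add: Rp_inject[symmetric] Rp_dag Rp_zero dagf_def nczero_def fun_eq_iff)

lemma dag_sc: "dag (sc c * x) = sc (cnj c) * dag x"
  by (simp add: Rp_inject[symmetric] Rp_dag Rp_sc_mul dagf_def ncsmul_def fun_eq_iff)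

lemma dag_mon: "dag (mon w) = sc ((-1) ^ length w) * mon (rev w)"
  by (simp add: Rp_inject[symmetric] Rp_dag Rp_sc_mul Rp_mon dagf_def ncsmul_def fun_eq_iff)
     (metis length_rev rev_rev_ident)

lemma dag_uminus: "dag (- x) = - dag x"
proof -
  have "dag (- x) + dag x = 0" using dag_add[of "- x" x] by (simp add: dag_zero)
  then show ?thesis by (rule eq_neg_iff_add_eq_0[THEN iffD2])
qed

lemma dag_diff: "dag (x - y) = dag x - dag y"
  unfolding diff_conv_add_uminus by (simp only: dag_add dag_uminus)

lemma dag_one: "dag 1 = 1"
  using dag_mon[of "[]"] by (simp add: mon_nil sc_one)

lemma dag_mult: "dag (x * y) = dag y * dag x"
proof -
  have x: "x \<in> PL UNIV" and y: "y \<in> PL UNIV" by (auto simp: PL_def)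
  show ?thesis using x
  proof (induction x rule: PL_induct)
    case zero then show ?case by (simp add: dag_zero)
  next
    case (add a b) then show ?case by (simp add: distrib_right distrib_left dag_add)
  next
    case (mon c w)
    show ?case using y
    proof (induction y rule: PL_induct)
      case zero then show ?case by (simp add: dag_zero)
    next
      case (add a b) then show ?case by (simp add: distrib_left distrib_right dag_add)
    next
      case (mon d v)
      have "dag (sc c * mon w * (sc d * mon v)) = dag (sc (c * d) * mon (w @ v))"
        by (simp only: mon_sc_mult)
      also have "\<dots> = sc (cnj (c * d)) * (sc ((-1) ^ (length w + length v)) * mon (rev v @ rev w))"
        by (simp only: dag_sc dag_mon length_append rev_append)
      also have "\<dots> = sc (cnj (c * d) * (-1) ^ (length w + length v)) * mon (rev v @ rev w)"
        by (simp only: sc_mult mult.assoc)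
      also have "\<dots> = sc (cnj d) * (sc ((-1) ^ length v) * mon (rev v)) * (sc (cnj c) * (sc ((-1) ^ length w) * mon (rev w)))"
      proof -
        have "sc (cnj d) * (sc ((-1) ^ length v) * mon (rev v)) * (sc (cnj c) * (sc ((-1) ^ length w) * mon (rev w)))
          = sc (cnj d * (-1) ^ length v) * mon (rev v) * (sc (cnj c * (-1) ^ length w) * mon (rev w))"
          by (simp only: sc_mult mult.assoc)
        also have "\<dots> = sc (cnj d * (-1) ^ length v * (cnj c * (-1) ^ length w)) * mon (rev v @ rev w)"
          by (rule mon_sc_mult)
        finally show ?thesis by (simp add: power_add mult_ac)
      qed
      finally show ?case by (simp only: dag_sc dag_mon mult.assoc)
    qed
  qed
qed

lemma dag_PL: "x \<in> PL L \<Longrightarrow> dag x \<in> PL L"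
  by (auto simp: PL_def Rp_dag supp_dagf)

lemma dag_mon1: "dag (mon [a]) = - mon [a]"
  by (simp add: dag_mon sc_uminus sc_one)

lemma dag_QI: "x \<in> QI n \<Longrightarrow> dag x \<in> QI n"
proof -
  have "f \<in> Q_ideal n \<Longrightarrow> finite (supp f) \<and> dag (Ap f) \<in> QI n" for f
    unfolding Q_ideal_def
  proof (induction f rule: ideal_gen.induct)
    case (gen r)
    have fin: "finite (supp r)" using Qrels_Zs[OF gen] by simp
    have g: "\<And>x. Rp x \<in> Q_rels n \<Longrightarrow> x \<in> QI n" by (rule QI_gen)
    from gen consider (a) i where "r = Uq i \<star> Uq i \<oplus> ncone" "i \<in> {1..<n}"
      | (b) i where "r = Vq i \<star> Vq i \<oplus> ncone" "i \<in> {1..<n}"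
      | (c) i j where "r = Uq i \<star> Vq j \<oplus> Vq j \<star> Uq i" "i \<in> {1..<n}" "j \<in> {1..<n}" "dist (real i) (real j) \<le> 1"
      | (d) i j where "r = Uq i \<star> Vq j \<ominus> Vq j \<star> Uq i" "i \<in> {1..<n}" "j \<in> {1..<n}" "dist (real i) (real j) \<ge> 2"
      | (e) i j where "r = Uq i \<star> Uq j \<ominus> Uq j \<star> Uq i" "i \<in> {1..<n}" "j \<in> {1..<n}"
      | (f) i j where "r = Vq i \<star> Vq j \<ominus> Vq j \<star> Vq i" "i \<in> {1..<n}" "j \<in> {1..<n}"
      unfolding Q_rels_def by blast
    then have "dag (Ap r) \<in> QI n"
    proof cases
      case a
      have "r = Rp (U i * U i + 1)" using a by (simp add: Rp_plus Rp_times Rp_U Rp_one)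
      then have "Ap r = U i * U i + 1" by (simp add: Rp_inverse)
      moreover have "dag (U i * U i + 1) = U i * U i + 1"
        by (simp add: dag_add dag_mult dag_one U_def dag_mon1)
      moreover have "Rp (U i * U i + 1) \<in> Q_rels n" using a gen by (simp add: Rp_plus Rp_times Rp_U Rp_one)
      ultimately show ?thesis using g by simp
    next
      case b
      have "r = Rp (V i * V i + 1)" using b by (simp add: Rp_plus Rp_times Rp_V Rp_one)
      then have "Ap r = V i * V i + 1" by (simp add: Rp_inverse)
      moreover have "dag (V i * V i + 1) = V i * V i + 1"
        by (simp add: dag_add dag_mult dag_one V_def dag_mon1)
      moreover have "Rp (V i * V i + 1) \<in> Q_rels n" using b gen by (simp add: Rp_plus Rp_times Rp_V Rp_one)
      ultimately show ?thesis using g by simp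
    next
      case c
      have "r = Rp (U i * V j + V j * U i)" using c by (simp add: Rp_plus Rp_times Rp_U Rp_V)
      then have "Ap r = U i * V j + V j * U i" by (simp add: Rp_inverse)
      moreover have "dag (U i * V j + V j * U i) = U i * V j + V j * U i"
        by (simp add: dag_add dag_mult U_def V_def dag_mon1 add.commute)
      moreover have "Rp (U i * V j + V j * U i) \<in> Q_rels n" using c gen by (simp add: Rp_plus Rp_times Rp_U Rp_V)
      ultimately show ?thesis using g by simp
    next
      case d
      have "r = Rp (U i * V j - V j * U i)" using d by (simp add: Rp_minus Rp_times Rp_U Rp_V)
      then have "Ap r = U i * V j - V j * U i" by (simp add: Rp_inverse)
      moreover have "dag (U i * V j - V j * U i) = - (U i * V j - V j * U i)"
        by (simp add: dag_diff dag_mult U_def V_def dag_mon1)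
      moreover have "Rp (U i * V j - V j * U i) \<in> Q_rels n" using d gen by (simp add: Rp_minus Rp_times Rp_U Rp_V)
      ultimately show ?thesis using g QI_uminus by metis
    next
      case e
      have "r = Rp (U i * U j - U j * U i)" using e by (simp add: Rp_minus Rp_times Rp_U)
      then have "Ap r = U i * U j - U j * U i" by (simp add: Rp_inverse)
      moreover have "dag (U i * U j - U j * U i) = - (U i * U j - U j * U i)"
        by (simp add: dag_diff dag_mult U_def dag_mon1)
      moreover have "Rp (U i * U j - U j * U i) \<in> Q_rels n" using e gen by (simp add: Rp_minus Rp_times Rp_U)
      ultimately show ?thesis using g QI_uminus by metis
    next
      case f
      have "r = Rp (V i * V j - V j * V i)" using f by (simp add: Rp_minus Rp_times Rp_V)
      then have "Ap r = V i * V j - V j * V i" by (simp add: Rp_inverse)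
      moreover have "dag (V i * V j - V j * V i) = - (V i * V j - V j * V i)"
        by (simp add: dag_diff dag_mult V_def dag_mon1)
      moreover have "Rp (V i * V j - V j * V i) \<in> Q_rels n" using f gen by (simp add: Rp_minus Rp_times Rp_V)
      ultimately show ?thesis using g QI_uminus by metis
    qed
    with fin show ?case by simp
  next
    case zero
    have "Ap nczero = 0" by (simp add: zero_fp_def)
    then show ?case by (simp add: fs_zero dag_zero QI_zero)
  next
    case (add a b)
    then have "Ap (a \<oplus> b) = Ap a + Ap b" by (simp add: plus_fp_def Ap_inverse)
    then show ?case using add by (simp add: fs_add dag_add QI_add)
  next
    case (mul a p r)
    have fp: "finite (supp p)" "finite (supp r)" using mul by (auto simp: ncpolys_on_def supp_def)
    then have "Ap (p \<star> a \<star> r) = Ap p * Ap a * Ap r" using mul by (simp add: times_fp_def Ap_inverse finite_supp_conv)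
    moreover have "Ap p \<in> QL n" "Ap r \<in> QL n"
      using mul ncpolys_on_Rp by (metis Rp_inverse)+
    ultimately show ?case using mul fp
      by (simp add: finite_supp_conv dag_mult mult.assoc[symmetric] QI_mult dag_PL)
  qed
  then show "x \<in> QI n \<Longrightarrow> dag x \<in> QI n" by (metis QI_def Rp_inverse mem_Collect_eq)
qed



section \<open>Faithfulness of tau on the *-closed part\<close>

definition tst :: "complex \<times> nat list \<Rightarrow> complex" where "tst st = (if snd st = [] then fst st else 0)"

lemma run_rev: "srt (snd st) \<Longrightarrow> run st (b @ rev b) = scl ((-1) ^ length b) st"
proof (induction b rule: rev_induct)
  case Nil then show ?case by (simp add: scl_def)
next
  case (snoc x b)
  have "run st ((b @ [x]) @ rev (b @ [x])) = run st (b @ [x, x] @ rev b)" by simp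
  also have "\<dots> = (- fst (run st (b @ rev b)), snd (run st (b @ rev b)))"
    by (rule run_rel_sq[OF snoc.prems])
  also have "\<dots> = scl ((-1) ^ length (b @ [x])) st" using snoc by (simp add: scl_def)
  finally show ?case .
qed

lemma fst_nf_cases: "fst (nf w) = 1 \<or> fst (nf w) = -1"
  using fst_run_cases[of "[]" w] by (simp add: nf_def)

lemma cnj_fst_nf: "cnj (fst (nf w)) = fst (nf w)"
  using fst_nf_cases[of w] by auto

lemma K2:
  assumes M: "srt M"
  shows "(-1) ^ length b * tst (run (1, M) (rev b)) = (if M = snd (nf b) then fst (nf b) else 0)"
proof (cases "M = snd (nf b)")
  case True
  have "(1, M) = scl (fst (nf b)) (nf b)" using True fst_nf_sq[of b] by (simp add: scl_def)
  then have "run (1, M) (rev b) = scl (fst (nf b)) (run (nf b) (rev b))" by (simp add: run_scl)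
  also have "run (nf b) (rev b) = run (1, []) (b @ rev b)" by (simp add: nf_def run_append)
  also have "\<dots> = scl ((-1) ^ length b) (1, [])" by (rule run_rev) simp
  finally have "run (1, M) (rev b) = (fst (nf b) * (-1) ^ length b, [])" by (simp add: scl_def)
  then show ?thesis using True by (simp add: tst_def mult.commute[of _ "fst (nf b)"] mult.assoc[symmetric]
      power_add[symmetric] mult_2[symmetric] power_mult)
next
  case False
  have "set M \<noteq> set (snd (nf b))" using False M nf_srt[of b] strict_sorted_equal by blast
  then have "set (snd (run (1, M) (rev b))) \<noteq> {}"
    using M by (auto simp: run_set nf_set sdiff_def oddl_def)
  then show ?thesis using False by (auto simp: tst_def)
qed

lemma tw_tst: "tw w = tst (nf w)" by (simp add: tw_def tst_def)

lemma tw_append_rev: "tw (a @ rev b) = fst (nf a) * tst (run (1, snd (nf a)) (rev b))"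
  by (simp add: tw_tst nf_append tst_def)

lemma tau_dag: "tau (x * dag x) = (\<Sum>M\<in>(\<lambda>a. snd (nf a)) ` supp (Rp x). cnj (mu x M) * mu x M)"
proof -
  let ?A = "supp (Rp x)"
  have fA: "finite ?A" by (rule fsR)
  have inj: "inj_on rev ?A" by (simp add: inj_on_def)
  have "tau (x * dag x) = (\<Sum>a\<in>?A. \<Sum>b\<in>supp (Rp (dag x)). Rp x a * Rp (dag x) b * tw (a @ b))"
    by (simp add: tau_def Lf_mult)
  also have "\<dots> = (\<Sum>a\<in>?A. \<Sum>b\<in>?A. Rp x a * Rp (dag x) (rev b) * tw (a @ rev b))"
    by (simp add: Rp_dag supp_dagf sum.reindex[OF inj])
  also have "\<dots> = (\<Sum>a\<in>?A. \<Sum>b\<in>?A. Rp x a * cnj (Rp x b) * fst (nf a) * ((-1) ^ length b * tst (run (1, snd (nf a)) (rev b))))"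
    by (simp add: Rp_dag dagf_def tw_append_rev mult_ac)
  also have "\<dots> = (\<Sum>a\<in>?A. \<Sum>b\<in>?A. Rp x a * cnj (Rp x b) * fst (nf a) * (if snd (nf a) = snd (nf b) then fst (nf b) else 0))"
    by (simp add: K2 nf_srt)
  also have "\<dots> = (\<Sum>b\<in>?A. cnj (Rp x b) * fst (nf b) * (\<Sum>a\<in>?A. Rp x a * (fst (nf a) * (if snd (nf a) = snd (nf b) then 1 else 0))))"
    by (subst sum.swap) (simp add: sum_distrib_left mult_ac if_distrib cong: if_cong)
  also have "\<dots> = (\<Sum>b\<in>?A. cnj (Rp x b) * fst (nf b) * mu x (snd (nf b)))"
    by (simp add: mu_def Lf_expl)
  also have "\<dots> = cnj (\<Sum>b\<in>?A. Rp x b * (fst (nf b) * cnj (mu x (snd (nf b)))))"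
    by (simp add: cnj_fst_nf mult_ac)
  also have "(\<Sum>b\<in>?A. Rp x b * (fst (nf b) * cnj (mu x (snd (nf b))))) = Lf (\<lambda>b. fst (nf b) * cnj (mu x (snd (nf b)))) x"
    by (simp add: Lf_expl)
  also have "\<dots> = (\<Sum>M\<in>(\<lambda>a. snd (nf a)) ` ?A. mu x M * cnj (mu x M))"
    by (rule Lf_group)
  finally show ?thesis by (simp add: mult.commute)
qed

lemma mu_outside: "M \<notin> (\<lambda>a. snd (nf a)) ` supp (Rp x) \<Longrightarrow> mu x M = 0"
  unfolding mu_def Lf_expl by (rule sum.neutral) auto

lemma faithful: "tau (x * dag x) = 0 \<Longrightarrow> munull x"
proof -
  assume h: "tau (x * dag x) = 0"
  let ?I = "(\<lambda>a. snd (nf a)) ` supp (Rp x)"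
  have fI: "finite ?I" using fsR by simp
  have e: "cnj (mu x M) * mu x M = complex_of_real ((cmod (mu x M))^2)" for M
    by (subst complex_norm_square) (rule mult.commute)
  have "(\<Sum>M\<in>?I. complex_of_real ((cmod (mu x M))^2)) = 0" using h tau_dag[of x] e by simp
  then have "(\<Sum>M\<in>?I. (cmod (mu x M))^2) = 0"
    by (metis of_real_eq_0_iff of_real_sum)
  then have "\<forall>M\<in>?I. (cmod (mu x M))^2 = 0"
    by (rule sum_nonneg_eq_0_iff[OF fI, THEN iffD1, rotated]) simp
  then have "mu x M = 0" for M using mu_outside[of M x] by (cases "M \<in> ?I") auto
  then show "munull x" by (rule mu_munull)
qed

lemma Rp_scmon: "Rp (sc c * mon w) = (\<lambda>v. if v = w then c else 0)"
  by (simp add: Rp_sc_mul Rp_mon ncsmul_def fun_eq_iff)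

lemma dag_S:
  assumes i: "i \<in> {1..<n}"
  shows "dag (S i) - (sc (- qq) + sc (- qq * qq) * S i) \<in> QI n"
proof -
  let ?a = "2 * i" and ?b = "2 * i + 1"
  let ?k = "- 1 / (2 * qq)"
  have "Rp (U i * V i + V i * U i) \<in> Q_rels n"
  proof -
    have "Uq i \<star> Vq i \<oplus> Vq i \<star> Uq i \<in> {Uq i \<star> Vq j \<oplus> Vq j \<star> Uq i | i j. i \<in> {1..<n} \<and> j \<in> {1..<n} \<and> dist (real i) (real j) \<le> 1}"
      by (rule CollectI, rule exI[of _ i], rule exI[of _ i]) (use i in simp)
    then have "Uq i \<star> Vq i \<oplus> Vq i \<star> Uq i \<in> Q_rels n" unfolding Q_rels_def by blast
    then show ?thesis by (simp add: Rp_plus Rp_times Rp_U Rp_V)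
  qed
  then have uv: "U i * V i + V i * U i \<in> QI n" by (rule QI_gen)
  have dS: "dag (sc ?k * (1 + U i + V i + U i * V i)) = sc (cnj ?k) * (1 - U i - V i + V i * U i)"
    unfolding dag_sc by (simp add: dag_add dag_mult dag_one U_def V_def dag_mon1)
  have ck: "cnj ?k = - qq / 2"
  proof -
    have "cnj ?k = - 1 / (2 * cnj qq)" by simp
    also have "\<dots> = - qq / 2" using qq_cnj_mult qq_nz
      by (simp add: field_simps)
    finally show ?thesis .
  qed
  have kq: "- qq * qq * ?k = qq / 2" using qq_nz by (simp add: field_simps)
  have e1: "U i * V i = mon [?a, ?b]" "V i * U i = mon [?b, ?a]" "U i = mon [?a]" "V i = mon [?b]" "(1::fp) = mon []"
    by (simp_all add: U_def V_def mon_append[symmetric] mon_nil)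
  have eq: "dag (S i) - (sc (- qq) + sc (- qq * qq) * S i) = sc (- qq / 2) * (U i * V i + V i * U i)"
  proof -
    have "dag (S i) - (sc (- qq) + sc (- qq * qq) * S i)
      = sc (cnj ?k) * (1 - U i - V i + V i * U i) - (sc (- qq) + sc (- qq * qq) * (sc ?k * (1 + U i + V i + U i * V i)))"
      by (simp only: S_def dS)
    also have "\<dots> = sc (- qq / 2) * (1 - U i - V i + V i * U i) - (sc (- qq) + sc (- qq * qq) * (sc ?k * (1 + U i + V i + U i * V i)))"
      by (simp only: ck)
    also have "\<dots> = sc (- qq / 2) * (U i * V i + V i * U i)"
    proof -
      have m: "(1::fp) = mon []" by (simp add: mon_nil)
      have "Rp (sc (- qq / 2) * (1 - U i - V i + V i * U i) - (sc (- qq) + sc (- qq * qq) * (sc ?k * (1 + U i + V i + U i * V i)))) v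
        = Rp (sc (- qq / 2) * (U i * V i + V i * U i)) v" for v
        unfolding e1(1,2) unfolding e1(3,4) m
        using kq by (simp add: Rp_plus Rp_minus Rp_sc_mul Rp_sc Rp_mon ncadd_def ncsub_def ncsmul_def ncone_def)
      then show ?thesis by (simp add: Rp_inject[symmetric] fun_eq_iff)
    qed
    finally show ?thesis .
  qed
  show ?thesis unfolding eq by (rule QI_sc[OF uv])
qed

lemma cq_mult: "cq n x y \<Longrightarrow> cq n x' y' \<Longrightarrow> x' \<in> QL n \<Longrightarrow> y \<in> QL n \<Longrightarrow> cq n (x * x') (y * y')"
  by (metis cq_lmult cq_rmult cq_trans)

lemma G_in: "i \<in> {1..<n} \<Longrightarrow> G i \<in> PL {1..<n}" unfolding G_def by (rule PL_mon) simp

lemma dag_img: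
  assumes a: "a \<in> PL {1..<n}"
  shows "\<exists>b\<in>PL {1..<n}. cq n (dag (Sub S a)) (Sub S b)"
  using a
proof (induction a rule: PL_induct)
  case zero then show ?case by (intro bexI[of _ 0]) (simp_all add: Sub_zero dag_zero cq_refl PL_zero)
next
  case (add a b)
  then obtain a' b' where "a' \<in> PL {1..<n}" "cq n (dag (Sub S a)) (Sub S a')"
    "b' \<in> PL {1..<n}" "cq n (dag (Sub S b)) (Sub S b')" by blast
  then show ?case by (intro bexI[of _ "a' + b'"]) (simp_all add: Sub_add dag_add cq_add PL_add)
next
  case (mon c w)
  have "\<exists>b\<in>PL {1..<n}. cq n (dag (prod_list (map S w))) (Sub S b)" using mon
  proof (induction w)
    case Nil then show ?case by (intro bexI[of _ 1]) (simp_all add: dag_one Sub_one cq_refl PL_one)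
  next
    case (Cons x w)
    then obtain b where b: "b \<in> PL {1..<n}" "cq n (dag (prod_list (map S w))) (Sub S b)" by auto
    have x: "x \<in> {1..<n}" using Cons.prems by auto
    have wQ: "prod_list (map S w) \<in> QL n" using Cons.prems
      by (induction w) (auto intro!: PL_mult PL_one S_PL)
    have "cq n (dag (S x)) (sc (- qq) + sc (- qq * qq) * S x)" using dag_S[OF x] by (simp add: cq_def)
    moreover have "sc (- qq) + sc (- qq * qq) * S x = Sub S (sc (- qq) + sc (- qq * qq) * G x)"
      by (simp add: Sub_add Sub_sc Sub_one G_def Sub_mon)
        (metis Sub_one Sub_sc mult_1_right)
    ultimately have cx: "cq n (dag (S x)) (Sub S (sc (- qq) + sc (- qq * qq) * G x))" by simp
    have "cq n (dag (prod_list (map S w)) * dag (S x)) (Sub S b * Sub S (sc (- qq) + sc (- qq * qq) * G x))"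
      by (rule cq_mult[OF b(2) cx dag_PL[OF S_PL[OF x]] SubS_PL[OF b(1)]])
    moreover have "dag (prod_list (map S (x # w))) = dag (prod_list (map S w)) * dag (S x)"
      by (simp add: dag_mult)
    moreover have "b * (sc (- qq) + sc (- qq * qq) * G x) \<in> PL {1..<n}"
      by (intro PL_mult PL_add PL_sc b(1) G_in x)
    ultimately show ?case by (intro bexI[of _ "b * (sc (- qq) + sc (- qq * qq) * G x)"]) (simp_all add: Sub_mult)
  qed
  then obtain b where b: "b \<in> PL {1..<n}" "cq n (dag (prod_list (map S w))) (Sub S b)" by blast
  show ?case
    by (intro bexI[of _ "sc (cnj c) * b"]) (use b in \<open>simp_all add: Sub_sc Sub_mon dag_sc cq_sc PL_mult PL_sc\<close>)
qed



definition shf :: "nat \<Rightarrow> nat \<Rightarrow> nat" where "shf k j = j + 2 * k"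

lemma ks_sh: "ks (shf k a) (shf k b) = ks a b"
proof -
  have "(a + 2 * k) mod 2 = a mod 2" "(a + 2 * k) div 2 = a div 2 + k" for a by simp_all
  then show ?thesis by (simp add: ks_def ac_def shf_def)
qed

lemma shf_eq: "shf k = (\<lambda>j. j + 2 * k)" by (rule ext) (simp add: shf_def)

lemma pp_sh: "pp (shf k x) (map (shf k) zs) = pp x zs"
  by (induction zs) (simp_all add: pp_def ks_sh)

lemma pp_sh': "pp (x + 2 * k) (map (\<lambda>a. a + 2 * k) zs) = pp x zs"
  using pp_sh[of k x zs] by (simp add: shf_eq)

lemma pp_sh'': "pp (x + 2 * k) ((a + 2 * k) # map (\<lambda>a. a + 2 * k) zs) = pp x (a # zs)"
  using pp_sh'[of x k "a # zs"] by simp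

lemma ins_sh: "ins (shf k x) (map (shf k) L) = (fst (ins x L), map (shf k) (snd (ins x L)))"
  by (induction L) (auto simp: shf_def pp_sh' pp_sh'')

lemma run_sh: "run (c, map (shf k) L) (map (shf k) w) = (fst (run (c, L) w), map (shf k) (snd (run (c, L) w)))"
proof (induction w arbitrary: c L)
  case Nil then show ?case by simp
next
  case (Cons x w)
  have "step (c, map (shf k) L) (shf k x) = (fst (step (c, L) x), map (shf k) (snd (step (c, L) x)))"
    by (simp add: step_def ins_sh)
  then show ?case using Cons.IH by (simp add: run_Cons)
qed

lemma nf_sh: "nf (map (shf k) w) = (fst (nf w), map (shf k) (snd (nf w)))"
  using run_sh[of 1 k "[]" w] by (simp add: nf_def)

definition sh :: "nat \<Rightarrow> fp \<Rightarrow> fp" where "sh k x = Sub (\<lambda>j. mon [shf k j]) x"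

lemma prod_mon_map: "prod_list (map (\<lambda>j. mon [f j]) w) = mon (map f w)"
  by (induction w) (simp_all add: mon_nil mon_Cons[of _ "map f _"])

lemma Lf_sh: "Lf h (sh k x) = Lf (\<lambda>a. h (map (shf k) a)) x"
proof -
  have x: "x \<in> PL UNIV" by (simp add: PL_def)
  then show ?thesis
  proof (induction x rule: PL_induct)
    case zero then show ?case by (simp add: sh_def Sub_zero Lf_zero)
  next
    case (add a b) then show ?case by (simp add: sh_def Sub_add Lf_add)
  next
    case (mon c w) then show ?case by (simp add: sh_def Sub_sc Sub_mon prod_mon_map Lf_sc Lf_mon)
  qed
qed

lemma munull_sh: assumes "munull x" shows "munull (sh k x)"
  unfolding munull_def
proof
  fix g
  have "Lf (\<lambda>a. fst (nf a) * (\<lambda>M. g (map (shf k) M)) (snd (nf a))) x = 0"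
    using assms unfolding munull_def by (rule spec)
  then show "Lf (\<lambda>a. fst (nf a) * g (snd (nf a))) (sh k x) = 0" by (simp add: Lf_sh nf_sh)
qed

lemma sh_mult: "sh k (x * y) = sh k x * sh k y" by (simp add: sh_def Sub_mult)
lemma sh_add: "sh k (x + y) = sh k x + sh k y" by (simp add: sh_def Sub_add)
lemma sh_diff: "sh k (x - y) = sh k x - sh k y" by (simp add: sh_def Sub_diff)
lemma sh_sc: "sh k (sc c * x) = sc c * sh k x" by (simp add: sh_def Sub_sc)
lemma sh_one: "sh k 1 = 1" by (simp add: sh_def Sub_one)
lemma sh_sc1: "sh k (sc c) = sc c" using sh_sc[of k c 1] by (simp add: sh_one)
lemma sh_mon: "sh k (mon [j]) = mon [j + 2 * k]" by (simp add: sh_def Sub_mon shf_def)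

definition Xc :: "nat \<Rightarrow> nat \<Rightarrow> fp" where "Xc a b = 1 + mon [a] + mon [b] + mon [a] * mon [b]"

definition kk :: complex where "kk = - 1 / (2 * qq)"

lemma S_Xc: "S i = sc kk * Xc (2 * i) (2 * i + 1)"
  by (simp add: S_def kk_def Xc_def U_def V_def)

lemma sh_Xc: "sh k (Xc a b) = Xc (a + 2 * k) (b + 2 * k)"
  by (simp add: Xc_def sh_add sh_mult sh_one sh_mon)

lemma braid0: "munull (Xc 0 1 * Xc 2 3 * Xc 0 1 - Xc 2 3 * Xc 0 1 * Xc 2 3)"
  unfolding munull_def
proof
  fix g :: "nat list \<Rightarrow> complex"
  show "Lf (\<lambda>a. fst (nf a) * g (snd (nf a))) (Xc 0 1 * Xc 2 3 * Xc 0 1 - Xc 2 3 * Xc 0 1 * Xc 2 3) = 0"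
    unfolding Xc_def
    apply (simp only: distrib_left distrib_right mult_1_left mult_1_right mon_append[symmetric] append.simps)
    apply (simp only: Lf_add Lf_diff Lf_mon)
    apply (simp add: nf_def run_def step_def pp_def ks_def ac_def)
    done
qed

lemma Lf_sc1: "Lf h (sc c) = c * h []"
proof -
  have "Lf h (sc c * mon []) = c * h []" by (simp only: Lf_sc Lf_mon)
  then show ?thesis by (simp add: mon_nil)
qed

lemma quad0: "munull (Xc 0 1 * Xc 0 1 - 2 * Xc 0 1 + 4)"
  unfolding munull_def
proof
  fix g :: "nat list \<Rightarrow> complex"
  have e: "(2::fp) * y = sc 2 * y" "(4::fp) = sc 4 * mon []" for y by (simp_all add: sc_numeral mon_nil)
  show "Lf (\<lambda>a. fst (nf a) * g (snd (nf a))) (Xc 0 1 * Xc 0 1 - 2 * Xc 0 1 + 4) = 0"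
    unfolding Xc_def e
    apply (simp only: distrib_left distrib_right mult_1_left mult_1_right mon_append[symmetric] append.simps)
    apply (simp only: Lf_add Lf_diff Lf_mon Lf_sc Lf_sc1 mon_nil[symmetric])
    apply (simp add: Lf_mon nf_def run_def step_def pp_def ks_def ac_def)
    done
qed

lemma qq3: "qq * qq * qq = -1"
proof -
  have "qq * qq * qq = (qq - 1) * qq" using qq_sq by simp
  also have "\<dots> = qq * qq - qq" by (simp add: algebra_simps)
  also have "\<dots> = -1" using qq_sq by simp
  finally show ?thesis .
qed

lemma kk_facts: "kk * kk = 1 / (4 * qq * qq)" "kk - qq * kk = - 2 / (4 * qq * qq)" "- qq = 4 / (4 * qq * qq)"
proof -
  show "kk * kk = 1 / (4 * qq * qq)" using qq_nz by (simp add: kk_def field_simps)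
  have "(kk - qq * kk) * (4 * qq * qq) = - 2 * qq * (1 - qq)" using qq_nz by (simp add: kk_def field_simps)
  also have "\<dots> = -2 * qq + 2 * (qq * qq)" by (simp add: algebra_simps)
  also have "\<dots> = -2" using qq_sq by simp
  finally show "kk - qq * kk = - 2 / (4 * qq * qq)" by (rule eq_divide_imp[rotated]) (use qq_nz in simp)
  have "(- qq) * (4 * qq * qq) = - 4 * (qq * qq * qq)" by (simp add: algebra_simps)
  also have "\<dots> = 4" using qq3 by simp
  finally have "(- qq) * (4 * qq * qq) = 4" .
  then show "- qq = 4 / (4 * qq * qq)" by (rule eq_divide_imp[rotated]) (use qq_nz in simp)
qed



lemma run_comm_words:
  assumes "\<forall>a\<in>set w. \<forall>b\<in>set v. ks a b = 1" "srt (snd st)"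
  shows "run st (w @ v @ u) = run st (v @ w @ u)"
  using assms
proof (induction w arbitrary: st)
  case Nil then show ?case by simp
next
  case (Cons a w)
  have s1: "srt (snd (step st a))" using Cons.prems step_srt by blast
  have IH: "run (step st a) (w @ v @ u) = run (step st a) (v @ w @ u)"
    using Cons.IH[OF _ s1] Cons.prems(1) by simp
  have "prod_list (map (ks a) v) = 1" using Cons.prems(1)
    by (induction v) auto
  then have r: "run st (a # v) = run st (v @ [a])"
    using run_rot[OF Cons.prems(2), of a v] by (simp add: scl_def)
  have "run st ((a # w) @ v @ u) = run (step st a) (v @ w @ u)" using IH by (simp add: run_Cons)
  also have "\<dots> = run (run st (a # v)) (w @ u)" by (simp add: run_Cons run_append)
  also have "\<dots> = run (run st (v @ [a])) (w @ u)" using r by simp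
  also have "\<dots> = run st ((v @ [a]) @ (w @ u))" by (rule run_append[symmetric])
  finally show ?case by simp
qed

lemma Zs_comm_words:
  assumes "\<forall>a\<in>set w. \<forall>b\<in>set v. ks a b = 1"
  shows "mon w * mon v - mon v * mon w \<in> Zs"
proof -
  have "munull (p * (mon w * mon v - mon v * mon w))" for p
    unfolding munull_def
  proof
    fix g
    have "Lf (\<lambda>a. fst (nf a) * g (snd (nf a))) (p * (mon w * mon v - mon v * mon w))
      = Lf (\<lambda>c. fst (nf (c @ w @ v)) * g (snd (nf (c @ w @ v))) - fst (nf (c @ v @ w)) * g (snd (nf (c @ v @ w)))) p"
      by (simp add: right_diff_distrib Lf_diff Lf_diff_fun mon_append[symmetric] Lf_mult_mon)
    also have "\<dots> = 0"
    proof (rule Lf_zero_fun)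
      fix c
      have "nf (c @ w @ v) = nf (c @ v @ w)"
        unfolding nf_def run_append[of _ c]
        using run_comm_words[OF assms, of "run (1, []) c" "[]"] run_srt[of "(1, [])" c] by simp
      then show "fst (nf (c @ w @ v)) * g (snd (nf (c @ w @ v))) - fst (nf (c @ v @ w)) * g (snd (nf (c @ v @ w))) = 0"
        by simp
    qed
    finally show "Lf (\<lambda>a. fst (nf a) * g (snd (nf a))) (p * (mon w * mon v - mon v * mon w)) = 0" .
  qed
  then show ?thesis by (simp add: Zs_def)
qed

lemma Zs_sc: "x \<in> Zs \<Longrightarrow> sc c * x \<in> Zs" using Zs_mult[of x "sc c" 1] by simp

lemma Zs_comm_PL:
  assumes x: "x \<in> PL A" and y: "y \<in> PL B" and c: "\<forall>a\<in>A. \<forall>b\<in>B. ks a b = 1"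
  shows "x * y - y * x \<in> Zs"
  using x
proof (induction x rule: PL_induct)
  case zero then show ?case by (simp add: Zs_zero)
next
  case (add a b)
  have "(a + b) * y - y * (a + b) = (a * y - y * a) + (b * y - y * b)" by (simp add: algebra_simps)
  then show ?case using add Zs_add by simp
next
  case (mon c1 w)
  show ?case using y
  proof (induction y rule: PL_induct)
    case zero then show ?case by (simp add: Zs_zero)
  next
    case (add a b)
    have "sc c1 * mon w * (a + b) - (a + b) * (sc c1 * mon w) = (sc c1 * mon w * a - a * (sc c1 * mon w)) + (sc c1 * mon w * b - b * (sc c1 * mon w))"
      by (simp add: algebra_simps)
    then show ?case using add Zs_add by simp
  next
    case (mon c2 v)
    have "\<forall>a\<in>set w. \<forall>b\<in>set v. ks a b = 1" using c mon.hyps \<open>set w \<subseteq> A\<close> by blast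
    then have z: "mon w * mon v - mon v * mon w \<in> Zs" by (rule Zs_comm_words)
    have "sc c1 * mon w * (sc c2 * mon v) - sc c2 * mon v * (sc c1 * mon w) = sc (c1 * c2) * (mon w * mon v - mon v * mon w)"
    proof -
      have "sc c1 * mon w * (sc c2 * mon v) = sc (c1 * c2) * (mon w * mon v)"
        using mon_sc_mult[of c1 w c2 v] by (simp add: mon_append)
      moreover have "sc c2 * mon v * (sc c1 * mon w) = sc (c1 * c2) * (mon v * mon w)"
        using mon_sc_mult[of c2 v c1 w] by (simp add: mon_append mult.commute)
      ultimately show ?thesis by (simp add: right_diff_distrib)
    qed
    then show ?case using Zs_sc[OF z] by simp
  qed
qed

section \<open>The Hecke relations hold modulo Zs\<close>

lemma scm: "(sc a * x) * (sc b * y) = sc (a * b) * (x * y)"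
proof -
  have c: "x * sc b = sc b * x" by (rule sc_comm[symmetric])
  have "(sc a * x) * (sc b * y) = sc a * ((x * sc b) * y)" by (simp only: mult.assoc)
  also have "\<dots> = sc a * ((sc b * x) * y)" by (simp only: c)
  also have "\<dots> = sc (a * b) * (x * y)" by (simp only: mult.assoc sc_mult)
  finally show ?thesis .
qed

lemma Xc_PL: "Xc a b \<in> PL {a, b}"
  unfolding Xc_def by (intro PL_add PL_mult PL_one PL_mon) auto

lemma sh_PL: "x \<in> PL L \<Longrightarrow> (\<And>j. j \<in> L \<Longrightarrow> j + 2 * k \<in> L') \<Longrightarrow> sh k x \<in> PL L'"
  unfolding sh_def shf_def by (rule Sub_PL) (auto intro: PL_mon)

lemma Zs_from_munull: "munull x \<Longrightarrow> x \<in> QL n \<Longrightarrow> x \<in> Zs"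
  using completeness QI_Zs by blast

lemma QL_shift_ok:
  assumes "i \<ge> 1" "j \<in> {0, 1, 2, 3}"
  shows "j + 2 * i \<in> Q_letters (i + 2)"
  using assms by (auto simp: Q_letters_iff)

lemma braid_Zs:
  assumes i: "i \<ge> 1"
  shows "S i * S (i + 1) * S i - S (i + 1) * S i * S (i + 1) \<in> Zs"
proof -
  let ?x0 = "Xc 0 1 * Xc 2 3 * Xc 0 1 - Xc 2 3 * Xc 0 1 * Xc 2 3"
  have a: "Xc 0 1 \<in> PL {0, 1, 2, 3}" by (rule PL_mono[OF Xc_PL]) auto
  have b: "Xc 2 3 \<in> PL {0, 1, 2, 3}" by (rule PL_mono[OF Xc_PL]) auto
  have x0: "?x0 \<in> PL {0, 1, 2, 3}" by (intro PL_diff PL_mult a b)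
  have "sh i ?x0 \<in> QL (i + 2)" using x0 by (rule sh_PL) (use QL_shift_ok i in auto)
  then have z: "sh i ?x0 \<in> Zs" using munull_sh[OF braid0] Zs_from_munull by blast
  have e: "0 + 2 * i = 2 * i" "1 + 2 * i = 2 * i + 1" "2 + 2 * i = 2 * (i + 1)" "3 + 2 * i = 2 * (i + 1) + 1"
    by simp_all
  have sx: "sh i (Xc 0 1) = Xc (2 * i) (2 * i + 1)" "sh i (Xc 2 3) = Xc (2 * (i + 1)) (2 * (i + 1) + 1)"
    by (simp_all only: sh_Xc e)
  have "S i * S (i + 1) * S i - S (i + 1) * S i * S (i + 1) = sc (kk * kk * kk) * sh i ?x0"
    by (simp only: S_Xc sh_diff sh_mult sx scm right_diff_distrib)
  then show ?thesis using Zs_sc[OF z] by simp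
qed

lemma quad_Zs:
  assumes i: "i \<ge> 1"
  shows "(S i + 1) * (S i - sc qq) \<in> Zs"
proof -
  let ?X = "Xc (2 * i) (2 * i + 1)"
  let ?x0 = "Xc 0 1 * Xc 0 1 - 2 * Xc 0 1 + 4"
  have x0: "?x0 \<in> PL {0, 1}"
    using Xc_PL[of 0 1] by (intro PL_add PL_diff PL_mult PL_numeral)
  have "sh i ?x0 \<in> QL (i + 2)" using x0 by (rule sh_PL) (use QL_shift_ok i in auto)
  then have z: "sh i ?x0 \<in> Zs" using munull_sh[OF quad0] Zs_from_munull by blast
  have n: "sh i (numeral k) = numeral k" for k using sh_sc1[of i "numeral k"] by (simp add: sc_numeral)
  have sx: "sh i ?x0 = ?X * ?X - 2 * ?X + 4"
    by (simp add: sh_diff sh_add sh_mult sh_Xc n)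
  have "(S i + 1) * (S i - sc qq) = sc (kk * kk) * (?X * ?X) + sc (kk - qq * kk) * ?X - sc qq"
  proof -
    have a: "sc kk * ?X * (sc kk * ?X) = sc (kk * kk) * (?X * ?X)" by (rule scm)
    have c0: "?X * sc qq = sc qq * ?X" by (rule sc_comm[symmetric])
    have "sc kk * ?X * sc qq = sc kk * (sc qq * ?X)" by (simp only: mult.assoc c0)
    also have "\<dots> = sc (kk * qq) * ?X" by (simp only: mult.assoc[symmetric] sc_mult)
    finally have b: "sc kk * ?X * sc qq = sc (qq * kk) * ?X" by (simp only: mult.commute)
    have c: "sc (kk - qq * kk) * ?X = sc kk * ?X - sc (qq * kk) * ?X" by (simp add: sc_minus left_diff_distrib)
    have "(S i + 1) * (S i - sc qq) = sc kk * ?X * (sc kk * ?X) - sc kk * ?X * sc qq + (sc kk * ?X - sc qq)"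
      unfolding S_Xc by (simp only: distrib_right mult_1_left right_diff_distrib) (simp add: algebra_simps)
    also have "\<dots> = sc (kk * kk) * (?X * ?X) - sc (qq * kk) * ?X + (sc kk * ?X - sc qq)" by (simp only: a b)
    also have "\<dots> = sc (kk * kk) * (?X * ?X) + sc (kk - qq * kk) * ?X - sc qq" unfolding c by (simp add: algebra_simps)
    finally show ?thesis .
  qed
  also have "\<dots> = sc (1 / (4 * qq * qq)) * (?X * ?X - 2 * ?X + 4)"
  proof -
    define c where "c = 1 / (4 * qq * qq)"
    have n1: "kk * kk = c" and n2: "kk - qq * kk = - (c * 2)"
      using kk_facts unfolding c_def by simp_all
    have "c * 4 = 4 / (4 * qq * qq)" unfolding c_def by simp
    then have "qq = - (c * 4)" using kk_facts(3) by (metis minus_minus)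
    then have n3: "sc qq = - sc (c * 4)" using sc_uminus[of "c * 4"] by metis
    have e2: "sc c * (2 * ?X) = sc (c * 2) * ?X"
      by (simp only: sc_numeral[symmetric] mult.assoc[symmetric] sc_mult)
    have e4: "sc c * (4::fp) = sc (c * 4)"
      by (simp only: sc_numeral[symmetric] sc_mult)
    have "sc c * (?X * ?X - 2 * ?X + 4) = sc c * (?X * ?X) - sc (c * 2) * ?X + sc (c * 4)"
      by (simp only: distrib_left right_diff_distrib e2 e4)
    moreover have "sc (kk * kk) * (?X * ?X) + sc (kk - qq * kk) * ?X - sc qq = sc c * (?X * ?X) - sc (c * 2) * ?X + sc (c * 4)"
      by (simp only: n1 n2 n3 sc_uminus) (simp add: algebra_simps)
    ultimately show ?thesis unfolding c_def by simp
  qed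
  finally show ?thesis using Zs_sc[OF z] sx by simp
qed

lemma far_Zs:
  assumes "1 < dist (real i) (real j)"
  shows "S i * S j - S j * S i \<in> Zs"
proof -
  have "S i \<in> PL {2 * i, 2 * i + 1}" "S j \<in> PL {2 * j, 2 * j + 1}"
    unfolding S_Xc using Xc_PL by (auto intro: PL_mult PL_sc)
  moreover have "\<forall>a\<in>{2 * i, 2 * i + 1}. \<forall>b\<in>{2 * j, 2 * j + 1}. ks a b = 1"
  proof -
    have "\<not> ac (2 * i) (2 * j + 1)" "\<not> ac (2 * i + 1) (2 * j)"
      using assms ac_UV[of i j] ac_UV[of j i] ac_sym by (auto simp: dist_commute)
    moreover have "\<not> ac (2 * i) (2 * j)" "\<not> ac (2 * i + 1) (2 * j + 1)" by (simp_all add: ac_def)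
    ultimately show ?thesis by (auto simp: ks_def)
  qed
  ultimately show ?thesis by (rule Zs_comm_PL)
qed



definition T0 :: "ncpoly \<Rightarrow> complex" where
  "T0 f = (if f \<in> ncpolys_on {1..} then tau (Sub S (Ap f)) else 0)"

lemma polys_fin: "f \<in> ncpolys_on L \<Longrightarrow> finite (supp f)"
  by (simp add: ncpolys_on_def supp_def)

lemma Ap_add: "finite (supp f) \<Longrightarrow> finite (supp g) \<Longrightarrow> Ap (f \<oplus> g) = Ap f + Ap g"
  by (simp add: plus_fp_def Ap_inverse)
lemma Ap_mul: "finite (supp f) \<Longrightarrow> finite (supp g) \<Longrightarrow> Ap (f \<star> g) = Ap f * Ap g"
  by (simp add: times_fp_def Ap_inverse)
lemma Ap_smul: "finite (supp f) \<Longrightarrow> Ap (c \<cdot> f) = sc c * Ap f"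
  by (metis Ap_inverse Rp_inverse Rp_sc_mul mem_Collect_eq)
lemma Ap_PL: "f \<in> ncpolys_on L \<Longrightarrow> Ap f \<in> PL L"
  using ncpolys_on_Rp Rp_inverse by metis
lemma Ap_in: "x \<in> PL L \<Longrightarrow> Rp x \<in> ncpolys_on L" by (rule Rp_in_ncpolys)

lemma polys_add: "f \<in> ncpolys_on L \<Longrightarrow> g \<in> ncpolys_on L \<Longrightarrow> f \<oplus> g \<in> ncpolys_on L"
proof -
  assume f: "f \<in> ncpolys_on L" and g: "g \<in> ncpolys_on L"
  have "Ap f + Ap g \<in> PL L" using f g by (intro PL_add Ap_PL)
  then have "Rp (Ap f + Ap g) \<in> ncpolys_on L" by (rule Rp_in_ncpolys)
  then show ?thesis using f g polys_fin by (simp add: Rp_plus Ap_inverse)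
qed
lemma polys_mul: "f \<in> ncpolys_on L \<Longrightarrow> g \<in> ncpolys_on L \<Longrightarrow> f \<star> g \<in> ncpolys_on L"
proof -
  assume f: "f \<in> ncpolys_on L" and g: "g \<in> ncpolys_on L"
  have "Ap f * Ap g \<in> PL L" using f g by (intro PL_mult Ap_PL)
  then have "Rp (Ap f * Ap g) \<in> ncpolys_on L" by (rule Rp_in_ncpolys)
  then show ?thesis using f g polys_fin by (simp add: Rp_times Ap_inverse)
qed
lemma polys_smul: "f \<in> ncpolys_on L \<Longrightarrow> c \<cdot> f \<in> ncpolys_on L"
proof -
  assume f: "f \<in> ncpolys_on L"
  have "sc c * Ap f \<in> PL L" using f by (intro PL_mult PL_sc Ap_PL)
  then have "Rp (sc c * Ap f) \<in> ncpolys_on L" by (rule Rp_in_ncpolys)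
  then show ?thesis using f polys_fin by (simp add: Rp_sc_mul Ap_inverse)
qed
lemma polys_mono: "f \<in> ncpolys_on L \<Longrightarrow> L \<subseteq> L' \<Longrightarrow> f \<in> ncpolys_on L'"
  by (auto simp: ncpolys_on_def)

lemma Sub_sc1: "Sub \<sigma> (sc c) = sc c"
  using Sub_sc[of \<sigma> c 1] by (simp add: Sub_one)

lemma tau_add: "tau (x + y) = tau x + tau y" by (simp add: tau_def Lf_add)
lemma tau_sc: "tau (sc c * x) = c * tau x" by (simp add: tau_def Lf_sc)
lemma tau_diff: "tau (x - y) = tau x - tau y" by (simp add: tau_def Lf_diff)
lemma tau_one: "tau 1 = 1"
  using Lf_mon[of tw "[]"] by (simp add: tau_def mon_nil tw_def nf_def)

lemma hecke_Zs: "f \<in> hecke_ideal {1..} \<Longrightarrow> finite (supp f) \<and> Sub S (Ap f) \<in> Zs"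
  unfolding hecke_ideal_def
proof (induction f rule: ideal_gen.induct)
  case (gen r)
  have L: "r = Rp x \<Longrightarrow> Sub S x \<in> Zs \<Longrightarrow> finite (supp r) \<and> Sub S (Ap r) \<in> Zs" for x
    using fsR by (simp add: Rp_inverse)
  from gen consider (a) i where "r = ncvar i \<star> ncvar (i+1) \<star> ncvar i \<ominus> ncvar (i+1) \<star> ncvar i \<star> ncvar (i+1)" "i \<ge> 1"
    | (b) i j where "r = ncvar i \<star> ncvar j \<ominus> ncvar j \<star> ncvar i" "dist (real i) (real j) > 1"
    | (c) i where "r = (ncvar i \<oplus> ncone) \<star> (ncvar i \<ominus> qq \<cdot> ncone)" "i \<ge> 1"
    unfolding hecke_rels_def by auto
  then show ?case
  proof cases
    case a
    have "r = Rp (G i * G (i+1) * G i - G (i+1) * G i * G (i+1))" using a by (simp add: Rp_minus Rp_times Rp_G)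
    moreover have "Sub S (G i * G (i+1) * G i - G (i+1) * G i * G (i+1)) \<in> Zs"
      using braid_Zs[OF a(2)] by (simp add: Sub_diff Sub_mult G_def Sub_mon)
    ultimately show ?thesis by (rule L)
  next
    case b
    have "r = Rp (G i * G j - G j * G i)" using b by (simp add: Rp_minus Rp_times Rp_G)
    moreover have "Sub S (G i * G j - G j * G i) \<in> Zs"
      using far_Zs[OF b(2)] by (simp add: Sub_diff Sub_mult G_def Sub_mon)
    ultimately show ?thesis by (rule L)
  next
    case c
    have "r = Rp ((G i + 1) * (G i - sc qq))" using c by (simp add: Rp_minus Rp_times Rp_G Rp_plus Rp_one Rp_sc)
    moreover have "Sub S ((G i + 1) * (G i - sc qq)) = (S i + 1) * (S i - sc qq)"
      using Sub_sc[of S qq 1] by (simp add: Sub_diff Sub_mult Sub_add Sub_one G_def Sub_mon)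
    ultimately show ?thesis using L quad_Zs[OF c(2)] by simp
  qed
next
  case zero
  have "Ap nczero = 0" by (simp add: zero_fp_def)
  then show ?case by (simp add: fs_zero Zs_zero Sub_zero)
next
  case (add a b)
  then show ?case by (simp add: Ap_add fs_add Sub_add Zs_add)
next
  case (mul a p r)
  have "finite (supp p)" "finite (supp r)" using mul polys_fin by auto
  then show ?case using mul by (simp add: Ap_mul finite_supp_conv Sub_mult Zs_mult)
qed

lemma tau_Zs: "y \<in> Zs \<Longrightarrow> tau y = 0" using Zs_tau[of y 1] by simp

lemma tau_vanish:
  assumes X: "\<forall>c\<in>supp (Rp X). l \<notin> set c" and w: "odd (count_list w l)"
  shows "tau (X * mon w) = 0"
proof -
  have "tau (X * mon w) = Lf (\<lambda>c. tw (c @ w)) X" by (simp add: tau_def Lf_mult_mon)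
  also have "\<dots> = 0" unfolding Lf_expl
  proof (rule sum.neutral, rule ballI)
    fix c assume c: "c \<in> supp (Rp X)"
    have "count_list c l = 0" using X c by (simp add: count_list_0_iff)
    then have "l \<in> oddl (c @ w)" using w by (simp add: oddl_def)
    then have "snd (nf (c @ w)) \<noteq> []" using nf_set[of "c @ w"] by auto
    then show "Rp X c * tw (c @ w) = 0" by (simp add: tw_def)
  qed
  finally show ?thesis .
qed

lemma S_letters: "S i \<in> PL {2 * i, 2 * i + 1}"
  unfolding S_Xc using Xc_PL by (auto intro: PL_mult PL_sc)

lemma markov0:
  assumes m: "m \<ge> 1" and x: "x \<in> ncpolys_on {1..<m}"
  shows "T0 (x \<star> e_el m) = eta * T0 x"
proof -
  have xP: "x \<in> ncpolys_on {1..}" using x by (rule polys_mono) auto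
  have eP: "e_el m \<in> ncpolys_on {1..}"
  proof -
    have "e_el m = Rp (sc (1 / (1 + qq)) * (sc qq - G m))"
      by (simp add: e_el_def Rp_sc_mul Rp_minus Rp_sc Rp_G)
    moreover have "sc (1 / (1 + qq)) * (sc qq - G m) \<in> PL {1..}"
      using m by (intro PL_mult PL_sc PL_diff) (simp add: G_def PL_mon)
    ultimately show ?thesis by (simp add: Rp_in_ncpolys)
  qed
  have Ae: "Ap (e_el m) = sc (1 / (1 + qq)) * (sc qq - G m)"
    by (metis (no_types, lifting) Rp_G Rp_inverse Rp_minus Rp_sc Rp_sc_mul e_el_def)
  define X where "X = Sub S (Ap x)"
  have XL: "X \<in> PL {j. j < 2 * m}"
    unfolding X_def
    by (rule Sub_PL[OF Ap_PL[OF x]]) (auto intro: PL_mono[OF S_letters])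
  have nl: "\<forall>c\<in>supp (Rp X). l \<notin> set c" if "l \<ge> 2 * m" for l
  proof
    fix c assume "c \<in> supp (Rp X)"
    then have "set c \<subseteq> {j. j < 2 * m}" using XL by (auto simp: PL_def)
    then show "l \<notin> set c" using that by auto
  qed
  have v1: "tau (X * mon [2 * m]) = 0" by (rule tau_vanish[OF nl[of "2 * m"]]) simp_all
  have v2: "tau (X * mon [2 * m + 1]) = 0" by (rule tau_vanish[OF nl[of "2 * m + 1"]]) simp_all
  have v3: "tau (X * mon [2 * m, 2 * m + 1]) = 0" by (rule tau_vanish[OF nl[of "2 * m"]]) simp_all
  have SX: "tau (X * S m) = kk * tau X"
  proof -
    have "X * S m = sc kk * (X + X * mon [2 * m] + X * mon [2 * m + 1] + X * mon [2 * m, 2 * m + 1])"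
      unfolding S_Xc Xc_def
      by (simp add: distrib_left mult.assoc[symmetric] sc_comm[of kk X, symmetric] mon_append[symmetric])
    then show ?thesis by (simp only: tau_sc tau_add v1 v2 v3) simp
  qed
  have "T0 (x \<star> e_el m) = tau (X * (sc (1 / (1 + qq)) * (sc qq - S m)))"
    using polys_mul[OF xP eP] xP eP
    by (simp add: T0_def X_def Ap_mul polys_fin Ae Sub_mult Sub_sc Sub_diff G_def Sub_mon Sub_sc1)
  also have "X * (sc (1 / (1 + qq)) * (sc qq - S m)) = sc (1 / (1 + qq)) * (sc qq * X - X * S m)"
  proof -
    have c1: "X * sc (1 / (1 + qq)) = sc (1 / (1 + qq)) * X" by (rule sc_comm[symmetric])
    have c2: "X * sc qq = sc qq * X" by (rule sc_comm[symmetric])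
    have "X * (sc (1 / (1 + qq)) * (sc qq - S m)) = (X * sc (1 / (1 + qq))) * (sc qq - S m)"
      by (simp only: mult.assoc)
    also have "\<dots> = sc (1 / (1 + qq)) * (X * sc qq - X * S m)"
      by (simp only: c1 mult.assoc right_diff_distrib)
    finally show ?thesis by (simp only: c2)
  qed
  also have "tau \<dots> = (1 / (1 + qq)) * (qq * tau X - kk * tau X)"
    by (simp only: tau_sc tau_diff SX)
  also have "\<dots> = (1 / (1 + qq)) * (qq - kk) * tau X"
    by (simp only: mult.assoc left_diff_distrib)
  also have "(1 / (1 + qq)) * (qq - kk) = eta"
  proof -
    have "(2 * (qq - kk)) * qq = (1 + qq) * qq"
    proof -
      have "(2 * (qq - kk)) * qq = 2 * (qq * qq) + 1" using qq_nz by (simp add: kk_def field_simps)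
      also have "\<dots> = 2 * qq - 1" using qq_sq by simp
      also have "\<dots> = (1 + qq) * qq" using qq_sq by (simp add: algebra_simps)
      finally show ?thesis .
    qed
    then have "2 * (qq - kk) = 1 + qq" using qq_nz by simp
    then show ?thesis using qq_one by (simp add: eta_def field_simps)
  qed
  finally show ?thesis using xP by (simp add: T0_def X_def)
qed

lemma T0_markov: "is_markov_trace T0"
  unfolding is_markov_trace_def
proof (intro conjI)
  show "\<forall>f. f \<notin> ncpolys_on {1..} \<longrightarrow> T0 f = 0" by (simp add: T0_def)
  show "\<forall>f\<in>ncpolys_on {1..}. \<forall>g\<in>ncpolys_on {1..}. T0 (f \<oplus> g) = T0 f + T0 g"
    by (simp add: T0_def polys_add Ap_add polys_fin Sub_add tau_add)
  show "\<forall>f\<in>ncpolys_on {1..}. \<forall>c. T0 (c \<cdot> f) = c * T0 f"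
    by (simp add: T0_def polys_smul Ap_smul polys_fin Sub_sc tau_sc)
  show "\<forall>f\<in>hecke_ideal {1..}. T0 f = 0"
    using hecke_Zs tau_Zs by (simp add: T0_def)
  show "T0 ncone = 1"
  proof -
    have "ncone \<in> ncpolys_on {1..}" using Rp_in_ncpolys[OF PL_one] by (simp add: Rp_one)
    moreover have "Ap ncone = 1" by (simp add: one_fp_def)
    ultimately show ?thesis by (simp add: T0_def Sub_one tau_one)
  qed
  show "\<forall>a\<in>ncpolys_on {1..}. \<forall>b\<in>ncpolys_on {1..}. T0 (a \<star> b) = T0 (b \<star> a)"
    by (simp add: T0_def polys_mul Ap_mul polys_fin Sub_mult tau_comm)
  show "\<forall>m\<ge>1. \<forall>x\<in>ncpolys_on {1..<m}. T0 (x \<star> e_el m) = eta * T0 x"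
    using markov0 by blast
qed



section \<open>Hecke algebra reduction\<close>

abbreviation P1 :: "fp set" where "P1 \<equiv> PL {1..}"

definition Hid :: "fp set" where "Hid = {y. Rp y \<in> hecke_ideal {1..}}"

lemma Hid_zero: "0 \<in> Hid" by (simp add: Hid_def hecke_ideal_def Rp_zero ideal_gen.zero)
lemma Hid_add: "x \<in> Hid \<Longrightarrow> y \<in> Hid \<Longrightarrow> x + y \<in> Hid"
  by (simp add: Hid_def hecke_ideal_def Rp_plus ideal_gen.add)
lemma Hid_mult: "y \<in> Hid \<Longrightarrow> p \<in> P1 \<Longrightarrow> r \<in> P1 \<Longrightarrow> p * y * r \<in> Hid"
  by (simp add: Hid_def hecke_ideal_def Rp_times ideal_gen.mul Rp_in_ncpolys)
lemma Hid_gen: "Rp y \<in> hecke_rels {1..} \<Longrightarrow> y \<in> Hid"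
  by (simp add: Hid_def hecke_ideal_def ideal_gen.gen)
lemma Hid_lmult: "y \<in> Hid \<Longrightarrow> p \<in> P1 \<Longrightarrow> p * y \<in> Hid"
  using Hid_mult[of y p 1] by (simp add: PL_one)
lemma Hid_rmult: "y \<in> Hid \<Longrightarrow> r \<in> P1 \<Longrightarrow> y * r \<in> Hid"
  using Hid_mult[of y 1 r] by (simp add: PL_one)
lemma Hid_sc: "y \<in> Hid \<Longrightarrow> sc c * y \<in> Hid" by (rule Hid_lmult) (simp_all add: PL_sc)
lemma Hid_uminus: "y \<in> Hid \<Longrightarrow> - y \<in> Hid"
  using Hid_sc[of y "-1"] by (simp add: sc_uminus sc_one)

definition ch :: "fp \<Rightarrow> fp \<Rightarrow> bool" where "ch x y \<longleftrightarrow> x - y \<in> Hid"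

lemma ch_refl: "ch x x" by (simp add: ch_def Hid_zero)
lemma ch_eq: "x = y \<Longrightarrow> ch x y" by (simp add: ch_refl)
lemma ch_sym: "ch x y \<Longrightarrow> ch y x" unfolding ch_def using Hid_uminus by fastforce
lemma ch_trans: "ch x y \<Longrightarrow> ch y z \<Longrightarrow> ch x z" unfolding ch_def using Hid_add by fastforce
lemma ch_lmult: "ch x y \<Longrightarrow> p \<in> P1 \<Longrightarrow> ch (p * x) (p * y)"
  unfolding ch_def using Hid_lmult by (metis right_diff_distrib)
lemma ch_rmult: "ch x y \<Longrightarrow> r \<in> P1 \<Longrightarrow> ch (x * r) (y * r)"
  unfolding ch_def using Hid_rmult by (metis left_diff_distrib)
lemma ch_mult3: "ch x y \<Longrightarrow> p \<in> P1 \<Longrightarrow> r \<in> P1 \<Longrightarrow> ch (p * x * r) (p * y * r)"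
  using ch_lmult ch_rmult by blast
lemma ch_sc: "ch x y \<Longrightarrow> ch (sc c * x) (sc c * y)" using ch_lmult PL_sc by blast
lemma ch_add: "ch x y \<Longrightarrow> ch x' y' \<Longrightarrow> ch (x + x') (y + y')"
  unfolding ch_def using Hid_add by (metis add_diff_add)

lemma G_P1: "i \<ge> 1 \<Longrightarrow> G i \<in> P1" unfolding G_def by (rule PL_mon) simp
lemma G_PL: "i \<in> L \<Longrightarrow> G i \<in> PL L" unfolding G_def by (rule PL_mon) simp
lemma PL_P1: "x \<in> PL {1..m} \<Longrightarrow> x \<in> P1" by (erule PL_mono) auto
lemma PL_P1': "x \<in> PL {1..<m} \<Longrightarrow> x \<in> P1" by (erule PL_mono) auto

lemma H_braid: "i \<ge> 1 \<Longrightarrow> ch (G i * G (i+1) * G i) (G (i+1) * G i * G (i+1))"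
  unfolding ch_def by (rule Hid_gen) (auto simp: hecke_rels_def Rp_minus Rp_times Rp_G)

lemma H_far: "i \<ge> 1 \<Longrightarrow> j \<ge> 1 \<Longrightarrow> 1 < dist (real i) (real j) \<Longrightarrow> ch (G i * G j) (G j * G i)"
  unfolding ch_def by (rule Hid_gen) (auto simp: hecke_rels_def Rp_minus Rp_times Rp_G)

lemma H_quad: "i \<ge> 1 \<Longrightarrow> ch (G i * G i) (sc (qq - 1) * G i + sc qq)"
proof -
  assume i: "i \<ge> 1"
  have "(G i + 1) * (G i - sc qq) \<in> Hid"
    by (rule Hid_gen) (use i in \<open>auto simp: hecke_rels_def Rp_minus Rp_times Rp_G Rp_plus Rp_one Rp_sc\<close>)
  moreover have "(G i + 1) * (G i - sc qq) = G i * G i - (sc (qq - 1) * G i + sc qq)"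
    by (simp add: algebra_simps sc_minus sc_one sc_comm[of qq "G i", symmetric])
  ultimately show ?thesis by (simp add: ch_def)
qed

lemma far_dist: "j + 2 \<le> i \<Longrightarrow> 1 < dist (real i) (real j)"
  by (simp add: dist_real_def)

lemma comm_G:
  assumes i: "i \<ge> 1" and x: "x \<in> PL A" and A: "\<And>j. j \<in> A \<Longrightarrow> 1 \<le> j \<and> j + 2 \<le> i"
  shows "ch (G i * x) (x * G i)"
  using x
proof (induction x rule: PL_induct)
  case zero then show ?case by (simp add: ch_refl)
next
  case (add a b) then show ?case by (simp add: distrib_left distrib_right ch_add)
next
  case (mon c w)
  have "ch (G i * mon w) (mon w * G i)" using mon
  proof (induction w)
    case Nil then show ?case by (simp add: mon_nil ch_refl)
  next
    case (Cons j w)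
    have j: "1 \<le> j" "j + 2 \<le> i" using Cons.prems A by auto
    have w: "set w \<subseteq> A" using Cons.prems by auto
    have mw: "mon w \<in> P1" using w A by (intro PL_mon) auto
    have "G i * mon (j # w) = (G i * G j) * mon w" by (simp add: G_def mon_Cons[of j w] mult.assoc)
    moreover have "ch ((G i * G j) * mon w) ((G j * G i) * mon w)"
      using H_far[OF i j(1) far_dist[OF j(2)]] mw by (rule ch_rmult)
    moreover have "ch (G j * (G i * mon w)) (G j * (mon w * G i))"
      using Cons.IH[OF w] G_P1[OF j(1)] by (rule ch_lmult)
    moreover have "G j * (mon w * G i) = mon (j # w) * G i" by (simp add: G_def mon_Cons[of j w] mult.assoc)
    ultimately show ?case by (metis ch_trans mult.assoc)
  qed
  then have "ch (sc c * (G i * mon w)) (sc c * (mon w * G i))" by (rule ch_sc)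
  moreover have "G i * (sc c * mon w) = sc c * (G i * mon w)"
    by (simp add: mult.assoc[symmetric] sc_comm[of c "G i", symmetric])
  ultimately show ?case by (simp add: mult.assoc)
qed

inductive_set W :: "nat \<Rightarrow> fp set" for m where
  W0: "0 \<in> W m"
| Wb: "b \<in> PL {1..<m} \<Longrightarrow> c \<in> PL {1..<m} \<Longrightarrow> b * G m * c \<in> W m"
| Wadd: "h \<in> W m \<Longrightarrow> h' \<in> W m \<Longrightarrow> h + h' \<in> W m"

lemma W_PL: "m \<ge> 1 \<Longrightarrow> h \<in> W m \<Longrightarrow> h \<in> PL {1..m}"
proof -
  assume m: "m \<ge> 1" and h: "h \<in> W m"
  from h show ?thesis
  proof induction
    case W0 then show ?case by (simp add: PL_zero)
  next
    case (Wb b c)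
    then show ?case using m
      by (intro PL_mult G_PL) (auto elim: PL_mono)
  next
    case (Wadd h h') then show ?case by (simp add: PL_add)
  qed
qed

lemma W_lmult: "h \<in> W m \<Longrightarrow> p \<in> PL {1..<m} \<Longrightarrow> p * h \<in> W m"
proof (induction h rule: W.induct)
  case W0 then show ?case by (simp add: W.W0)
next
  case (Wb b c)
  have "p * (b * G m * c) = (p * b) * G m * c" by (simp add: mult.assoc)
  then show ?case using Wb by (simp add: W.Wb PL_mult)
next
  case (Wadd h h') then show ?case by (simp add: distrib_left W.Wadd)
qed

lemma W_rmult: "h \<in> W m \<Longrightarrow> r \<in> PL {1..<m} \<Longrightarrow> h * r \<in> W m"
proof (induction h rule: W.induct)
  case W0 then show ?case by (simp add: W.W0)
next
  case (Wb b c)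
  have "(b * G m * c) * r = b * G m * (c * r)" by (simp add: mult.assoc)
  then show ?case using Wb by (simp add: W.Wb PL_mult)
next
  case (Wadd h h') then show ?case by (simp add: distrib_right W.Wadd)
qed

lemma W_sc: "h \<in> W m \<Longrightarrow> sc c * h \<in> W m"
  using W_lmult PL_sc by blast

definition good :: "nat \<Rightarrow> fp \<Rightarrow> bool" where
  "good m x \<longleftrightarrow> (\<exists>a\<in>PL {1..<m}. \<exists>h\<in>W m. ch x (a + h))"

lemma good_zero: "good m 0"
  unfolding good_def by (rule bexI[of _ 0], rule bexI[of _ 0]) (simp_all add: ch_refl W.W0 PL_zero)

lemma good_add: "good m x \<Longrightarrow> good m y \<Longrightarrow> good m (x + y)"
proof -
  assume "good m x" "good m y"
  then obtain a h a' h' where H: "a \<in> PL {1..<m}" "h \<in> W m" "ch x (a + h)" "a' \<in> PL {1..<m}" "h' \<in> W m" "ch y (a' + h')"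
    unfolding good_def by blast
  have c: "ch (x + y) ((a + h) + (a' + h'))" using ch_add[OF H(3) H(6)] .
  have e: "(a + h) + (a' + h') = (a + a') + (h + h')" by (simp add: add_ac)
  have "a + a' \<in> PL {1..<m}" using H by (simp add: PL_add)
  moreover have "h + h' \<in> W m" using H by (simp add: W.Wadd)
  moreover have "ch (x + y) ((a + a') + (h + h'))" using c unfolding e .
  ultimately show ?thesis unfolding good_def by blast
qed

lemma good_sc: "good m x \<Longrightarrow> good m (sc c * x)"
proof -
  assume "good m x"
  then obtain a h where "a \<in> PL {1..<m}" "h \<in> W m" "ch x (a + h)" unfolding good_def by blast
  then show ?thesis unfolding good_def
    by (intro bexI[of _ "sc c * a"] bexI[of _ "sc c * h"]) (auto intro: PL_mult PL_sc W_sc dest: ch_sc simp: distrib_left)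
qed

lemma good_ch: "ch x y \<Longrightarrow> good m y \<Longrightarrow> good m x"
  unfolding good_def using ch_trans by blast

lemma good_low: "a \<in> PL {1..<m} \<Longrightarrow> good m a"
  unfolding good_def by (intro bexI[of _ a] bexI[of _ 0]) (simp_all add: ch_refl W.W0)

lemma good_W: "h \<in> W m \<Longrightarrow> good m h"
  unfolding good_def by (intro bexI[of _ 0] bexI[of _ h]) (simp_all add: ch_refl PL_zero)

lemma good_Gj:
  assumes j: "j \<in> {1..<m}" and x: "good m x" and m: "m \<ge> 1"
  shows "good m (G j * x)"
proof -
  obtain a h where a: "a \<in> PL {1..<m}" and h: "h \<in> W m" and c: "ch x (a + h)" using x unfolding good_def by blast
  have gj: "G j \<in> PL {1..<m}" using j by (rule G_PL)
  have "ch (G j * x) (G j * a + G j * h)" using ch_lmult[OF c PL_P1'[OF gj]] by (simp add: distrib_left)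
  then show ?thesis unfolding good_def using a h gj by (blast intro: PL_mult W_lmult)
qed

definition Rdec :: "nat \<Rightarrow> bool" where "Rdec m \<longleftrightarrow> (\<forall>x\<in>PL {1..m}. good m x)"

lemma key_step:
  assumes Rm: "m \<ge> 1 \<Longrightarrow> Rdec m"
  defines "n \<equiv> m + 1"
  assumes b: "b \<in> PL {1..m}" and c: "c \<in> PL {1..m}"
  shows "good n (G n * (b * G n * c))"
proof -
  have n1: "n \<ge> 1" by (simp add: n_def)
  have Gn: "G n \<in> P1" using n1 by (rule G_P1)
  have low: "PL {1..<n} = PL {1..m}" by (simp add: n_def atLeastLessThanSuc_atLeastAtMost)
  \<comment> \<open>the part commuting with G n\<close>
  have A: "good n (G n * (a' * G n * c))" if a': "a' \<in> PL {1..<m}" for a'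
  proof -
    have a'P: "a' \<in> P1" using a' by (rule PL_P1')
    have cP: "c \<in> P1" using c by (rule PL_P1)
    have "ch (G n * a') (a' * G n)"
      by (rule comm_G[OF n1 a']) (auto simp: n_def)
    then have f1: "ch (G n * a' * (G n * c)) (a' * G n * (G n * c))" by (rule ch_rmult) (intro PL_mult Gn cP)
    have f2: "ch (a' * (G n * G n) * c) (a' * (sc (qq - 1) * G n + sc qq) * c)"
      using H_quad[OF n1] a'P cP by (rule ch_mult3)
    have e: "a' * (sc (qq - 1) * G n + sc qq) * c = sc (qq - 1) * (a' * G n * c) + sc qq * (a' * c)"
    proof -
      have c1: "a' * sc (qq - 1) = sc (qq - 1) * a'" by (rule sc_comm[symmetric])
      have c2: "a' * sc qq = sc qq * a'" by (rule sc_comm[symmetric])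
      have "a' * (sc (qq - 1) * G n + sc qq) * c = (a' * sc (qq - 1)) * G n * c + (a' * sc qq) * c"
        by (simp only: distrib_left distrib_right mult.assoc)
      also have "\<dots> = sc (qq - 1) * (a' * G n * c) + sc qq * (a' * c)" by (simp only: c1 c2 mult.assoc)
      finally show ?thesis .
    qed
    have g: "good n (sc (qq - 1) * (a' * G n * c) + sc qq * (a' * c))"
    proof -
      have "a' \<in> PL {1..<n}" using a' by (rule PL_mono) (auto simp: n_def)
      moreover have "c \<in> PL {1..<n}" using c low by simp
      ultimately have "a' \<in> PL {1..<n}" "c \<in> PL {1..<n}" by auto
      then have "a' * G n * c \<in> W n" by (rule W.Wb)
      moreover have "a' * c \<in> PL {1..<n}" using \<open>a' \<in> PL {1..<n}\<close> \<open>c \<in> PL {1..<n}\<close> by (rule PL_mult)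
      ultimately show ?thesis by (intro good_add good_sc good_W good_low)
    qed
    have "ch (G n * (a' * G n * c)) (a' * (G n * G n) * c)" using f1 by (simp only: mult.assoc)
    from ch_trans[OF this f2] have "ch (G n * (a' * G n * c)) (sc (qq - 1) * (a' * G n * c) + sc qq * (a' * c))"
      by (simp only: e)
    then show ?thesis using g by (rule good_ch)
  qed
  \<comment> \<open>the W m part via the braid relation\<close>
  have B: "good n (G n * (h' * G n * c))" if h': "h' \<in> W m" and m1: "m \<ge> 1" for h'
    using h'
  proof (induction h' rule: W.induct)
    case W0 then show ?case by (simp add: good_zero)
  next
    case (Wadd h1 h2)
    then show ?case by (simp add: distrib_left distrib_right good_add)
  next
    case (Wb b' c')
    have b'P: "b' \<in> P1" using Wb(1) by (rule PL_P1')
    have c'P: "c' \<in> P1" using Wb(2) by (rule PL_P1')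
    have cP: "c \<in> P1" using c by (rule PL_P1)
    have Gm: "G m \<in> P1" using m1 by (rule G_P1)
    have cb: "ch (G n * b') (b' * G n)" by (rule comm_G[OF n1 Wb(1)]) (auto simp: n_def)
    have cc: "ch (c' * G n) (G n * c')" by (rule ch_sym, rule comm_G[OF n1 Wb(2)]) (auto simp: n_def)
    have e1: "G n * (b' * G m * c' * G n * c) = (G n * b') * (G m * c' * G n * c)" by (simp add: mult.assoc)
    have s1: "ch ((G n * b') * (G m * c' * G n * c)) ((b' * G n) * (G m * c' * G n * c))"
      using cb by (rule ch_rmult) (intro PL_mult Gm c'P Gn cP)
    have e2: "(b' * G n) * (G m * c' * G n * c) = (b' * G n * G m) * (c' * G n) * c" by (simp add: mult.assoc)
    have s2: "ch ((b' * G n * G m) * (c' * G n) * c) ((b' * G n * G m) * (G n * c') * c)"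
      using cc by (rule ch_mult3) (intro PL_mult b'P Gn Gm cP)+
    have e3: "(b' * G n * G m) * (G n * c') * c = b' * (G n * G m * G n) * (c' * c)" by (simp add: mult.assoc)
    have s3: "ch (b' * (G n * G m * G n) * (c' * c)) (b' * (G m * G n * G m) * (c' * c))"
      using ch_sym[OF H_braid[OF m1], folded n_def] b'P by (rule ch_mult3) (intro PL_mult c'P cP)
    have e4: "b' * (G m * G n * G m) * (c' * c) = (b' * G m) * G n * (G m * c' * c)" by (simp add: mult.assoc)
    have gW: "good n ((b' * G m) * G n * (G m * c' * c))"
    proof -
      have b'n: "b' \<in> PL {1..<n}" using Wb(1) by (rule PL_mono) (auto simp: n_def)
      have c'n: "c' \<in> PL {1..<n}" using Wb(2) by (rule PL_mono) (auto simp: n_def)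
      have Gmn: "G m \<in> PL {1..<n}" by (rule G_PL) (use m1 in \<open>auto simp: n_def\<close>)
      have cn: "c \<in> PL {1..<n}" using c low by simp
      have "b' * G m \<in> PL {1..<n}" "G m * c' * c \<in> PL {1..<n}"
        using b'n c'n Gmn cn by (auto intro!: PL_mult)
      then show ?thesis by (intro good_W W.Wb)
    qed
    have t1: "ch (G n * (b' * G m * c' * G n * c)) ((b' * G n * G m) * (c' * G n) * c)"
      using s1 by (simp only: e1 e2)
    have t2: "ch (G n * (b' * G m * c' * G n * c)) (b' * (G n * G m * G n) * (c' * c))"
      using ch_trans[OF t1 s2] by (simp only: e3)
    have "ch (G n * (b' * G m * c' * G n * c)) ((b' * G m) * G n * (G m * c' * c))"
      using ch_trans[OF t2 s3] by (simp only: e4)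
    then show ?case using gW by (simp add: mult.assoc good_ch)
  qed
  show ?thesis
  proof (cases "m = 0")
    case True
    have "b \<in> PL {1..<m}" using b True by (simp add: PL_def)
    then show ?thesis using A by (simp add: mult.assoc)
  next
    case False
    then have m1: "m \<ge> 1" by simp
    then obtain a' h' where a': "a' \<in> PL {1..<m}" and h': "h' \<in> W m" and cb: "ch b (a' + h')"
      using Rm b unfolding Rdec_def good_def by blast
    have "ch (G n * b * (G n * c)) (G n * (a' + h') * (G n * c))"
      using cb Gn by (rule ch_mult3) (intro PL_mult Gn PL_P1[OF c])
    moreover have "G n * (a' + h') * (G n * c) = G n * (a' * G n * c) + G n * (h' * G n * c)"
      by (simp add: algebra_simps)
    moreover have "good n (G n * (a' * G n * c) + G n * (h' * G n * c))"
      using A[OF a'] B[OF h' m1] by (rule good_add)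
    ultimately show ?thesis by (metis good_ch mult.assoc)
  qed
qed

lemma good_Gn:
  assumes Rm: "m \<ge> 1 \<Longrightarrow> Rdec m" and x: "good (m + 1) x"
  shows "good (m + 1) (G (m + 1) * x)"
proof -
  let ?n = "m + 1"
  obtain a h where a: "a \<in> PL {1..<?n}" and h: "h \<in> W ?n" and c: "ch x (a + h)" using x unfolding good_def by blast
  have Gn: "G ?n \<in> P1" by (rule G_P1) simp
  have low: "PL {1..<?n} = PL {1..m}" by (simp add: atLeastLessThanSuc_atLeastAtMost)
  have "ch (G ?n * x) (G ?n * a + G ?n * h)" using ch_lmult[OF c Gn] by (simp add: distrib_left)
  moreover have "good ?n (G ?n * a)"
    using a by (intro good_W) (metis W.Wb PL_one mult_1_left)
  moreover have "good ?n (G ?n * h)" using h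
  proof (induction h rule: W.induct)
    case W0 then show ?case by (simp add: good_zero)
  next
    case (Wb b c) then show ?case using key_step[OF Rm] low by simp
  next
    case (Wadd h h') then show ?case by (simp add: distrib_left good_add)
  qed
  ultimately show ?thesis using good_add good_ch by blast
qed

lemma Rdec_step: "(m \<ge> 1 \<Longrightarrow> Rdec m) \<Longrightarrow> Rdec (m + 1)"
proof -
  assume Rm: "m \<ge> 1 \<Longrightarrow> Rdec m"
  let ?n = "m + 1"
  have mon_good: "set w \<subseteq> {1..?n} \<Longrightarrow> good ?n (mon w)" for w
  proof (induction w)
    case Nil then show ?case using good_low[of 1 ?n] by (simp add: mon_nil PL_one)
  next
    case (Cons j w)
    then have gw: "good ?n (mon w)" and j: "j \<in> {1..?n}" by auto
    have e: "mon (j # w) = G j * mon w" by (simp add: G_def mon_Cons[of j w])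
    show ?case
    proof (cases "j = ?n")
      case True then show ?thesis using e good_Gn[OF Rm gw] by simp
    next
      case False
      then have "j \<in> {1..<?n}" using j by auto
      then show ?thesis using e good_Gj[OF _ gw] by simp
    qed
  qed
  show ?thesis unfolding Rdec_def
  proof
    fix x assume "x \<in> PL {1..?n}"
    then show "good ?n x"
    proof (induction x rule: PL_induct)
      case zero then show ?case by (rule good_zero)
    next
      case (add a b) then show ?case using good_add by blast
    next
      case (mon c w) then show ?case by (intro good_sc mon_good)
    qed
  qed
qed

lemma Rdec_all: "m \<ge> 1 \<Longrightarrow> Rdec m"
proof (induction m)
  case 0 then show ?case by simp
next
  case (Suc m) then show ?case using Rdec_step[of m] by simp
qed



section \<open>Uniqueness of the Markov trace\<close>

lemma PL_empty: "x \<in> PL {} \<Longrightarrow> x = sc (Rp x []) * 1"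
proof -
  assume x: "x \<in> PL {}"
  have "Rp x w = (if w = [] then Rp x [] else 0)" for w
  proof (cases "w = []")
    case False
    then have "w \<notin> supp (Rp x)" using x by (auto simp: PL_def)
    then show ?thesis using False by (simp add: supp_def)
  qed simp
  then have r: "\<And>w. w \<noteq> [] \<Longrightarrow> Rp x w = 0" by simp
  have "Rp x = Rp (sc (Rp x []) * 1)"
  proof (rule ext)
    fix w show "Rp x w = Rp (sc (Rp x []) * 1) w"
      using r[of w] by (cases "w = []") (simp_all add: Rp_sc ncsmul_def ncone_def)
  qed
  then show ?thesis by (simp add: Rp_inject)
qed

lemma PL_finite_letters: "x \<in> PL {1..} \<Longrightarrow> \<exists>m. x \<in> PL {1..m}"
proof -
  assume x: "x \<in> PL {1..}"
  let ?A = "\<Union>w\<in>supp (Rp x). set w"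
  have fA: "finite ?A" using fsR by simp
  show ?thesis
  proof (intro exI[of _ "Max (insert 0 ?A)"])
    show "x \<in> PL {1..Max (insert 0 ?A)}" unfolding PL_def
    proof (intro CollectI ballI subsetI)
      fix w j assume w: "w \<in> supp (Rp x)" and j: "j \<in> set w"
      have "j \<ge> 1" using x w j by (auto simp: PL_def)
      moreover have "j \<le> Max (insert 0 ?A)" using fA w j by (intro Max_ge) auto
      ultimately show "j \<in> {1..Max (insert 0 ?A)}" by simp
    qed
  qed
qed

locale mk =
  fixes T :: "ncpoly \<Rightarrow> complex"
  assumes mt: "is_markov_trace T"
begin

definition F :: "fp \<Rightarrow> complex" where "F x = T (Rp x)"

lemma P1_polys: "x \<in> P1 \<Longrightarrow> Rp x \<in> ncpolys_on {1..}" by (rule Rp_in_ncpolys)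

lemma F_add: "x \<in> P1 \<Longrightarrow> y \<in> P1 \<Longrightarrow> F (x + y) = F x + F y"
  using mt P1_polys unfolding is_markov_trace_def F_def by (simp add: Rp_plus)

lemma F_sc: "x \<in> P1 \<Longrightarrow> F (sc c * x) = c * F x"
  using mt P1_polys unfolding is_markov_trace_def F_def by (simp add: Rp_sc_mul)

lemma F_diff: "x \<in> P1 \<Longrightarrow> y \<in> P1 \<Longrightarrow> F (x - y) = F x - F y"
proof -
  assume x: "x \<in> P1" and y: "y \<in> P1"
  have e: "x - y = x + sc (-1) * y" by (simp add: sc_uminus sc_one)
  have ys: "sc (-1) * y \<in> P1" using y by (intro PL_mult PL_sc)
  have "F (x - y) = F x + F (sc (-1) * y)" by (simp only: e F_add[OF x ys])
  also have "\<dots> = F x + (-1) * F y" by (simp only: F_sc[OF y])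
  finally show ?thesis by simp
qed

lemma F_Hid: "x \<in> Hid \<Longrightarrow> F x = 0"
  using mt unfolding is_markov_trace_def F_def Hid_def by simp

lemma F_one: "F 1 = 1"
  using mt unfolding is_markov_trace_def F_def by (simp add: Rp_one)

lemma F_comm: "x \<in> P1 \<Longrightarrow> y \<in> P1 \<Longrightarrow> F (x * y) = F (y * x)"
  using mt P1_polys unfolding is_markov_trace_def F_def by (simp add: Rp_times)

definition E :: "nat \<Rightarrow> fp" where "E m = sc (1 / (1 + qq)) * (sc qq - G m)"

lemma Rp_E: "Rp (E m) = e_el m"
  by (simp add: E_def e_el_def Rp_sc_mul Rp_minus Rp_sc Rp_G)

lemma F_markov: "m \<ge> 1 \<Longrightarrow> x \<in> PL {1..<m} \<Longrightarrow> F (x * E m) = eta * F x"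
  using mt Rp_in_ncpolys unfolding is_markov_trace_def F_def by (simp add: Rp_times Rp_E)

lemma G_via_E: "G m = sc qq - sc (1 + qq) * E m"
proof -
  have "sc (1 + qq) * E m = sc ((1 + qq) * (1 / (1 + qq))) * (sc qq - G m)"
    by (simp only: E_def mult.assoc[symmetric] sc_mult)
  also have "(1 + qq) * (1 / (1 + qq)) = 1" using qq_one by simp
  finally have "sc (1 + qq) * E m = sc qq - G m" by (simp add: sc_one)
  then show ?thesis by (simp add: algebra_simps)
qed

lemma E_P1: "m \<ge> 1 \<Longrightarrow> E m \<in> P1"
  unfolding E_def by (intro PL_mult PL_sc PL_diff G_P1)

lemma F_zG: "m \<ge> 1 \<Longrightarrow> z \<in> PL {1..<m} \<Longrightarrow> F (z * G m) = (qq - (1 + qq) * eta) * F z"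
proof -
  assume m: "m \<ge> 1" and z: "z \<in> PL {1..<m}"
  have zP: "z \<in> P1" using z by (rule PL_P1')
  have "z * G m = sc qq * z - sc (1 + qq) * (z * E m)"
    by (simp add: G_via_E right_diff_distrib mult.assoc[symmetric] sc_comm[of qq z, symmetric] sc_comm[of "1 + qq" z, symmetric])
  moreover have "sc qq * z \<in> P1" "sc (1 + qq) * (z * E m) \<in> P1" "z * E m \<in> P1"
    using zP E_P1[OF m] by (auto intro: PL_mult PL_sc)
  ultimately have "F (z * G m) = F (sc qq * z) - F (sc (1 + qq) * (z * E m))"
    by (simp add: F_diff)
  also have "\<dots> = qq * F z - (1 + qq) * (eta * F z)"
    using zP F_markov[OF m z] \<open>z * E m \<in> P1\<close> by (simp add: F_sc)
  finally show ?thesis by (simp add: algebra_simps)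
qed

end

lemma F_unique:
  assumes T: "mk T" and T': "mk T'"
  shows "x \<in> PL {1..m} \<Longrightarrow> mk.F T x = mk.F T' x"
proof (induction m arbitrary: x)
  case 0
  then have "x \<in> PL {}" by simp
  then have e: "x = sc (Rp x []) * 1" by (rule PL_empty)
  have "mk.F T x = mk.F T (sc (Rp x []) * 1)" by (rule arg_cong[OF e])
  also have "\<dots> = Rp x []" using mk.F_sc[OF T PL_one] mk.F_one[OF T] by simp
  finally have 1: "mk.F T x = Rp x []" .
  have "mk.F T' x = mk.F T' (sc (Rp x []) * 1)" by (rule arg_cong[OF e])
  also have "\<dots> = Rp x []" using mk.F_sc[OF T' PL_one] mk.F_one[OF T'] by simp
  finally have 2: "mk.F T' x = Rp x []" .
  from 1 2 show ?case by simp
next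
  case (Suc m x)
  let ?n = "m + 1"
  have low: "PL {1..<?n} = PL {1..m}" by (simp add: atLeastLessThanSuc_atLeastAtMost)
  have xn: "x \<in> PL {1..?n}" using Suc.prems by simp
  obtain a h where a: "a \<in> PL {1..<?n}" and h: "h \<in> W ?n" and c: "ch x (a + h)"
    using Rdec_all[of ?n] xn unfolding Rdec_def good_def by auto
  have aP: "a \<in> P1" using a by (rule PL_P1')
  have hP: "h \<in> P1" using W_PL[OF _ h] by (metis PL_P1 le_add2)
  have xP: "x \<in> P1" using xn by (rule PL_P1)
  have Fh: "mk.F T h = mk.F T' h" using h
  proof (induction h rule: W.induct)
    case W0
    have "mk.F T 0 = 0" "mk.F T' 0 = 0"
      using mk.F_sc[OF T PL_zero, of 0] mk.F_sc[OF T' PL_zero, of 0] by (simp_all add: sc_zero)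
    then show ?case by simp
  next
    case (Wb b c)
    have bP: "b \<in> P1" using Wb(1) by (rule PL_P1')
    have cP: "c \<in> P1" using Wb(2) by (rule PL_P1')
    have Gn: "G ?n \<in> P1" by (rule G_P1) simp
    have z: "c * b \<in> PL {1..<?n}" using Wb by (intro PL_mult)
    have bG: "b * G ?n \<in> P1" using bP Gn by (rule PL_mult)
    have zl: "c * b \<in> PL {1..m}" using z low by simp
    have n1: "?n \<ge> 1" by simp
    have "mk.F T (b * G ?n * c) = mk.F T (c * b * G ?n)"
      using mk.F_comm[OF T bG cP] by (simp add: mult.assoc)
    also have "\<dots> = (qq - (1 + qq) * eta) * mk.F T (c * b)" by (rule mk.F_zG[OF T n1 z])
    also have "mk.F T (c * b) = mk.F T' (c * b)" using Suc.IH[OF zl] .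
    also have "(qq - (1 + qq) * eta) * mk.F T' (c * b) = mk.F T' (c * b * G ?n)" by (rule mk.F_zG[OF T' n1 z, symmetric])
    also have "\<dots> = mk.F T' (b * G ?n * c)"
      using mk.F_comm[OF T' bG cP] by (simp add: mult.assoc)
    finally show ?case .
  next
    case (Wadd h h')
    have "h \<in> P1" "h' \<in> P1" using W_PL[OF _ Wadd(1)] W_PL[OF _ Wadd(2)] by (metis PL_P1 le_add2)+
    then show ?case using Wadd mk.F_add[OF T] mk.F_add[OF T'] by simp
  qed
  have hid: "x - (a + h) \<in> Hid" using c by (simp add: ch_def)
  have ahP: "a + h \<in> P1" using aP hP by (rule PL_add)
  have dP: "x - (a + h) \<in> P1" using xP ahP by (rule PL_diff)
  have Fx: "mk.F T0 x = mk.F T0 a + mk.F T0 h" if T0: "mk T0" for T0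
  proof -
    have "mk.F T0 x = mk.F T0 ((x - (a + h)) + (a + h))" by simp
    also have "\<dots> = mk.F T0 (x - (a + h)) + mk.F T0 (a + h)" by (rule mk.F_add[OF T0 dP ahP])
    also have "mk.F T0 (x - (a + h)) = 0" by (rule mk.F_Hid[OF T0 hid])
    also have "mk.F T0 (a + h) = mk.F T0 a + mk.F T0 h" by (rule mk.F_add[OF T0 aP hP])
    finally show ?thesis by simp
  qed
  have "mk.F T a = mk.F T' a" using Suc.IH a low by simp
  then show ?case using Fx[OF T] Fx[OF T'] Fh by simp
qed

lemma markov_unique:
  assumes "is_markov_trace T" "is_markov_trace T'"
  shows "T = T'"
proof
  fix f
  have T: "mk T" and T': "mk T'" using assms by (simp_all add: mk_def)
  show "T f = T' f"
  proof (cases "f \<in> ncpolys_on {1..}")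
    case False then show ?thesis using assms by (simp add: is_markov_trace_def)
  next
    case True
    then have A: "Ap f \<in> P1" and R: "Rp (Ap f) = f" using Ap_PL polys_fin by (auto simp: Ap_inverse)
    then obtain m where "Ap f \<in> PL {1..m}" using PL_finite_letters by blast
    then have "mk.F T (Ap f) = mk.F T' (Ap f)" by (rule F_unique[OF T T'])
    then show ?thesis using R by (simp add: mk.F_def[OF T] mk.F_def[OF T'])
  qed
qed

lemma tr_T0: "tr = T0"
  unfolding tr_def
  by (rule the_equality) (simp_all add: T0_markov markov_unique T0_markov)



lemma trX:
  assumes a: "a' \<in> PL {1..<n}" and b: "b' \<in> PL {1..<n}"
  shows "tr (Rp a' \<star> Rp b') = tau (Sub S a' * Sub S b')"
proof -
  have "a' * b' \<in> PL {1..<n}" using a b by (rule PL_mult)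
  then have "Rp (a' * b') \<in> ncpolys_on {1..}" by (intro Rp_in_ncpolys) (erule PL_mono, auto)
  then show ?thesis by (simp add: tr_T0 T0_def Rp_times[symmetric] Rp_inverse Sub_mult)
qed

theorem lemma3p2:
  fixes n :: nat
  assumes "n \<ge> 2"
  shows "(\<forall>a\<in>ncpolys_on {1..<n}. phi a \<in> Q_ideal n \<longleftrightarrow> a \<in> Ann_tr n)
    \<and> (\<forall>x\<in>ncpolys_on (Q_letters n).
          (\<exists>a\<in>ncpolys_on {1..<n}. x \<ominus> phi a \<in> Q_ideal n)
          \<longleftrightarrow> (\<exists>y\<in>subalg_gen (s_el ` {1..<n}). x \<ominus> y \<in> Q_ideal n))"
proof (intro conjI ballI)
  fix x show "(\<exists>a\<in>ncpolys_on {1..<n}. x \<ominus> phi a \<in> Q_ideal n)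
          \<longleftrightarrow> (\<exists>y\<in>subalg_gen (s_el ` {1..<n}). x \<ominus> y \<in> Q_ideal n)" by (rule conj2)
next
  fix a assume aP: "a \<in> ncpolys_on {1..<n}"
  then obtain a' where a': "a' \<in> PL {1..<n}" and ae: "a = Rp a'" using ncpolys_on_Rp by blast
  define X where "X = Sub S a'"
  have phiX: "phi a = Rp X" by (simp add: ae X_def phi_Rp)
  show "phi a \<in> Q_ideal n \<longleftrightarrow> a \<in> Ann_tr n"
  proof
    assume "phi a \<in> Q_ideal n"
    then have "X \<in> QI n" by (simp add: phiX QI_def)
    then have XZ: "X \<in> Zs" by (rule QI_Zs)
    have "tr (a \<star> b) = 0" if b: "b \<in> ncpolys_on {1..<n}" for b
    proof -
      obtain b' where b': "b' \<in> PL {1..<n}" and be: "b = Rp b'" using b ncpolys_on_Rp by blast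
      have "tr (a \<star> b) = tau (X * Sub S b')" by (simp add: ae be X_def trX[OF a' b'])
      also have "\<dots> = tau (Sub S b' * X)" by (rule tau_comm)
      also have "\<dots> = 0" using Zs_tau[OF XZ] by simp
      finally show ?thesis .
    qed
    then show "a \<in> Ann_tr n" using aP by (simp add: Ann_tr_def)
  next
    assume "a \<in> Ann_tr n"
    then have ann: "\<And>b. b \<in> ncpolys_on {1..<n} \<Longrightarrow> tr (a \<star> b) = 0" by (simp add: Ann_tr_def)
    obtain b' where b': "b' \<in> PL {1..<n}" and cb: "cq n (dag X) (Sub S b')"
      using dag_img[OF a'] unfolding X_def by blast
    have t1: "tau (X * Sub S b') = 0"
      using ann[OF Rp_in_ncpolys[OF b']] by (simp add: ae X_def trX[OF a' b'])
    have "dag X - Sub S b' \<in> Zs" using cb by (simp add: cq_def QI_Zs)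
    then have t2: "tau (X * (dag X - Sub S b')) = 0" by (rule Zs_tau)
    have "tau (X * dag X) = tau (X * Sub S b') + tau (X * (dag X - Sub S b'))"
      by (simp add: tau_add[symmetric] distrib_left[symmetric])
    then have "tau (X * dag X) = 0" using t1 t2 by simp
    then have "munull X" by (rule faithful)
    moreover have "X \<in> QL n" unfolding X_def using a' by (rule SubS_PL)
    ultimately have "X \<in> QI n" using completeness by blast
    then show "phi a \<in> Q_ideal n" by (simp add: phiX QI_def)
  qed
qed


end
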